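(* Let $\tau$ be a 2-BKP tau function with wave functions $\psi_1,\psi_2$. Then for $a,b\in\{1,2\}$, $$\frac{X_{ab}(\lambda,\mu)\tau(\mathbf t)}{\tau(\mathbf t)}=(-1)^a\,\Omega\big(\psi_b(\mathbf t,-\lambda),\psi_a(\mathbf t,\mu)\big).$$
   Context: Times: $\mathbf t=(t^{(1)},t^{(2)})$, $t^{(a)}=(t^{(a)}_1,t^{(a)}_3,\dots)$ (odd indices), $x_a=t^{(a)}_1$, $\partial_a=\partial/\partial x_a$, $\partial_{a,n}=\partial/\partial t^{(a)}_n$. $\xi(t^{(a)},z)=\sum_{i\ge1}t^{(a)}_{2i-1}z^{2i-1}$, $\tilde\partial_{t^{(a)}}=(\partial_{a,1},\frac13\partial_{a,3},\frac15\partial_{a,5},\dots)$, $[z^{-1}]=(z^{-1},z^{-3}/3,\dots)$, $[z^{-1}]_1=([z^{-1}],0)$, $[z^{-1}]_2=(0,[z^{-1}])$, $\mathrm{Res}_z\sum b_iz^i=b_{-1}$. A 2-BKP tau function satisfies for all $\mathbf t,\mathbf t'$: $\mathrm{Res}_z z^{-1}\tau(\mathbf t-2[z^{-1}]_1)\tau(\mathbf t'+2[z^{-1}]_1)e^{\xi(t^{(1)}-t'^{(1)},z)}=\mathrm{Res}_z z^{-1}\tau(\mathbf t-2[z^{-1}]_2)\tau(\mathbf t'+2[z^{-1}]_2)e^{\xi(t^{(2)}-t'^{(2)},z)}$. Wave functions $\psi_a(\mathbf t,z)=\frac{\tau(\mathbf t-2[z^{-1}]_a)}{\tau(\mathbf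 t)}e^{\xi(t^{(a)},z)}=W_a(e^{\xi(t^{(a)},z)})$ with dressing operator $W_a=\sum_{j\ge0}\frac{h_j(-2\tilde\partial_{t^{(a)}})\tau}{\tau}\partial_a^{-j}$, $e^{\xi(\mathbf y,\lambda)}=\sum h_j(\mathbf y)\lambda^j$. Vertex operators: $X_a(\lambda)=e^{\xi(t^{(a)},\lambda)}e^{-2\xi(\tilde\partial_{t^{(a)}},\lambda^{-1})}$ and $X_{ab}(\lambda,\mu)=X_a(\mu)X_b(-\lambda)=\varepsilon_{ab}(\lambda,\mu)e^{\xi(t^{(a)},\mu)-\xi(t^{(b)},\lambda)}e^{-2\xi(\tilde\partial_{t^{(a)}},\mu^{-1})+2\xi(\tilde\partial_{t^{(b)}},\lambda^{-1})}$, with $\varepsilon_{ab}=\frac{\mu+\lambda}{\mu-\lambda}$ if $a=b$ and $\varepsilon_{ab}=1$ if $a\ne b$. The function $\psi_b(\mathbf t,-\lambda)$ is a 2-BKP eigenfunction. For an eigenfunction $q$, the potential with a wave function is fixed as the formal series $\Omega(q(\mathbf t),\psi_a(\mathbf t,\mu)):=\big((-1)^a(q-2\partial_a^{-1}q_{x_a})W_a\big)(e^{\xi(t^{(a)},\mu)})$, where $\partial_a^{-k}(e^{\xi(t^{(a)},\mu)})=\mu^{-k}e^{\xi(t^{(a)},\mu)}$; it satisfies $\partial_1\Omega=\psi_aq_{x_1}-q\psi_{a,x_1}$ and $\partial_2\Omega=-(\psi_aq_{x_2}-q\psi_{a,x_2})$. *)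

theory Defs
  imports "HOL-Analysis.Analysis"
begin

text \<open>A point of time space is a pair (t1, t2) of sequences; the entry k of component a
  stands for the odd time t^(a)_(2k+1).  In particular x_a = t^(a)_1 is entry 0.\<close>

type_synonym tm = "(nat \<Rightarrow> complex) \<times> (nat \<Rightarrow> complex)"
type_synonym fn = "tm \<Rightarrow> complex"

definition tc :: "nat \<Rightarrow> tm \<Rightarrow> nat \<Rightarrow> complex" where
  "tc a t = (if a = 1 then fst t else snd t)"

definition upd :: "nat \<Rightarrow> nat \<Rightarrow> complex \<Rightarrow> tm \<Rightarrow> tm" where
  "upd a k s t = (if a = 1 then ((fst t)(k := s), snd t) else (fst t, (snd t)(k := s)))"

definition pd :: "nat \<Rightarrow> nat \<Rightarrow> fn \<Rightarrow> fn" where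
  "pd a k f t = deriv (\<lambda>s. f (upd a k s t)) (tc a t k)"

definition pds :: "(nat \<times> nat) list \<Rightarrow> fn \<Rightarrow> fn" where
  "pds ds f = foldr (\<lambda>(a,k) g. pd a k g) ds f"

definition wt :: "(nat \<times> nat) list \<Rightarrow> nat" where
  "wt ds = sum_list (map (\<lambda>(a,k). 2*k+1) ds)"

text \<open>Regularity implicit in the paper: all iterated partial derivatives exist and commute.\<close>
definition smooth_tau :: "fn \<Rightarrow> bool" where
  "smooth_tau f \<longleftrightarrow>
     (\<forall>ds a k t. (\<lambda>s. pds ds f (upd a k s t)) field_differentiable (at (tc a t k))) \<and>
     (\<forall>ds a k b l. pd a k (pd b l (pds ds f)) = pd b l (pd a k (pds ds f)))"

text \<open>hpoly y j = h_j(y) for y = (y_1, y_3, y_5, ...), entry i standing for y_(2i+1);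
  defined through  j h_j = sum_(k odd <= j) k y_k h_(j-k), i.e. exp(xi(y,z)) = sum_j h_j(y) z^j.\<close>
function hpoly :: "(nat \<Rightarrow> complex) \<Rightarrow> nat \<Rightarrow> complex" where
  "hpoly y j = (if j = 0 then 1 else
     (1 / of_nat j) * (\<Sum>i<(j+1) div 2. of_nat (2*i+1) * y i * hpoly y (j - (2*i+1))))"
  by pat_completeness auto
termination by (relation "Wellfounded.measure (\<lambda>(y,j). j)") auto

text \<open>shiftc a c j f = h_j(c * tilde-partial_(t^(a))) f, so that formally
  f(t + c[z^(-1)]_a) = sum_j shiftc a c j f (t) z^(-j).\<close>
function shiftc :: "nat \<Rightarrow> complex \<Rightarrow> nat \<Rightarrow> fn \<Rightarrow> fn" where
  "shiftc a c j f = (if j = 0 then f else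
     (\<lambda>t. (1 / of_nat j) * (\<Sum>i<(j+1) div 2. c * pd a i (shiftc a c (j - (2*i+1)) f) t)))"
  by pat_completeness auto
termination by (relation "Wellfounded.measure (\<lambda>(a,c,j,f). j)") auto

text \<open>Residue of the a-th side of the bilinear identity, truncated at order N in z:
  Res_z z^(-1) tau(t - 2[z^-1]_a) tau(t' + 2[z^-1]_a) exp(xi(t^(a) - t'^(a), z)).\<close>
definition hir :: "fn \<Rightarrow> nat \<Rightarrow> nat \<Rightarrow> tm \<Rightarrow> tm \<Rightarrow> complex" where
  "hir \<tau> a N t t' = (\<Sum>kk\<le>N. \<Sum>i\<le>kk.
      shiftc a (-2) i \<tau> t * shiftc a 2 (kk - i) \<tau> t' * hpoly (\<lambda>l. tc a t l - tc a t' l) kk)"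

text \<open>The bilinear identity for all t, t', understood as an identity of formal Taylor
  expansions in t' around t: every t'-derivative at t' = t agrees.  For a derivative of
  weight w only the terms of z-order <= w contribute, so the truncation at w is exact.\<close>
definition bkp2_tau :: "fn \<Rightarrow> bool" where
  "bkp2_tau \<tau> \<longleftrightarrow> smooth_tau \<tau> \<and>
     (\<forall>t ds. pds ds (hir \<tau> 1 (wt ds) t) t = pds ds (hir \<tau> 2 (wt ds) t) t)"

text \<open>Coefficients of the dressing operator W_a = sum_j wcoef a j \<partial>_a^(-j),
  wcoef a j = h_j(-2 tilde-partial_(t^(a))) tau / tau.\<close>
definition wcoef :: "fn \<Rightarrow> nat \<Rightarrow> nat \<Rightarrow> fn" where
  "wcoef \<tau> a j t = shiftc a (-2) j \<tau> t / \<tau> t"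

text \<open>Formal series in lambda twisted by exp(-xi(t^(b), lambda)):  r represents
  exp(-xi(t^(b),lambda)) * sum_(m::int) r m lambda^m.  The derivative \<partial>_a acts on it by
  the product rule.\<close>
type_synonym lser = "int \<Rightarrow> fn"

definition dxl :: "nat \<Rightarrow> nat \<Rightarrow> lser \<Rightarrow> lser" where
  "dxl a b r m = (\<lambda>t. pd a 0 (r m) t - (if a = b then r (m - 1) t else 0))"

text \<open>The eigenfunction psi_b(t,-lambda) = tau(t - 2[(-lambda)^-1]_b)/tau(t) exp(xi(t^(b),-lambda))
   = exp(-xi(t^(b),lambda)) * sum_j wcoef b j (-lambda)^(-j).\<close>
definition psi_neg :: "fn \<Rightarrow> nat \<Rightarrow> lser" where
  "psi_neg \<tau> b m = (if m \<le> 0 then (\<lambda>t. (-1) ^ nat (- m) * wcoef \<tau> b (nat (- m)) t) else (\<lambda>t. 0))"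

text \<open>Pseudo-differential operators  P = sum_(i>=0) P i \<partial>_a^(-i)  with twisted coefficients.
  Left composition with \<partial>_a^(-1):  \<partial>^(-1) f = sum_k (-1)^k f^(k) \<partial>^(-1-k).\<close>
definition inv_comp :: "nat \<Rightarrow> nat \<Rightarrow> (nat \<Rightarrow> lser) \<Rightarrow> (nat \<Rightarrow> lser)" where
  "inv_comp a b P n m = (\<lambda>t. \<Sum>k<n. (-1) ^ k * ((dxl a b ^^ k) (P (n - 1 - k)) m t))"

text \<open>Omega(q, psi_a(t,mu)) := ((-1)^a (q - 2 \<partial>_a^(-1) q_(x_a)) W_a)(exp(xi(t^(a),mu))),
  with \<partial>_a^(-n) exp(xi(t^(a),mu)) = mu^(-n) exp(xi(t^(a),mu)).
  Omega_coef \<tau> a b q n m t is the coefficient of mu^(-n) lambda^m in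
  Omega * exp(xi(t^(b),lambda) - xi(t^(a),mu)), for q twisted by exp(-xi(t^(b),lambda)).\<close>
definition Omega_coef :: "fn \<Rightarrow> nat \<Rightarrow> nat \<Rightarrow> lser \<Rightarrow> nat \<Rightarrow> int \<Rightarrow> fn" where
  "Omega_coef \<tau> a b q n m t =
     (-1) ^ a * (q m t * wcoef \<tau> a n t
       - 2 * inv_comp a b (\<lambda>i mm s. dxl a b q mm s * wcoef \<tau> a i s) n m t)"

text \<open>epsilon_ab(lambda,mu) expanded in lambda/mu: (mu+lambda)/(mu-lambda) = 1 + 2 sum_(k>=1) (lambda/mu)^k.\<close>
definition eps_coef :: "nat \<Rightarrow> nat \<Rightarrow> nat \<Rightarrow> complex" where
  "eps_coef a b k = (if a = b then (if k = 0 then 1 else 2) else (if k = 0 then 1 else 0))"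

text \<open>Coefficient of mu^(-n) lambda^m in
  (X_ab(lambda,mu) tau)(t) / tau(t) * exp(xi(t^(b),lambda) - xi(t^(a),mu)), where
  X_ab(lambda,mu) tau = eps_ab exp(xi(t^(a),mu) - xi(t^(b),lambda)) tau(t - 2[mu^-1]_a + 2[lambda^-1]_b).\<close>
definition Xab_coef :: "fn \<Rightarrow> nat \<Rightarrow> nat \<Rightarrow> nat \<Rightarrow> int \<Rightarrow> fn" where
  "Xab_coef \<tau> a b n m t =
     (\<Sum>k\<le>n. if int k \<ge> m then
        eps_coef a b k * shiftc a (-2) (n - k) (shiftc b 2 (nat (int k - m)) \<tau>) t / \<tau> t
      else 0)"

end

theory Submission
  imports Defs "HOL-Complex_Analysis.Cauchy_Integral_Formula"
begin


lemma tc_upd_same: "tc a (upd a k s t) k = s"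
  by (simp add: tc_def upd_def)

lemma upd_tc: "upd a k (tc a t k) t = t"
  by (simp add: tc_def upd_def)

lemma upd_upd_same: "upd a k s' (upd a k s t) = upd a k s' t"
  by (simp add: upd_def)

definition LD :: "fn \<Rightarrow> bool" where
  "LD f \<longleftrightarrow> (\<forall>a k t. (\<lambda>s. f (upd a k s t)) field_differentiable (at (tc a t k)))"

lemma LD_at: assumes "LD f" shows "(\<lambda>s. f (upd a k s t)) field_differentiable (at s0)"
proof -
  have "(\<lambda>s. f (upd a k s (upd a k s0 t))) field_differentiable (at (tc a (upd a k s0 t) k))"
    using assms LD_def by blast
  then show ?thesis by (simp add: upd_upd_same tc_upd_same)
qed

lemma LD_I: assumes "\<And>a k t s0. (\<lambda>s. f (upd a k s t)) field_differentiable (at s0)" shows "LD f"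
  using assms LD_def by blast

lemma pd_add: "LD f \<Longrightarrow> LD g \<Longrightarrow> pd a k (\<lambda>t. f t + g t) t = pd a k f t + pd a k g t"
  unfolding pd_def by (rule deriv_add) (auto intro: LD_at)

lemma pd_diff: "LD f \<Longrightarrow> LD g \<Longrightarrow> pd a k (\<lambda>t. f t - g t) t = pd a k f t - pd a k g t"
  unfolding pd_def by (rule deriv_diff) (auto intro: LD_at)

lemma pd_mult: "LD f \<Longrightarrow> LD g \<Longrightarrow> pd a k (\<lambda>t. f t * g t) t = pd a k f t * g t + f t * pd a k g t"
  unfolding pd_def
  by (subst deriv_mult) (auto intro: LD_at simp: upd_tc)

lemma pd_cmult: "LD f \<Longrightarrow> pd a k (\<lambda>t. c * f t) t = c * pd a k f t"
  unfolding pd_def by (rule deriv_cmult) (auto intro: LD_at)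

lemma pd_const: "pd a k (\<lambda>t. c) t = 0"
  unfolding pd_def by simp

lemma LD_add: "LD f \<Longrightarrow> LD g \<Longrightarrow> LD (\<lambda>t. f t + g t)"
  unfolding LD_def by (auto intro: field_differentiable_add)
lemma LD_diff: "LD f \<Longrightarrow> LD g \<Longrightarrow> LD (\<lambda>t. f t - g t)"
  unfolding LD_def by (auto intro: field_differentiable_diff)
lemma LD_mult: "LD f \<Longrightarrow> LD g \<Longrightarrow> LD (\<lambda>t. f t * g t)"
  unfolding LD_def by (auto intro: field_differentiable_mult)
lemma LD_const: "LD (\<lambda>t. c)"
  unfolding LD_def by auto
lemma LD_cmult: "LD f \<Longrightarrow> LD (\<lambda>t. c * f t)"
  using LD_mult[OF LD_const] by blast


lemma pds_Nil[simp]: "pds [] f = f" by (simp add: pds_def)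
lemma pds_Cons: "pds (x # ds) f = pd (fst x) (snd x) (pds ds f)"
  by (cases x) (simp add: pds_def)
lemma pds_append: "pds (ds @ es) f = pds ds (pds es f)"
  by (simp add: pds_def)
lemma pds_snoc: "pds (ds @ [(a,k)]) f = pds ds (pd a k f)"
  by (simp add: pds_def)

definition SM :: "fn \<Rightarrow> bool" where "SM f \<longleftrightarrow> (\<forall>ds. LD (pds ds f))"

lemma SM_LD: "SM f \<Longrightarrow> LD f" using SM_def[of f] pds_Nil by metis
lemma SM_pds: "SM f \<Longrightarrow> SM (pds ds f)" by (simp add: SM_def pds_append[symmetric])
lemma SM_pd: "SM f \<Longrightarrow> SM (pd a k f)"
  using SM_pds[of f "[(a,k)]"] by (simp add: pds_Cons)

lemma pds_add_gen:
  assumes "\<And>ds'. length ds' < length ds \<Longrightarrow> LD (pds ds' f) \<and> LD (pds ds' g)"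
  shows "pds ds (\<lambda>t. f t + g t) = (\<lambda>t. pds ds f t + pds ds g t)"
  using assms
proof (induction ds)
  case Nil then show ?case by simp
next
  case (Cons x ds)
  have IH: "pds ds (\<lambda>t. f t + g t) = (\<lambda>t. pds ds f t + pds ds g t)"
    using Cons.prems by (intro Cons.IH) auto
  have "LD (pds ds f)" "LD (pds ds g)" using Cons.prems[of ds] by auto
  then show ?case by (simp add: pds_Cons IH pd_add)
qed

lemma pds_cmult_gen:
  assumes "\<And>ds'. length ds' < length ds \<Longrightarrow> LD (pds ds' f)"
  shows "pds ds (\<lambda>t. c * f t) = (\<lambda>t. c * pds ds f t)"
  using assms
proof (induction ds)
  case Nil then show ?case by simp
next
  case (Cons x ds)
  have IH: "pds ds (\<lambda>t. c * f t) = (\<lambda>t. c * pds ds f t)"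
    using Cons.prems by (intro Cons.IH) auto
  have "LD (pds ds f)" using Cons.prems[of ds] by auto
  then show ?case by (simp add: pds_Cons IH pd_cmult)
qed

lemma pds_add: "SM f \<Longrightarrow> SM g \<Longrightarrow> pds ds (\<lambda>t. f t + g t) = (\<lambda>t. pds ds f t + pds ds g t)"
  by (rule pds_add_gen) (auto simp: SM_def)
lemma pds_cmult: "SM f \<Longrightarrow> pds ds (\<lambda>t. c * f t) = (\<lambda>t. c * pds ds f t)"
  by (rule pds_cmult_gen) (auto simp: SM_def)

lemma SM_add: "SM f \<Longrightarrow> SM g \<Longrightarrow> SM (\<lambda>t. f t + g t)"
  by (simp add: SM_def pds_add LD_add)
lemma SM_cmult: "SM f \<Longrightarrow> SM (\<lambda>t. c * f t)"
  by (simp add: SM_def pds_cmult LD_cmult)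
lemma SM_minus: "SM f \<Longrightarrow> SM (\<lambda>t. - f t)"
  using SM_cmult[of f "-1"] by simp
lemma SM_diff: "SM f \<Longrightarrow> SM g \<Longrightarrow> SM (\<lambda>t. f t - g t)"
  using SM_add[OF _ SM_minus, of f g] by simp
lemma pds_const: "pds ds (\<lambda>t. c) = (\<lambda>t. if ds = [] then c else 0)"
proof (induction ds)
  case Nil then show ?case by simp
next
  case (Cons x ds) then show ?case by (cases "ds = []") (auto simp: pds_Cons pd_const)
qed
lemma SM_const: "SM (\<lambda>t. c)"
  by (simp add: SM_def pds_const LD_const)
lemma SM_zero: "SM (\<lambda>t. 0)" using SM_const by simp

lemma SM_sum: "finite I \<Longrightarrow> (\<And>i. i \<in> I \<Longrightarrow> SM (f i)) \<Longrightarrow> SM (\<lambda>t. \<Sum>i\<in>I. f i t)"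
  by (induction I rule: finite_induct) (auto intro: SM_add SM_const)

lemma pds_sum: "finite I \<Longrightarrow> (\<And>i. i \<in> I \<Longrightarrow> SM (f i)) \<Longrightarrow>
   pds ds (\<lambda>t. \<Sum>i\<in>I. f i t) = (\<lambda>t. \<Sum>i\<in>I. pds ds (f i) t)"
proof (induction I rule: finite_induct)
  case empty then show ?case by (simp add: pds_const)
next
  case (insert x F)
  have "pds ds (\<lambda>t. \<Sum>i\<in>insert x F. f i t) = pds ds (\<lambda>t. f x t + (\<Sum>i\<in>F. f i t))"
    using insert by simp
  also have "\<dots> = (\<lambda>t. pds ds (f x) t + pds ds (\<lambda>t. \<Sum>i\<in>F. f i t) t)"
    using insert by (intro pds_add SM_sum) auto
  finally show ?case using insert by simp
qed

lemma pd_sum: "finite I \<Longrightarrow> (\<And>i. i \<in> I \<Longrightarrow> SM (f i)) \<Longrightarrow>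
   pd a k (\<lambda>t. \<Sum>i\<in>I. f i t) = (\<lambda>t. \<Sum>i\<in>I. pd a k (f i) t)"
  using pds_sum[of I f "[(a,k)]"] by (simp add: pds_Cons)

lemma pd_add': "SM f \<Longrightarrow> SM g \<Longrightarrow> pd a k (\<lambda>t. f t + g t) = (\<lambda>t. pd a k f t + pd a k g t)"
  using pds_add[of f g "[(a,k)]"] by (simp add: pds_Cons)
lemma pd_cmult': "SM f \<Longrightarrow> pd a k (\<lambda>t. c * f t) = (\<lambda>t. c * pd a k f t)"
  using pds_cmult[of f "[(a,k)]"] by (simp add: pds_Cons)
lemma pd_diff': "SM f \<Longrightarrow> SM g \<Longrightarrow> pd a k (\<lambda>t. f t - g t) = (\<lambda>t. pd a k f t - pd a k g t)"
  by (rule ext, rule pd_diff) (auto intro: SM_LD)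
lemma pd_mult': "SM f \<Longrightarrow> SM g \<Longrightarrow> pd a k (\<lambda>t. f t * g t) = (\<lambda>t. pd a k f t * g t + f t * pd a k g t)"
  by (rule ext, rule pd_mult) (auto intro: SM_LD)

lemma SM_mult_aux:
  "\<forall>f g ds. SM f \<longrightarrow> SM g \<longrightarrow> length ds \<le> n \<longrightarrow> LD (pds ds (\<lambda>t. f t * g t))"
proof (induction n)
  case 0
  show ?case by (auto intro: LD_mult SM_LD)
next
  case (Suc n)
  show ?case
  proof (intro allI impI)
    fix f g and ds :: "(nat \<times> nat) list"
    assume f: "SM f" and g: "SM g" and len: "length ds \<le> Suc n"
    show "LD (pds ds (\<lambda>t. f t * g t))"
    proof (cases "length ds \<le> n")
      case True then show ?thesis using Suc.IH f g by blast
    next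
      case False
      then have lds: "length ds = Suc n" using len by simp
      then obtain ds0 x where ds: "ds = ds0 @ [x]" by (cases ds rule: rev_cases) auto
      with lds have l0: "length ds0 = n" by simp
      obtain a k where x: "x = (a,k)" by (cases x)
      have e1: "pd a k (\<lambda>t. f t * g t) = (\<lambda>t. pd a k f t * g t + f t * pd a k g t)"
        using f g by (rule pd_mult')
      have L1: "\<And>ds'. length ds' \<le> n \<Longrightarrow> LD (pds ds' (\<lambda>t. pd a k f t * g t))"
        using Suc.IH f g SM_pd by blast
      have L2: "\<And>ds'. length ds' \<le> n \<Longrightarrow> LD (pds ds' (\<lambda>t. f t * pd a k g t))"
        using Suc.IH f g SM_pd by blast
      have "pds ds (\<lambda>t. f t * g t) = pds ds0 (\<lambda>t. pd a k f t * g t + f t * pd a k g t)"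
        by (simp add: ds x pds_snoc e1)
      also have "\<dots> = (\<lambda>t. pds ds0 (\<lambda>t. pd a k f t * g t) t + pds ds0 (\<lambda>t. f t * pd a k g t) t)"
        using L1 L2 l0 by (intro pds_add_gen) auto
      finally show ?thesis using L1 L2 l0 by (simp add: LD_add)
    qed
  qed
qed

lemma SM_mult: "SM f \<Longrightarrow> SM g \<Longrightarrow> SM (\<lambda>t. f t * g t)"
  unfolding SM_def using SM_mult_aux[unfolded SM_def] by blast


lemma tri_reindex:
  fixes F :: "nat \<Rightarrow> nat \<Rightarrow> nat \<Rightarrow> 'a::comm_monoid_add"
  shows "(\<Sum>i\<le>s. \<Sum>l<(i+1) div 2. F l (i-(2*l+1)) (s-i)) =
         (\<Sum>l<(s+1) div 2. \<Sum>j\<le>s-(2*l+1). F l j (s-(2*l+1)-j))"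
proof -
  have L: "(\<Sum>i\<le>s. \<Sum>l<(i+1) div 2. F l (i-(2*l+1)) (s-i)) =
        (\<Sum>(i,l)\<in>(SIGMA i:{..s}. {..<(i+1) div 2}). F l (i - (2 * l+1)) (s - i))"
    by (subst sum.Sigma) auto
  have R: "(\<Sum>l<(s+1) div 2. \<Sum>j\<le>s-(2*l+1). F l j (s-(2*l+1)-j)) =
        (\<Sum>(l,j)\<in>(SIGMA l:{..<(s+1) div 2}. {..s-(2*l+1)}). F l j (s-(2 * l+1)-j))"
    by (subst sum.Sigma) auto
  have "(\<Sum>(i,l)\<in>(SIGMA i:{..s}. {..<(i+1) div 2}). F l (i - (2 * l+1)) (s - i)) =
        (\<Sum>(l,j)\<in>(SIGMA l:{..<(s+1) div 2}. {..s-(2 * l+1)}). F l j (s-(2 * l+1)-j))"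
    by (rule sum.reindex_bij_witness[where i="\<lambda>(l,j). (j + 2 * l+1, l)" and j="\<lambda>(i,l). (l, i - (2 * l+1))"])
       (auto; presburger)+
  then show ?thesis using L R by simp
qed


declare shiftc.simps[simp del]

lemma sum_reflect: "(\<Sum>i\<le>n. f (n - i)) = (\<Sum>i\<le>(n::nat). f i)"
  by (rule sum.reindex_bij_witness[where i="\<lambda>i. n - i" and j="\<lambda>i. n - i"]) auto

lemma shiftc_0[simp]: "shiftc a c 0 f = f"
  by (subst shiftc.simps) simp

lemma shiftc_pos: "0 < j \<Longrightarrow> shiftc a c j f =
   (\<lambda>t. (1 / of_nat j) * (\<Sum>i<(j+1) div 2. c * pd a i (shiftc a c (j - (2*i+1)) f) t))"
  by (subst shiftc.simps) simp

lemma shiftc_rec: "of_nat j * shiftc a c j f t = (\<Sum>l<(j+1) div 2. c * pd a l (shiftc a c (j-(2*l+1)) f) t)"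
proof (cases "j = 0")
  case True then show ?thesis by simp
next
  case False then show ?thesis by (simp add: shiftc_pos)
qed

lemma shiftc_unique:
  assumes X0: "X 0 = f"
    and XS: "\<And>j t. 0 < j \<Longrightarrow> of_nat j * X j t = (\<Sum>l<(j+1) div 2. c * pd a l (X (j-(2*l+1))) t)"
  shows "shiftc a c j f = X j"
proof (induction j rule: less_induct)
  case (less j)
  show ?case
  proof (cases "j = 0")
    case True then show ?thesis using X0 by simp
  next
    case False
    then have jp: "0 < j" by simp
    have IH: "\<And>l. l < (j+1) div 2 \<Longrightarrow> shiftc a c (j-(2*l+1)) f = X (j-(2*l+1))"
      using less jp by (intro less.IH) auto
    show ?thesis
    proof
      fix t
      have "shiftc a c j f t = (1 / of_nat j) * (\<Sum>l<(j+1) div 2. c * pd a l (shiftc a c (j - (2*l+1)) f) t)"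
        using jp by (simp add: shiftc_pos)
      also have "\<dots> = (1 / of_nat j) * (\<Sum>l<(j+1) div 2. c * pd a l (X (j - (2*l+1))) t)"
        using IH by simp
      also have "\<dots> = (1 / of_nat j) * (of_nat j * X j t)" using XS[OF jp] by simp
      also have "\<dots> = X j t" using jp by simp
      finally show "shiftc a c j f t = X j t" .
    qed
  qed
qed

lemma SM_shiftc: "SM f \<Longrightarrow> SM (shiftc a c j f)"
proof (induction j rule: less_induct)
  case (less j)
  show ?case
  proof (cases "j = 0")
    case True then show ?thesis using less by simp
  next
    case False
    have IH: "\<And>i. SM (pd a i (shiftc a c (j - (2*i+1)) f))"
      using less False by (intro SM_pd less.IH) auto
    have IH2: "\<And>i. i \<in> {..<(j+1) div 2} \<Longrightarrow> SM (\<lambda>t. c * pd a i (shiftc a c (j - (2*i+1)) f) t)"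
      using IH by (rule SM_cmult)
    have "SM (\<lambda>t. (1 / of_nat j) * (\<Sum>i<(j+1) div 2. c * pd a i (shiftc a c (j - (2*i+1)) f) t))"
      by (rule SM_cmult, rule SM_sum[OF finite_lessThan IH2])
    then show ?thesis using False by (simp add: shiftc_pos)
  qed
qed

lemma shiftc_add: assumes "SM f" "SM g"
  shows "shiftc a c j (\<lambda>t. f t + g t) = (\<lambda>t. shiftc a c j f t + shiftc a c j g t)"
proof -
  have "shiftc a c j (\<lambda>t. f t + g t) = (\<lambda>j t. shiftc a c j f t + shiftc a c j g t) j"
  proof (rule shiftc_unique)
    fix j t assume "0 < (j::nat)"
    have "of_nat j * (shiftc a c j f t + shiftc a c j g t) = of_nat j * shiftc a c j f t + of_nat j * shiftc a c j g t"
      by (simp add: algebra_simps)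
    also have "\<dots> = (\<Sum>l<(j+1) div 2. c * pd a l (shiftc a c (j-(2*l+1)) f) t) + (\<Sum>l<(j+1) div 2. c * pd a l (shiftc a c (j-(2*l+1)) g) t)"
      by (simp add: shiftc_rec)
    also have "\<dots> = (\<Sum>l<(j+1) div 2. c * pd a l (\<lambda>t. shiftc a c (j-(2*l+1)) f t + shiftc a c (j-(2*l+1)) g t) t)"
      by (simp add: sum.distrib[symmetric] pd_add' SM_shiftc assms algebra_simps)
    finally show "of_nat j * (shiftc a c j f t + shiftc a c j g t) = (\<Sum>l<(j+1) div 2. c * pd a l (\<lambda>t. shiftc a c (j-(2*l+1)) f t + shiftc a c (j-(2*l+1)) g t) t)" .
  qed simp
  then show ?thesis by simp
qed

lemma shiftc_cmult: assumes "SM f"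
  shows "shiftc a c j (\<lambda>t. k * f t) = (\<lambda>t. k * shiftc a c j f t)"
proof -
  have "shiftc a c j (\<lambda>t. k * f t) = (\<lambda>j t. k * shiftc a c j f t) j"
  proof (rule shiftc_unique)
    fix j t assume "0 < (j::nat)"
    have "of_nat j * (k * shiftc a c j f t) = k * (of_nat j * shiftc a c j f t)"
      by (simp add: algebra_simps)
    also have "\<dots> = (\<Sum>l<(j+1) div 2. c * pd a l (\<lambda>t. k * shiftc a c (j-(2*l+1)) f t) t)"
      by (simp add: shiftc_rec sum_distrib_left pd_cmult' SM_shiftc assms algebra_simps)
    finally show "of_nat j * (k * shiftc a c j f t) = (\<Sum>l<(j+1) div 2. c * pd a l (\<lambda>t. k * shiftc a c (j-(2*l+1)) f t) t)" .
  qed simp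
  then show ?thesis by simp
qed

lemma shiftc_const: "shiftc a c j (\<lambda>t. k) = (\<lambda>t. if j = 0 then k else 0)"
proof -
  have "shiftc a c j (\<lambda>t. k) = (\<lambda>j t. if j = 0 then k else 0) j"
  proof (rule shiftc_unique)
    fix j t assume "0 < (j::nat)"
    show "of_nat j * (if j = 0 then k else 0) = (\<Sum>l<(j+1) div 2. c * pd a l (\<lambda>t. if j - (2*l+1) = 0 then k else 0) t)"
      using \<open>0 < j\<close> by (simp add: pd_const)
  qed simp
  then show ?thesis by simp
qed

lemma shiftc_sum: assumes "finite I" "\<And>i. i \<in> I \<Longrightarrow> SM (f i)"
  shows "shiftc a c j (\<lambda>t. \<Sum>i\<in>I. f i t) = (\<lambda>t. \<Sum>i\<in>I. shiftc a c j (f i) t)"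
  using assms
proof (induction I rule: finite_induct)
  case empty then show ?case using shiftc_const[of a c j 0] by simp
next
  case (insert x F)
  then show ?case by (simp add: shiftc_add SM_sum)
qed

lemma shiftc_1: "shiftc a c 1 f = (\<lambda>t. c * pd a 0 f t)"
  by (simp add: shiftc_pos)

lemma shiftc_neg: assumes "SM f"
  shows "shiftc a (-c) j f = (\<lambda>t. (-1)^j * shiftc a c j f t)"
proof -
  have "shiftc a (-c) j f = (\<lambda>j t. (-1)^j * shiftc a c j f t) j"
  proof (rule shiftc_unique)
    fix j t assume jp: "0 < (j::nat)"
    have "of_nat j * ((-1)^j * shiftc a c j f t) = (-1)^j * (of_nat j * shiftc a c j f t)"
      by (simp add: algebra_simps)
    also have "\<dots> = (\<Sum>l<(j+1) div 2. (-1)^j * (c * pd a l (shiftc a c (j-(2*l+1)) f) t))"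
      by (simp add: shiftc_rec sum_distrib_left)
    also have "\<dots> = (\<Sum>l<(j+1) div 2. - c * pd a l (\<lambda>t. (-1)^(j-(2*l+1)) * shiftc a c (j-(2*l+1)) f t) t)"
    proof (rule sum.cong[OF refl])
      fix l assume "l \<in> {..<(j+1) div 2}"
      then have "j = (j - (2*l+1)) + 2*l + 1" by auto
      then have "(-1::complex)^j = (-1)^(j-(2*l+1)) * (-1)^(2*l+1)"
        by (metis power_add add.assoc)
      then have "(-1::complex)^j = - ((-1)^(j-(2*l+1)))" by simp
      then show "(-1)^j * (c * pd a l (shiftc a c (j-(2*l+1)) f) t) = - c * pd a l (\<lambda>t. (-1)^(j-(2*l+1)) * shiftc a c (j-(2*l+1)) f t) t"
        by (simp add: pd_cmult' SM_shiftc assms)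
    qed
    finally show "of_nat j * ((-1)^j * shiftc a c j f t) = (\<Sum>l<(j+1) div 2. - c * pd a l (\<lambda>t. (-1)^(j-(2*l+1)) * shiftc a c (j-(2*l+1)) f t) t)" .
  qed simp
  then show ?thesis by simp
qed


lemma shiftc_mult: assumes f: "SM f" and g: "SM g"
  shows "shiftc a c p (\<lambda>t. f t * g t) = (\<lambda>t. \<Sum>i\<le>p. shiftc a c i f t * shiftc a c (p-i) g t)"
proof -
  define S where "S = (\<lambda>i. shiftc a c i f)"
  define T where "T = (\<lambda>i. shiftc a c i g)"
  have SMS: "\<And>i. SM (S i)" and SMT: "\<And>i. SM (T i)" unfolding S_def T_def using f g by (auto intro: SM_shiftc)
  have "shiftc a c p (\<lambda>t. f t * g t) = (\<lambda>p t. \<Sum>i\<le>p. S i t * T (p-i) t) p"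
  proof (rule shiftc_unique)
    show "(\<lambda>t. \<Sum>i\<le>0. S i t * T (0 - i) t) = (\<lambda>t. f t * g t)" by (simp add: S_def T_def)
  next
    fix p t assume "0 < (p::nat)"
    have A: "(\<Sum>i\<le>p. (of_nat i * S i t) * T (p-i) t) =
        (\<Sum>l<(p+1) div 2. \<Sum>j\<le>p-(2*l+1). c * pd a l (S j) t * T (p-(2*l+1)-j) t)"
    proof -
      have "(\<Sum>i\<le>p. (of_nat i * S i t) * T (p-i) t) =
            (\<Sum>i\<le>p. \<Sum>l<(i+1) div 2. c * pd a l (S (i-(2*l+1))) t * T (p-i) t)"
        by (simp add: S_def shiftc_rec sum_distrib_right)
      also have "\<dots> = (\<Sum>l<(p+1) div 2. \<Sum>j\<le>p-(2*l+1). c * pd a l (S j) t * T (p-(2*l+1)-j) t)"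
        by (rule tri_reindex[where F="\<lambda>l x y. c * pd a l (S x) t * T y t"])
      finally show ?thesis .
    qed
    have B: "(\<Sum>i\<le>p. S i t * (of_nat (p-i) * T (p-i) t)) =
        (\<Sum>l<(p+1) div 2. \<Sum>j\<le>p-(2*l+1). S j t * (c * pd a l (T (p-(2*l+1)-j)) t))"
    proof -
      have "(\<Sum>i\<le>p. S i t * (of_nat (p-i) * T (p-i) t)) = (\<Sum>i\<le>p. S (p-i) t * (of_nat (p-(p-i)) * T (p-(p-i)) t))"
        by (rule sum_reflect[symmetric])
      also have "\<dots> = (\<Sum>i\<le>p. S (p-i) t * (of_nat i * T i t))"
        by (rule sum.cong) auto
      also have "\<dots> = (\<Sum>i\<le>p. \<Sum>l<(i+1) div 2. S (p-i) t * (c * pd a l (T (i-(2*l+1))) t))"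
        by (simp add: T_def shiftc_rec sum_distrib_left)
      also have "\<dots> = (\<Sum>l<(p+1) div 2. \<Sum>j\<le>p-(2*l+1). S (p-(2*l+1)-j) t * (c * pd a l (T j) t))"
        by (rule tri_reindex[where F="\<lambda>l x y. S y t * (c * pd a l (T x) t)"])
      also have "\<dots> = (\<Sum>l<(p+1) div 2. \<Sum>j\<le>p-(2*l+1). S j t * (c * pd a l (T (p-(2*l+1)-j)) t))"
      proof (rule sum.cong[OF refl])
        fix l
        define q where "q = p-(2*l+1)"
        have "(\<Sum>j\<le>q. S j t * (c * pd a l (T (q-j)) t)) = (\<Sum>j\<le>q. S (q-(q-j)) t * (c * pd a l (T (q-j)) t))"
          by (rule sum.cong) auto
        also have "\<dots> = (\<Sum>j\<le>q. S (q-j) t * (c * pd a l (T j) t))"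
          by (rule sum_reflect[where f="\<lambda>j. S (q-j) t * (c * pd a l (T j) t)"])
        finally show "(\<Sum>j\<le>p-(2*l+1). S (p-(2*l+1)-j) t * (c * pd a l (T j) t)) =
              (\<Sum>j\<le>p-(2*l+1). S j t * (c * pd a l (T (p-(2*l+1)-j)) t))"
          unfolding q_def by simp
      qed
      finally show ?thesis .
    qed
    have "of_nat p * (\<Sum>i\<le>p. S i t * T (p-i) t) =
          (\<Sum>i\<le>p. (of_nat i * S i t) * T (p-i) t) + (\<Sum>i\<le>p. S i t * (of_nat (p-i) * T (p-i) t))"
    proof -
      have "of_nat p * (\<Sum>i\<le>p. S i t * T (p-i) t) = (\<Sum>i\<le>p. (of_nat i + of_nat (p-i)) * (S i t * T (p-i) t))"
        by (subst sum_distrib_left) (rule sum.cong, auto simp: of_nat_diff)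
      then show ?thesis by (simp add: sum.distrib[symmetric] algebra_simps)
    qed
    also have "\<dots> = (\<Sum>l<(p+1) div 2. c * (\<Sum>j\<le>p-(2*l+1). pd a l (S j) t * T (p-(2*l+1)-j) t + S j t * pd a l (T (p-(2*l+1)-j)) t))"
      unfolding A B by (simp add: sum.distrib[symmetric] sum_distrib_left algebra_simps)
    also have "\<dots> = (\<Sum>l<(p+1) div 2. c * pd a l (\<lambda>t. \<Sum>i\<le>p-(2*l+1). S i t * T (p-(2*l+1)-i) t) t)"
    proof (rule sum.cong[OF refl])
      fix l
      have "pd a l (\<lambda>t. \<Sum>i\<le>p-(2*l+1). S i t * T (p-(2*l+1)-i) t) t =
            (\<Sum>i\<le>p-(2*l+1). pd a l (\<lambda>t. S i t * T (p-(2*l+1)-i) t) t)"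
        by (subst pd_sum) (auto intro: SM_mult SMS SMT)
      also have "\<dots> = (\<Sum>j\<le>p-(2*l+1). pd a l (S j) t * T (p-(2*l+1)-j) t + S j t * pd a l (T (p-(2*l+1)-j)) t)"
        by (rule sum.cong[OF refl]) (simp add: pd_mult' SMS SMT)
      finally show "c * (\<Sum>j\<le>p-(2*l+1). pd a l (S j) t * T (p-(2*l+1)-j) t + S j t * pd a l (T (p-(2*l+1)-j)) t) =
         c * pd a l (\<lambda>t. \<Sum>i\<le>p-(2*l+1). S i t * T (p-(2*l+1)-i) t) t" by simp
    qed
    finally show "of_nat p * (\<Sum>i\<le>p. S i t * T (p-i) t) =
       (\<Sum>l<(p+1) div 2. c * pd a l (\<lambda>t. \<Sum>i\<le>p-(2*l+1). S i t * T (p-(2*l+1)-i) t) t)" .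
  qed
  then show ?thesis by (simp add: S_def T_def)
qed


inductive_set Tsp :: "fn \<Rightarrow> fn set" for \<tau>0 :: fn where
  base: "pds ds \<tau>0 \<in> Tsp \<tau>0"
| add: "f \<in> Tsp \<tau>0 \<Longrightarrow> g \<in> Tsp \<tau>0 \<Longrightarrow> (\<lambda>t. f t + g t) \<in> Tsp \<tau>0"
| cmult: "f \<in> Tsp \<tau>0 \<Longrightarrow> (\<lambda>t. k * f t) \<in> Tsp \<tau>0"

definition TAU :: "fn \<Rightarrow> bool" where
  "TAU \<tau>0 \<longleftrightarrow> SM \<tau>0 \<and> (\<forall>ds a k b l. pd a k (pd b l (pds ds \<tau>0)) = pd b l (pd a k (pds ds \<tau>0)))"

lemma smooth_TAU: "smooth_tau \<tau>0 \<Longrightarrow> TAU \<tau>0"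
  unfolding smooth_tau_def TAU_def SM_def LD_def by blast

context fixes \<tau>0 assumes TAU: "TAU \<tau>0" begin

lemma Tsp_SM: "f \<in> Tsp \<tau>0 \<Longrightarrow> SM f"
  by (induction rule: Tsp.induct) (use TAU in \<open>auto simp: TAU_def intro: SM_pds SM_add SM_cmult\<close>)

lemma Tsp_zero: "(\<lambda>t. 0) \<in> Tsp \<tau>0"
  using Tsp.cmult[OF Tsp.base[of "[]"], of 0] by simp

lemma Tsp_tau: "\<tau>0 \<in> Tsp \<tau>0"
  using Tsp.base[of "[]"] by simp

lemma Tsp_sum: "finite I \<Longrightarrow> (\<And>i. i \<in> I \<Longrightarrow> f i \<in> Tsp \<tau>0) \<Longrightarrow> (\<lambda>t. \<Sum>i\<in>I. f i t) \<in> Tsp \<tau>0"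
  by (induction I rule: finite_induct) (auto intro: Tsp.add Tsp_zero)

lemma Tsp_pd: "f \<in> Tsp \<tau>0 \<Longrightarrow> pd a k f \<in> Tsp \<tau>0"
proof (induction rule: Tsp.induct)
  case (base ds) then show ?case using Tsp.base[of "(a,k)#ds"] by (simp add: pds_Cons)
next
  case (add f g) then show ?case by (simp add: pd_add' Tsp_SM Tsp.add)
next
  case (cmult f c) then show ?case by (simp add: pd_cmult' Tsp_SM Tsp.cmult)
qed

lemma Tsp_comm: "f \<in> Tsp \<tau>0 \<Longrightarrow> pd a k (pd b l f) = pd b l (pd a k f)"
proof (induction rule: Tsp.induct)
  case (base ds) then show ?case using TAU by (simp add: TAU_def)
next
  case (add f g) then show ?case by (simp add: pd_add' Tsp_SM SM_pd)
next
  case (cmult f c) then show ?case by (simp add: pd_cmult' Tsp_SM SM_pd)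
qed

lemma Tsp_shiftc: "f \<in> Tsp \<tau>0 \<Longrightarrow> shiftc a c j f \<in> Tsp \<tau>0"
proof (induction j rule: less_induct)
  case (less j)
  show ?case
  proof (cases "j = 0")
    case True then show ?thesis using less by simp
  next
    case False
    have IH: "\<And>i. pd a i (shiftc a c (j - (2*i+1)) f) \<in> Tsp \<tau>0"
      using less False by (intro Tsp_pd less.IH) auto
    have IH2: "\<And>i. i \<in> {..<(j+1) div 2} \<Longrightarrow> (\<lambda>t. c * pd a i (shiftc a c (j - (2*i+1)) f) t) \<in> Tsp \<tau>0"
      by (rule Tsp.cmult[OF IH])
    have "(\<lambda>t. (1 / of_nat j) * (\<Sum>i<(j+1) div 2. c * pd a i (shiftc a c (j - (2*i+1)) f) t)) \<in> Tsp \<tau>0"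
      by (rule Tsp.cmult, rule Tsp_sum[OF finite_lessThan IH2])
    then show ?thesis using False by (simp add: shiftc_pos)
  qed
qed

lemma shiftc_fun_rec: "(\<lambda>t. of_nat j * shiftc a c j f t) = (\<lambda>t. \<Sum>l<(j+1) div 2. c * pd a l (shiftc a c (j-(2*l+1)) f) t)"
  by (rule ext) (rule shiftc_rec)

lemma pd_shiftc_comm: assumes f: "f \<in> Tsp \<tau>0"
  shows "pd b l (shiftc a c j f) = shiftc a c j (pd b l f)"
proof -
  have "shiftc a c j (pd b l f) = (\<lambda>j. pd b l (shiftc a c j f)) j"
  proof (rule shiftc_unique)
    fix j t assume "0 < (j::nat)"
    have "of_nat j * pd b l (shiftc a c j f) t = pd b l (\<lambda>t. of_nat j * shiftc a c j f t) t"
      by (simp add: pd_cmult' SM_shiftc Tsp_SM f)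
    also have "\<dots> = pd b l (\<lambda>t. \<Sum>l<(j+1) div 2. c * pd a l (shiftc a c (j-(2*l+1)) f) t) t"
      by (simp only: shiftc_fun_rec)
    also have "\<dots> = (\<Sum>i<(j+1) div 2. c * pd b l (pd a i (shiftc a c (j-(2*i+1)) f)) t)"
      by (subst pd_sum) (auto intro!: SM_cmult SM_pd SM_shiftc Tsp_SM[OF f] simp: pd_cmult' SM_pd SM_shiftc Tsp_SM f)
    also have "\<dots> = (\<Sum>i<(j+1) div 2. c * pd a i (pd b l (shiftc a c (j-(2*i+1)) f)) t)"
      by (simp add: Tsp_comm Tsp_shiftc f)
    finally show "of_nat j * pd b l (shiftc a c j f) t = (\<Sum>i<(j+1) div 2. c * pd a i (pd b l (shiftc a c (j-(2*i+1)) f)) t)" .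
  qed simp
  then show ?thesis by simp
qed

lemma shiftc_comm: assumes f: "f \<in> Tsp \<tau>0"
  shows "shiftc a c j (shiftc b d i f) = shiftc b d i (shiftc a c j f)"
proof -
  have "shiftc a c j (shiftc b d i f) = (\<lambda>j. shiftc b d i (shiftc a c j f)) j"
  proof (rule shiftc_unique)
    fix j t assume "0 < (j::nat)"
    have "of_nat j * shiftc b d i (shiftc a c j f) t = shiftc b d i (\<lambda>t. of_nat j * shiftc a c j f t) t"
      by (simp add: shiftc_cmult SM_shiftc Tsp_SM f)
    also have "\<dots> = shiftc b d i (\<lambda>t. \<Sum>l<(j+1) div 2. c * pd a l (shiftc a c (j-(2*l+1)) f) t) t"
      by (simp only: shiftc_fun_rec)
    also have "\<dots> = (\<Sum>l<(j+1) div 2. c * shiftc b d i (pd a l (shiftc a c (j-(2*l+1)) f)) t)"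
      by (subst shiftc_sum) (auto intro!: SM_cmult SM_pd SM_shiftc Tsp_SM[OF f] simp: shiftc_cmult SM_pd SM_shiftc Tsp_SM f)
    also have "\<dots> = (\<Sum>l<(j+1) div 2. c * pd a l (shiftc b d i (shiftc a c (j-(2*l+1)) f)) t)"
      by (simp add: pd_shiftc_comm Tsp_shiftc f)
    finally show "of_nat j * shiftc b d i (shiftc a c j f) t = (\<Sum>l<(j+1) div 2. c * pd a l (shiftc b d i (shiftc a c (j-(2*l+1)) f)) t)" .
  qed simp
  then show ?thesis by simp
qed

lemma shiftc_addition: assumes f: "f \<in> Tsp \<tau>0"
  shows "(\<lambda>t. \<Sum>i\<le>s. shiftc a c1 i (shiftc a c2 (s-i) f) t) = shiftc a (c1+c2) s f"
proof -
  define X where "X = (\<lambda>s t. \<Sum>i\<le>s. shiftc a c1 i (shiftc a c2 (s-i) f) t)"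
  have SMX: "\<And>i j. SM (shiftc a c1 i (shiftc a c2 j f))" using f by (auto intro: SM_shiftc Tsp_SM)
  have "shiftc a (c1+c2) s f = X s"
  proof (rule shiftc_unique)
    show "X 0 = f" by (simp add: X_def)
  next
    fix p t assume "0 < (p::nat)"
    have A: "(\<Sum>i\<le>p. of_nat i * shiftc a c1 i (shiftc a c2 (p-i) f) t) =
        (\<Sum>l<(p+1) div 2. \<Sum>j\<le>p-(2*l+1). c1 * pd a l (shiftc a c1 j (shiftc a c2 (p-(2*l+1)-j) f)) t)"
    proof -
      have "(\<Sum>i\<le>p. of_nat i * shiftc a c1 i (shiftc a c2 (p-i) f) t) =
            (\<Sum>i\<le>p. \<Sum>l<(i+1) div 2. c1 * pd a l (shiftc a c1 (i-(2*l+1)) (shiftc a c2 (p-i) f)) t)"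
        by (simp add: shiftc_rec)
      also have "\<dots> = (\<Sum>l<(p+1) div 2. \<Sum>j\<le>p-(2*l+1). c1 * pd a l (shiftc a c1 j (shiftc a c2 (p-(2*l+1)-j) f)) t)"
        by (rule tri_reindex[where F="\<lambda>l x y. c1 * pd a l (shiftc a c1 x (shiftc a c2 y f)) t"])
      finally show ?thesis .
    qed
    have B: "(\<Sum>i\<le>p. of_nat (p-i) * shiftc a c1 i (shiftc a c2 (p-i) f) t) =
        (\<Sum>l<(p+1) div 2. \<Sum>j\<le>p-(2*l+1). c2 * pd a l (shiftc a c1 j (shiftc a c2 (p-(2*l+1)-j) f)) t)"
    proof -
      have e: "\<And>i m. of_nat m * shiftc a c1 i (shiftc a c2 m f) t =
          (\<Sum>l<(m+1) div 2. c2 * pd a l (shiftc a c1 i (shiftc a c2 (m-(2*l+1)) f)) t)"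
      proof -
        fix i m
        have "of_nat m * shiftc a c1 i (shiftc a c2 m f) t = shiftc a c1 i (\<lambda>t. of_nat m * shiftc a c2 m f t) t"
          by (simp add: shiftc_cmult SM_shiftc Tsp_SM f)
        also have "\<dots> = shiftc a c1 i (\<lambda>t. \<Sum>l<(m+1) div 2. c2 * pd a l (shiftc a c2 (m-(2*l+1)) f) t) t"
          by (simp only: shiftc_fun_rec)
        also have "\<dots> = (\<Sum>l<(m+1) div 2. c2 * shiftc a c1 i (pd a l (shiftc a c2 (m-(2*l+1)) f)) t)"
          by (subst shiftc_sum) (auto intro!: SM_cmult SM_pd SM_shiftc Tsp_SM[OF f] simp: shiftc_cmult SM_pd SM_shiftc Tsp_SM f)
        also have "\<dots> = (\<Sum>l<(m+1) div 2. c2 * pd a l (shiftc a c1 i (shiftc a c2 (m-(2*l+1)) f)) t)"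
          by (simp add: pd_shiftc_comm Tsp_shiftc f)
        finally show "of_nat m * shiftc a c1 i (shiftc a c2 m f) t =
          (\<Sum>l<(m+1) div 2. c2 * pd a l (shiftc a c1 i (shiftc a c2 (m-(2*l+1)) f)) t)" .
      qed
      have "(\<Sum>i\<le>p. of_nat (p-i) * shiftc a c1 i (shiftc a c2 (p-i) f) t) =
            (\<Sum>i\<le>p. of_nat (p-(p-i)) * shiftc a c1 (p-i) (shiftc a c2 (p-(p-i)) f) t)"
        by (rule sum_reflect[symmetric])
      also have "\<dots> = (\<Sum>i\<le>p. of_nat i * shiftc a c1 (p-i) (shiftc a c2 i f) t)"
        by (rule sum.cong) auto
      also have "\<dots> = (\<Sum>i\<le>p. \<Sum>l<(i+1) div 2. c2 * pd a l (shiftc a c1 (p-i) (shiftc a c2 (i-(2*l+1)) f)) t)"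
        by (simp only: e)
      also have "\<dots> = (\<Sum>l<(p+1) div 2. \<Sum>j\<le>p-(2*l+1). c2 * pd a l (shiftc a c1 (p-(2*l+1)-j) (shiftc a c2 j f)) t)"
        by (rule tri_reindex[where F="\<lambda>l x y. c2 * pd a l (shiftc a c1 y (shiftc a c2 x f)) t"])
      also have "\<dots> = (\<Sum>l<(p+1) div 2. \<Sum>j\<le>p-(2*l+1). c2 * pd a l (shiftc a c1 j (shiftc a c2 (p-(2*l+1)-j) f)) t)"
      proof (rule sum.cong[OF refl])
        fix l
        define q where "q = p-(2*l+1)"
        have "(\<Sum>j\<le>q. c2 * pd a l (shiftc a c1 j (shiftc a c2 (q-j) f)) t) =
              (\<Sum>j\<le>q. c2 * pd a l (shiftc a c1 (q-(q-j)) (shiftc a c2 (q-j) f)) t)"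
          by (rule sum.cong) auto
        also have "\<dots> = (\<Sum>j\<le>q. c2 * pd a l (shiftc a c1 (q-j) (shiftc a c2 j f)) t)"
          by (rule sum_reflect[where f="\<lambda>j. c2 * pd a l (shiftc a c1 (q-j) (shiftc a c2 j f)) t"])
        finally show "(\<Sum>j\<le>p-(2*l+1). c2 * pd a l (shiftc a c1 (p-(2*l+1)-j) (shiftc a c2 j f)) t) =
              (\<Sum>j\<le>p-(2*l+1). c2 * pd a l (shiftc a c1 j (shiftc a c2 (p-(2*l+1)-j) f)) t)"
          unfolding q_def by simp
      qed
      finally show ?thesis .
    qed
    have "of_nat p * X p t = (\<Sum>i\<le>p. of_nat i * shiftc a c1 i (shiftc a c2 (p-i) f) t) +
                            (\<Sum>i\<le>p. of_nat (p-i) * shiftc a c1 i (shiftc a c2 (p-i) f) t)"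
    proof -
      have "of_nat p * X p t = (\<Sum>i\<le>p. (of_nat i + of_nat (p-i)) * shiftc a c1 i (shiftc a c2 (p-i) f) t)"
        unfolding X_def by (subst sum_distrib_left) (rule sum.cong, auto simp: of_nat_diff)
      then show ?thesis by (simp add: sum.distrib[symmetric] algebra_simps)
    qed
    also have "\<dots> = (\<Sum>l<(p+1) div 2. (c1+c2) * (\<Sum>j\<le>p-(2*l+1). pd a l (shiftc a c1 j (shiftc a c2 (p-(2*l+1)-j) f)) t))"
      unfolding A B by (simp add: sum.distrib[symmetric] sum_distrib_left algebra_simps)
    also have "\<dots> = (\<Sum>l<(p+1) div 2. (c1+c2) * pd a l (X (p-(2*l+1))) t)"
      unfolding X_def by (subst pd_sum) (auto intro: SMX)
    finally show "of_nat p * X p t = (\<Sum>l<(p+1) div 2. (c1+c2) * pd a l (X (p-(2*l+1))) t)" .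
  qed
  then show ?thesis by (simp add: X_def)
qed

lemma shiftc_zero_param: "shiftc a 0 j f = (if j = 0 then f else (\<lambda>t. 0))"
proof -
  have "shiftc a 0 j f = (\<lambda>j. if j = 0 then f else (\<lambda>t. 0)) j"
    by (rule shiftc_unique) auto
  then show ?thesis by simp
qed

lemma shiftc_inverse: assumes f: "f \<in> Tsp \<tau>0"
  shows "(\<lambda>t. \<Sum>i\<le>s. shiftc a c i (shiftc a (-c) (s-i) f) t) = (if s = 0 then f else (\<lambda>t. 0))"
proof -
  have "(\<lambda>t. \<Sum>i\<le>s. shiftc a c i (shiftc a (-c) (s-i) f) t) = shiftc a (c + -c) s f"
    by (rule shiftc_addition[OF f])
  then show ?thesis by (simp add: shiftc_zero_param)
qed

end


declare hpoly.simps[simp del]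

lemma hpoly_0[simp]: "hpoly y 0 = 1"
  by (subst hpoly.simps) simp

lemma hpoly_pos: "0 < j \<Longrightarrow> hpoly y j =
   (1 / of_nat j) * (\<Sum>i<(j+1) div 2. of_nat (2*i+1) * y i * hpoly y (j - (2*i+1)))"
  by (subst hpoly.simps) simp

lemma hpoly_rec: "of_nat j * hpoly y j = (\<Sum>i<(j+1) div 2. of_nat (2*i+1) * y i * hpoly y (j - (2*i+1)))"
proof (cases "j = 0")
  case True then show ?thesis by simp
next
  case False then show ?thesis by (simp add: hpoly_pos)
qed

lemma hpoly_unique:
  assumes X0: "X 0 = 1"
    and XS: "\<And>j. 0 < j \<Longrightarrow> of_nat j * X j = (\<Sum>i<(j+1) div 2. of_nat (2*i+1) * y i * X (j - (2*i+1)))"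
  shows "hpoly y j = X j"
proof (induction j rule: less_induct)
  case (less j)
  show ?case
  proof (cases "j = 0")
    case True then show ?thesis using X0 by simp
  next
    case False
    then have jp: "0 < j" by simp
    have IH: "\<And>i. i < (j+1) div 2 \<Longrightarrow> hpoly y (j-(2*i+1)) = X (j-(2*i+1))"
      using jp by (intro less.IH) auto
    have "hpoly y j = (1 / of_nat j) * (\<Sum>i<(j+1) div 2. of_nat (2*i+1) * y i * hpoly y (j - (2*i+1)))"
      using jp by (simp add: hpoly_pos)
    also have "\<dots> = (1 / of_nat j) * (\<Sum>i<(j+1) div 2. of_nat (2*i+1) * y i * X (j - (2*i+1)))"
      using IH by simp
    also have "\<dots> = (1 / of_nat j) * (of_nat j * X j)" using XS[OF jp] by simp
    also have "\<dots> = X j" using jp by simp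
    finally show ?thesis .
  qed
qed

lemma hpoly_zero: "hpoly (\<lambda>l. 0) j = (if j = 0 then 1 else 0)"
  by (rule hpoly_unique) auto

lemma hpoly_neg: "hpoly (\<lambda>l. - y l) j = (-1)^j * hpoly y j"
proof (rule hpoly_unique)
  fix j :: nat assume jp: "0 < j"
  have "of_nat j * ((-1)^j * hpoly y j) = (-1)^j * (of_nat j * hpoly y j)" by (simp add: algebra_simps)
  also have "\<dots> = (\<Sum>i<(j+1) div 2. (-1)^j * (of_nat (2*i+1) * y i * hpoly y (j - (2*i+1))))"
    by (simp add: hpoly_rec sum_distrib_left)
  also have "\<dots> = (\<Sum>i<(j+1) div 2. of_nat (2*i+1) * (- y i) * ((-1)^(j - (2*i+1)) * hpoly y (j - (2*i+1))))"
  proof (rule sum.cong[OF refl])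
    fix i assume "i \<in> {..<(j+1) div 2}"
    then have "j = (j - (2*i+1)) + 2*i + 1" by auto
    then have "(-1::complex)^j = (-1)^(j-(2*i+1)) * (-1)^(2*i+1)"
      by (metis power_add add.assoc)
    then have "(-1::complex)^j = - ((-1)^(j-(2*i+1)))" by simp
    then show "(-1)^j * (of_nat (2*i+1) * y i * hpoly y (j - (2*i+1))) =
       of_nat (2*i+1) * (- y i) * ((-1)^(j - (2*i+1)) * hpoly y (j - (2*i+1)))" by simp
  qed
  finally show "of_nat j * ((-1)^j * hpoly y j) = (\<Sum>i<(j+1) div 2. of_nat (2*i+1) * (- y i) * ((-1)^(j - (2*i+1)) * hpoly y (j - (2*i+1))))" .
qed simp

definition cst :: "complex \<Rightarrow> nat \<Rightarrow> complex" where
  "cst k j = hpoly (\<lambda>l. - k / of_nat (2*l+1)) j"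

lemma cst_rec: "of_nat j * cst k j = (\<Sum>i<(j+1) div 2. - k * cst k (j - (2*i+1)))"
  unfolding cst_def by (subst hpoly_rec) (rule sum.cong, auto simp del: of_nat_Suc)

lemma card_odd_aux: "card {i. i < ((j::nat)+1) div 2 \<and> j = 2*i+1} = (if odd j then 1 else 0)"
proof (cases "odd j")
  case True
  then obtain m where m: "j = 2*m+1" by (metis oddE)
  have "{i. i < (j+1) div 2 \<and> j = 2*i+1} = {m}" using m by auto
  then show ?thesis using True by simp
next
  case False
  then have "{i. i < (j+1) div 2 \<and> j = 2*i+1} = {}" by auto
  then show ?thesis using False by simp
qed

lemma cst_m2: "cst (-2) j = (if j = 0 then 1 else 2)"
proof -
  have "cst (-2) j = (\<lambda>j. if j = 0 then 1 else 2) j"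
    unfolding cst_def
  proof (rule hpoly_unique)
    fix j :: nat assume jp: "0 < j"
    have "(\<Sum>i<(j+1) div 2. of_nat (2*i+1) * (- (-2) / of_nat (2*i+1)) * (if j - (2*i+1) = 0 then 1 else 2 :: complex))
        = (\<Sum>i<(j+1) div 2. 2 * (if j = 2*i+1 then 1 else 2))"
      by (rule sum.cong) (auto simp del: of_nat_Suc)
    also have "\<dots> = (\<Sum>i<(j+1) div 2. 4 - 2 * (if j = 2*i+1 then 1 else 0 :: complex))"
      by (rule sum.cong) auto
    also have "\<dots> = 4 * of_nat ((j+1) div 2) - 2 * of_nat (card {i. i < (j+1) div 2 \<and> j = 2*i+1})"
      by (simp add: sum_subtractf sum_distrib_left[symmetric] sum.If_cases Int_def)
    also have "\<dots> = of_nat j * 2"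
    proof (cases "odd j")
      case True
      then obtain m where m: "j = 2*m+1" by (metis oddE)
      then have "(j+1) div 2 = m+1" by simp
      then show ?thesis using True m card_odd_aux[of j] by simp
    next
      case False
      then obtain m where m: "j = 2*m" by (metis evenE)
      then have "(j+1) div 2 = m" by simp
      then show ?thesis using False m card_odd_aux[of j] by simp
    qed
    finally show "of_nat j * (if j = 0 then 1 else 2) = (\<Sum>i<(j+1) div 2. of_nat (2*i+1) * (- (-2) / of_nat (2*i+1)) * (if j - (2*i+1) = 0 then 1 else 2 :: complex))"
      using jp by simp
  qed simp
  then show ?thesis by simp
qed

lemma cst_2: "cst 2 j = (if j = 0 then 1 else 2 * (-1)^j)"
proof -
  have "cst 2 j = hpoly (\<lambda>l. - (- (-2) / of_nat (2*l+1))) j" unfolding cst_def by simp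
  also have "\<dots> = (-1)^j * cst (-2) j" unfolding cst_def by (rule hpoly_neg)
  finally show ?thesis by (simp add: cst_m2)
qed


lemma hpoly_deriv:
  "((\<lambda>s. hpoly (y(l:=s)) j) has_field_derivative
     (if 2*l+1 \<le> j then hpoly (y(l:=s0)) (j-(2*l+1)) else 0)) (at s0)"
proof (induction j rule: less_induct)
  case (less j)
  show ?case
  proof (cases "j = 0")
    case True then show ?thesis by simp
  next
    case False
    then have jp: "0 < j" by simp
    define yq where "yq = y(l:=s0)"
    define D where "D = (\<lambda>m. if 2*l+1 \<le> m then hpoly yq (m-(2*l+1)) else 0)"
    have funeq: "(\<lambda>s. hpoly (y(l:=s)) j) = (\<lambda>s. (1 / of_nat j) *
        (\<Sum>i<(j+1) div 2. of_nat (2*i+1) * ((y(l:=s)) i * hpoly (y(l:=s)) (j - (2*i+1)))))"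
      using jp by (simp add: hpoly_pos mult.assoc)
    have dy: "\<And>i. ((\<lambda>s. (y(l:=s)) i) has_field_derivative (if i = l then 1 else 0)) (at s0)"
      by (auto simp: fun_upd_def)
    have IH: "\<And>i. i < (j+1) div 2 \<Longrightarrow> ((\<lambda>s. hpoly (y(l:=s)) (j - (2*i+1))) has_field_derivative D (j - (2*i+1))) (at s0)"
      unfolding D_def yq_def using jp by (intro less.IH) auto
    have termd: "\<And>i. i \<in> {..<(j+1) div 2} \<Longrightarrow> ((\<lambda>s. of_nat (2*i+1) * ((y(l:=s)) i * hpoly (y(l:=s)) (j-(2*i+1)))) has_field_derivative
         of_nat (2*i+1) * ((if i = l then 1 else 0) * hpoly yq (j-(2*i+1)) + yq i * D (j-(2*i+1)))) (at s0)"
    proof -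
      fix i assume "i \<in> {..<(j+1) div 2}"
      then have "i < (j+1) div 2" by simp
      from DERIV_cmult[OF DERIV_mult'[OF dy IH[OF this]], of "of_nat (2*i+1)"]
      show "((\<lambda>s. of_nat (2*i+1) * ((y(l:=s)) i * hpoly (y(l:=s)) (j-(2*i+1)))) has_field_derivative
         of_nat (2*i+1) * ((if i = l then 1 else 0) * hpoly yq (j-(2*i+1)) + yq i * D (j-(2*i+1)))) (at s0)"
        by (rule DERIV_cong) (simp add: yq_def algebra_simps)
    qed
    have der: "((\<lambda>s. (1 / of_nat j) *
        (\<Sum>i<(j+1) div 2. of_nat (2*i+1) * ((y(l:=s)) i * hpoly (y(l:=s)) (j - (2*i+1))))) has_field_derivative
        (1 / of_nat j) * (\<Sum>i<(j+1) div 2. of_nat (2*i+1) * ((if i = l then 1 else 0) * hpoly yq (j - (2*i+1)) + yq i * D (j - (2*i+1))))) (at s0)"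
      by (rule DERIV_cmult, rule DERIV_sum, rule termd)
    have val: "(1 / of_nat j) * (\<Sum>i<(j+1) div 2. of_nat (2*i+1) * ((if i = l then 1 else 0) * hpoly yq (j - (2*i+1)) + yq i * D (j - (2*i+1))))
        = (if 2*l+1 \<le> j then hpoly yq (j-(2*l+1)) else 0)"
    proof (cases "2*l+1 \<le> j")
      case True
      define j' where "j' = j - (2*l+1)"
      have s1: "(\<Sum>i<(j+1) div 2. of_nat (2*i+1) * (if i = l then 1 else 0) * hpoly yq (j - (2*i+1)))
                 = of_nat (2*l+1) * hpoly yq j'"
      proof -
        have "l \<in> {..<(j+1) div 2}" using True by auto
        then show ?thesis unfolding j'_def
          by (simp add: if_distrib[of "\<lambda>x. _ * x * _"] sum.delta cong: if_cong)
      qed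
      have s2: "(\<Sum>i<(j+1) div 2. of_nat (2*i+1) * (yq i * D (j - (2*i+1))))
                 = (\<Sum>i<(j'+1) div 2. of_nat (2*i+1) * yq i * hpoly yq (j' - (2*i+1)))"
      proof (rule sum.mono_neutral_cong_right)
        show "{..<(j' + 1) div 2} \<subseteq> {..<(j + 1) div 2}" unfolding j'_def by auto
      next
        show "\<forall>i\<in>{..<(j + 1) div 2} - {..<(j' + 1) div 2}. of_nat (2*i+1) * (yq i * D (j - (2*i+1))) = 0"
          unfolding D_def j'_def by auto
      next
        fix i assume "i \<in> {..<(j' + 1) div 2}"
        then show "of_nat (2*i+1) * (yq i * D (j - (2*i+1))) = of_nat (2*i+1) * yq i * hpoly yq (j' - (2*i+1))"
          unfolding D_def j'_def by (auto simp: algebra_simps)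
      qed simp
      have "(\<Sum>i<(j+1) div 2. of_nat (2*i+1) * ((if i = l then 1 else 0) * hpoly yq (j - (2*i+1)) + yq i * D (j - (2*i+1))))
          = of_nat (2*l+1) * hpoly yq j' + of_nat j' * hpoly yq j'"
        using s1 s2 hpoly_rec[of j' yq] by (simp add: distrib_left sum.distrib mult.assoc)
      also have "\<dots> = of_nat j * hpoly yq j'"
        using True unfolding j'_def by (simp add: algebra_simps of_nat_diff)
      finally show ?thesis using True jp unfolding j'_def by simp
    next
      case False
      have "\<And>i. i < (j+1) div 2 \<Longrightarrow> (if i = l then 1 else 0) = (0::complex)" using False by auto
      moreover have "\<And>i. D (j - (2*i+1)) = 0" using False unfolding D_def by auto
      ultimately show ?thesis using False by simp
    qed
    show ?thesis using der[unfolded funeq[symmetric] val] unfolding yq_def .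
  qed
qed

definition Hf :: "nat \<Rightarrow> tm \<Rightarrow> nat \<Rightarrow> fn" where
  "Hf a t kk = (\<lambda>t'. hpoly (\<lambda>l. tc a t l - tc a t' l) kk)"

definition samec :: "nat \<Rightarrow> nat \<Rightarrow> bool" where "samec c a \<longleftrightarrow> (c = 1 \<longleftrightarrow> a = 1)"

lemma tc_upd: "tc a (upd c l s t') i = (if samec c a \<and> i = l then s else tc a t' i)"
  by (auto simp: tc_def upd_def samec_def)

lemma Hf_at: "Hf a t kk t = (if kk = 0 then 1 else 0)"
  by (simp add: Hf_def hpoly_zero)

lemma Hf_line_same: assumes "samec c a"
  shows "(\<lambda>s. Hf a t kk (upd c l s t')) = (\<lambda>s. hpoly ((\<lambda>i. tc a t i - tc a t' i)(l := tc a t l - s)) kk)"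
  using assms by (auto simp: Hf_def tc_upd fun_upd_def intro!: ext arg_cong[where f="\<lambda>y. hpoly y kk"])

lemma Hf_line_other: assumes "\<not> samec c a"
  shows "(\<lambda>s. Hf a t kk (upd c l s t')) = (\<lambda>s. Hf a t kk t')"
  using assms by (auto simp: Hf_def tc_upd)

lemma Hf_deriv: assumes "samec c a"
  shows "((\<lambda>s. Hf a t kk (upd c l s t')) has_field_derivative
           (if 2*l+1 \<le> kk then - Hf a t (kk-(2*l+1)) (upd c l s0 t') else 0)) (at s0)"
proof -
  define y where "y = (\<lambda>i. tc a t i - tc a t' i)"
  have d1: "((\<lambda>s. tc a t l - s) has_field_derivative -1) (at s0)"
    by (auto intro!: derivative_eq_intros)
  have d2: "((\<lambda>s. hpoly (y(l:=s)) kk) has_field_derivative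
     (if 2*l+1 \<le> kk then hpoly (y(l:=tc a t l - s0)) (kk-(2*l+1)) else 0)) (at (tc a t l - s0))"
    by (rule hpoly_deriv)
  have "((\<lambda>s. hpoly (y(l := tc a t l - s)) kk) has_field_derivative
      (if 2*l+1 \<le> kk then hpoly (y(l:=tc a t l - s0)) (kk-(2*l+1)) else 0) * -1) (at s0)"
    using DERIV_chain2[OF d2 d1] by simp
  moreover have "hpoly (y(l:=tc a t l - s0)) (kk-(2*l+1)) = Hf a t (kk-(2*l+1)) (upd c l s0 t')"
    using assms unfolding y_def Hf_def
    by (auto simp: tc_upd fun_upd_def intro!: arg_cong[where f="\<lambda>y. hpoly y _"])
  moreover have "\<And>x. x = hpoly (y(l:=tc a t l - s0)) (kk-(2*l+1)) \<Longrightarrow>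
      (if 2*l+1 \<le> kk then x else 0) * -1 = (if 2*l+1 \<le> kk then - Hf a t (kk-(2*l+1)) (upd c l s0 t') else 0)"
    using calculation(2) by auto
  ultimately show ?thesis unfolding Hf_line_same[OF assms] y_def
    using DERIV_cong by blast
qed

lemma LD_Hf: "LD (Hf a t kk)"
proof (rule LD_I)
  fix c l t' s0
  show "(\<lambda>s. Hf a t kk (upd c l s t')) field_differentiable at s0"
  proof (cases "samec c a")
    case True then show ?thesis using Hf_deriv[OF True] field_differentiable_def by blast
  next
    case False then show ?thesis unfolding Hf_line_other[OF False] by simp
  qed
qed

lemma pd_Hf: "pd c l (Hf a t kk) t' = (if samec c a \<and> 2*l+1 \<le> kk then - Hf a t (kk-(2*l+1)) t' else 0)"
proof (cases "samec c a")
  case True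
  have "deriv (\<lambda>s. Hf a t kk (upd c l s t')) (tc c t' l) =
        (if 2*l+1 \<le> kk then - Hf a t (kk-(2*l+1)) (upd c l (tc c t' l) t') else 0)"
    by (rule DERIV_imp_deriv[OF Hf_deriv[OF True]])
  then show ?thesis using True by (simp add: pd_def upd_tc)
next
  case False
  then show ?thesis by (simp add: pd_def Hf_line_other)
qed

lemma pd_Hf_fun: "pd c l (Hf a t kk) = (\<lambda>t'. if samec c a \<and> 2*l+1 \<le> kk then - Hf a t (kk-(2*l+1)) t' else 0)"
  by (rule ext) (rule pd_Hf)

lemma pds_Hf: "\<exists>\<kappa> j. pds ds (Hf a t kk) = (\<lambda>t'. \<kappa> * Hf a t j t')"
proof (induction ds)
  case Nil then show ?case by (rule exI[of _ 1]) auto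
next
  case (Cons x ds)
  then obtain \<kappa> j where e: "pds ds (Hf a t kk) = (\<lambda>t'. \<kappa> * Hf a t j t')" by blast
  obtain c l where x: "x = (c,l)" by (cases x)
  have pc: "pd c l (\<lambda>t'. \<kappa> * Hf a t j t') = (\<lambda>t'. \<kappa> * pd c l (Hf a t j) t')"
    by (rule ext, rule pd_cmult[OF LD_Hf])
  have "pds (x#ds) (Hf a t kk) = (\<lambda>t'. \<kappa> * pd c l (Hf a t j) t')"
    by (simp add: pds_Cons x e pc)
  also have "\<dots> = (\<lambda>t'. (if samec c a \<and> 2*l+1 \<le> j then - \<kappa> else 0) * Hf a t (j-(2*l+1)) t')"
    by (auto simp: pd_Hf)
  finally show ?case by blast
qed

lemma SM_Hf: "SM (Hf a t kk)"
  unfolding SM_def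
proof
  fix ds
  obtain \<kappa> j where "pds ds (Hf a t kk) = (\<lambda>t'. \<kappa> * Hf a t j t')" using pds_Hf by blast
  then show "LD (pds ds (Hf a t kk))" by (simp add: LD_cmult LD_Hf)
qed

lemma shiftc_Hf:
  "shiftc c k j (Hf a t kk) = (if samec c a then (\<lambda>t'. if j \<le> kk then cst k j * Hf a t (kk-j) t' else 0)
                              else (if j = 0 then Hf a t kk else (\<lambda>t'. 0)))"
proof (cases "samec c a")
  case True
  have "shiftc c k j (Hf a t kk) = (\<lambda>j t'. if j \<le> kk then cst k j * Hf a t (kk-j) t' else 0) j"
  proof (rule shiftc_unique)
    show "(\<lambda>t'. if 0 \<le> kk then cst k 0 * Hf a t (kk-0) t' else 0) = Hf a t kk"
      by (simp add: cst_def)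
  next
    fix j t' assume jp: "0 < (j::nat)"
    have pdX: "\<And>m l. pd c l (\<lambda>t'. if m \<le> kk then cst k m * Hf a t (kk-m) t' else 0) t' =
        (if m \<le> kk then cst k m * (if 2*l+1 \<le> kk-m then - Hf a t (kk-m-(2*l+1)) t' else 0) else 0)"
      by (auto simp: pd_cmult[OF LD_Hf] pd_Hf True pd_const)
    have "(\<Sum>l<(j+1) div 2. k * pd c l (\<lambda>t'. if j-(2*l+1) \<le> kk then cst k (j-(2*l+1)) * Hf a t (kk-(j-(2*l+1))) t' else 0) t')
        = (\<Sum>l<(j+1) div 2. (if j \<le> kk then (- k * cst k (j-(2*l+1))) * Hf a t (kk-j) t' else 0))"
    proof (rule sum.cong[OF refl])
      fix l assume "l \<in> {..<(j+1) div 2}"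
      then have l: "2*l+1 \<le> j" by auto
      have "(j-(2*l+1) \<le> kk \<and> 2*l+1 \<le> kk-(j-(2*l+1))) = (j \<le> kk)" using l by auto
      moreover have "kk-(j-(2*l+1))-(2*l+1) = kk - j" using l by auto
      ultimately show "k * pd c l (\<lambda>t'. if j-(2*l+1) \<le> kk then cst k (j-(2*l+1)) * Hf a t (kk-(j-(2*l+1))) t' else 0) t'
         = (if j \<le> kk then (- k * cst k (j-(2*l+1))) * Hf a t (kk-j) t' else 0)"
        unfolding pdX by auto
    qed
    also have "\<dots> = (if j \<le> kk then of_nat j * cst k j * Hf a t (kk-j) t' else 0)"
    proof -
      have "of_nat j * cst k j = (\<Sum>l<(j+1) div 2. - k * cst k (j-(2*l+1)))" by (rule cst_rec)
      then show ?thesis by (simp add: sum_distrib_right)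
    qed
    finally show "of_nat j * (if j \<le> kk then cst k j * Hf a t (kk-j) t' else 0) =
       (\<Sum>l<(j+1) div 2. k * pd c l (\<lambda>t'. if j-(2*l+1) \<le> kk then cst k (j-(2*l+1)) * Hf a t (kk-(j-(2*l+1))) t' else 0) t')"
      by simp
  qed
  then show ?thesis using True by simp
next
  case False
  have "shiftc c k j (Hf a t kk) = (\<lambda>j. if j = 0 then Hf a t kk else (\<lambda>t'. 0)) j"
  proof (rule shiftc_unique)
    fix j t' assume jp: "0 < (j::nat)"
    have "\<And>P l. pd c l (if P then Hf a t kk else (\<lambda>t'. 0)) t' = 0"
      using False by (auto simp: pd_Hf pd_const)
    then show "of_nat j * (if j = 0 then Hf a t kk else (\<lambda>t'. 0)) t' =
      (\<Sum>l<(j+1) div 2. k * pd c l (if j-(2*l+1) = 0 then Hf a t kk else (\<lambda>t'. 0)) t')"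
      using jp by simp
  qed simp
  then show ?thesis using False by simp
qed


definition BE :: "fn \<Rightarrow> nat \<Rightarrow> (fn \<Rightarrow> fn) \<Rightarrow> bool" where
  "BE \<tau> w \<Phi> \<longleftrightarrow> (\<forall>t. \<Phi> (hir \<tau> 1 w t) t = \<Phi> (hir \<tau> 2 w t) t)"

lemma hir_eq: "hir \<tau> c N t = (\<lambda>t'. \<Sum>kk\<le>N. \<Sum>i\<le>kk.
      shiftc c (-2) i \<tau> t * shiftc c 2 (kk - i) \<tau> t' * Hf c t kk t')"
  by (simp add: hir_def Hf_def fun_eq_iff)

lemma SM_hir: "SM \<tau> \<Longrightarrow> SM (hir \<tau> c N t)"
  unfolding hir_eq
  by (intro SM_sum SM_mult SM_cmult SM_shiftc SM_Hf SM_const) auto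

lemma bkp_BE: "bkp2_tau \<tau> \<Longrightarrow> BE \<tau> (wt ds) (pds ds)"
  by (simp add: bkp2_tau_def BE_def)

lemma wt_snoc: "wt (ds @ [(c,l)]) = wt ds + (2*l+1)"
  by (simp add: wt_def)

lemma BE_shift:
  assumes SMt: "SM \<tau>"
    and SMO: "\<And>c N t. SM (Oo (hir \<tau> c N t))"
    and H: "\<And>ds. BE \<tau> (wt ds + k) (\<lambda>g. pds ds (Oo g))"
  shows "BE \<tau> (wt ds + k + j) (\<lambda>g. pds ds (shiftc c \<kappa> j (Oo g)))"
proof (induction j arbitrary: ds rule: less_induct)
  case (less j)
  show ?case
  proof (cases "j = 0")
    case True then show ?thesis using H by simp
  next
    case False
    have IH: "\<And>l. l < (j+1) div 2 \<Longrightarrow> BE \<tau> (wt (ds @ [(c,l)]) + k + (j - (2*l+1))) (\<lambda>g. pds (ds @ [(c,l)]) (shiftc c \<kappa> (j - (2*l+1)) (Oo g)))"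
      using False by (intro less.IH) auto
    have w: "\<And>l. l < (j+1) div 2 \<Longrightarrow> wt (ds @ [(c,l)]) + k + (j - (2*l+1)) = wt ds + k + j"
      by (auto simp: wt_snoc)
    have expand: "\<And>G. SM G \<Longrightarrow> pds ds (shiftc c \<kappa> j G) = (\<lambda>t. (1 / of_nat j) * (\<Sum>l<(j+1) div 2. \<kappa> * pds (ds @ [(c,l)]) (shiftc c \<kappa> (j - (2*l+1)) G) t))"
    proof -
      fix G :: fn assume G: "SM G"
      have "pds ds (shiftc c \<kappa> j G) = pds ds (\<lambda>t. (1 / of_nat j) * (\<Sum>l<(j+1) div 2. \<kappa> * pd c l (shiftc c \<kappa> (j - (2*l+1)) G) t))"
        using False by (simp add: shiftc_pos)
      also have "\<dots> = (\<lambda>t. (1 / of_nat j) * pds ds (\<lambda>t. \<Sum>l<(j+1) div 2. \<kappa> * pd c l (shiftc c \<kappa> (j - (2*l+1)) G) t) t)"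
        by (rule pds_cmult) (intro SM_sum SM_cmult SM_pd SM_shiftc G finite_lessThan)
      also have "\<dots> = (\<lambda>t. (1 / of_nat j) * (\<Sum>l<(j+1) div 2. pds ds (\<lambda>t. \<kappa> * pd c l (shiftc c \<kappa> (j - (2*l+1)) G) t) t))"
        by (subst pds_sum) (auto intro!: SM_cmult SM_pd SM_shiftc G)
      also have "\<dots> = (\<lambda>t. (1 / of_nat j) * (\<Sum>l<(j+1) div 2. \<kappa> * pds (ds @ [(c,l)]) (shiftc c \<kappa> (j - (2*l+1)) G) t))"
        by (simp add: pds_cmult SM_pd SM_shiftc G pds_snoc)
      finally show "pds ds (shiftc c \<kappa> j G) = (\<lambda>t. (1 / of_nat j) * (\<Sum>l<(j+1) div 2. \<kappa> * pds (ds @ [(c,l)]) (shiftc c \<kappa> (j - (2*l+1)) G) t))" .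
    qed
    show ?thesis unfolding BE_def
    proof
      fix t
      have e: "\<And>l. l \<in> {..<(j+1) div 2} \<Longrightarrow>
        pds (ds @ [(c,l)]) (shiftc c \<kappa> (j - (2*l+1)) (Oo (hir \<tau> 1 (wt ds + k + j) t))) t =
        pds (ds @ [(c,l)]) (shiftc c \<kappa> (j - (2*l+1)) (Oo (hir \<tau> 2 (wt ds + k + j) t))) t"
        using IH w unfolding BE_def by fastforce
      show "pds ds (shiftc c \<kappa> j (Oo (hir \<tau> 1 (wt ds + k + j) t))) t =
            pds ds (shiftc c \<kappa> j (Oo (hir \<tau> 2 (wt ds + k + j) t))) t"
        unfolding expand[OF SMO]
        apply (rule arg_cong[where f="\<lambda>x. (1 / of_nat j) * x"])
        apply (rule sum.cong[OF refl])
        apply (subst e)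
         apply assumption
        apply (rule refl)
        done
    qed
  qed
qed

definition Op1 :: "nat \<Rightarrow> nat \<Rightarrow> nat \<Rightarrow> nat \<Rightarrow> fn \<Rightarrow> fn" where
  "Op1 a b p r g = pd a 0 (shiftc a (-2) p (shiftc b 2 r g))"

lemma bkp_Op1: assumes "bkp2_tau \<tau>"
  shows "Op1 a b p r (hir \<tau> 1 (1 + r + p) t) t = Op1 a b p r (hir \<tau> 2 (1 + r + p) t) t"
proof -
  have SMt: "SM \<tau>" using assms smooth_TAU unfolding bkp2_tau_def TAU_def by blast
  have B0: "\<And>ds. BE \<tau> (wt ds + 0) (\<lambda>g. pds ds ((\<lambda>g. g) g))" using bkp_BE[OF assms] by simp
  have B1: "\<And>ds. BE \<tau> (wt ds + 0 + r) (\<lambda>g. pds ds (shiftc b 2 r ((\<lambda>g. g) g)))"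
    by (rule BE_shift[OF SMt _ B0]) (simp add: SM_hir SMt)
  have B1': "\<And>ds. BE \<tau> (wt ds + r) (\<lambda>g. pds ds ((\<lambda>g. shiftc b 2 r g) g))" using B1 by simp
  have B2: "\<And>ds. BE \<tau> (wt ds + r + p) (\<lambda>g. pds ds (shiftc a (-2) p ((\<lambda>g. shiftc b 2 r g) g)))"
    by (rule BE_shift[OF SMt _ B1']) (simp add: SM_hir SMt SM_shiftc)
  have "BE \<tau> (wt [(a,0)] + r + p) (\<lambda>g. pds [(a,0)] (shiftc a (-2) p (shiftc b 2 r g)))"
    using B2 by simp
  then have X: "(\<lambda>g. pds [(a,0)] (shiftc a (-2) p (shiftc b 2 r g))) (hir \<tau> 1 (wt [(a,0)] + r + p) t) t =
      (\<lambda>g. pds [(a,0)] (shiftc a (-2) p (shiftc b 2 r g))) (hir \<tau> 2 (wt [(a,0)] + r + p) t) t"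
    unfolding BE_def by blast
  have w: "wt [(a,0)] + r + p = 1 + r + p" by (simp add: wt_def)
  show ?thesis using X unfolding w by (simp add: Op1_def pds_Cons)
qed


lemma Op1_sum: assumes "finite I" "\<And>i. i \<in> I \<Longrightarrow> SM (f i)"
  shows "Op1 a b p r (\<lambda>t. \<Sum>i\<in>I. f i t) = (\<lambda>t. \<Sum>i\<in>I. Op1 a b p r (f i) t)"
  unfolding Op1_def using assms
  by (simp add: shiftc_sum SM_shiftc pd_sum)

lemma Op1_cmult: assumes "SM f"
  shows "Op1 a b p r (\<lambda>t. k * f t) = (\<lambda>t. k * Op1 a b p r f t)"
  unfolding Op1_def using assms
  by (simp add: shiftc_cmult SM_shiftc pd_cmult')

lemma SxTy_mult: assumes F: "SM F" and G: "SM G"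
  shows "shiftc a (-2) p (shiftc b 2 r (\<lambda>t. F t * G t)) =
    (\<lambda>t. \<Sum>r1\<le>r. \<Sum>p1\<le>p. shiftc a (-2) p1 (shiftc b 2 r1 F) t * shiftc a (-2) (p-p1) (shiftc b 2 (r-r1) G) t)"
proof -
  have "shiftc a (-2) p (shiftc b 2 r (\<lambda>t. F t * G t)) =
        shiftc a (-2) p (\<lambda>t. \<Sum>r1\<le>r. shiftc b 2 r1 F t * shiftc b 2 (r-r1) G t)"
    by (simp add: shiftc_mult F G)
  also have "\<dots> = (\<lambda>t. \<Sum>r1\<le>r. shiftc a (-2) p (\<lambda>t. shiftc b 2 r1 F t * shiftc b 2 (r-r1) G t) t)"
    by (rule shiftc_sum) (auto intro: SM_mult SM_shiftc F G)
  also have "\<dots> = (\<lambda>t. \<Sum>r1\<le>r. \<Sum>p1\<le>p. shiftc a (-2) p1 (shiftc b 2 r1 F) t * shiftc a (-2) (p-p1) (shiftc b 2 (r-r1) G) t)"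
    by (simp add: shiftc_mult SM_shiftc F G)
  finally show ?thesis .
qed

lemma Op1_mult: assumes F: "SM F" and G: "SM G"
  shows "Op1 a b p r (\<lambda>t. F t * G t) t =
    (\<Sum>r1\<le>r. \<Sum>p1\<le>p. pd a 0 (shiftc a (-2) p1 (shiftc b 2 r1 F)) t * shiftc a (-2) (p-p1) (shiftc b 2 (r-r1) G) t
        + shiftc a (-2) p1 (shiftc b 2 r1 F) t * pd a 0 (shiftc a (-2) (p-p1) (shiftc b 2 (r-r1) G)) t)"
proof -
  have SMs: "\<And>p r H. SM H \<Longrightarrow> SM (shiftc a (-2) p (shiftc b 2 r H))" by (intro SM_shiftc)
  show ?thesis unfolding Op1_def SxTy_mult[OF F G]
    by (simp add: pd_sum SM_sum SM_mult SMs F G pd_mult')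
qed

definition kap0 :: "nat \<Rightarrow> nat \<Rightarrow> nat \<Rightarrow> nat \<Rightarrow> nat \<Rightarrow> complex" where
  "kap0 a b c p2 r2 = (if (samec b c \<or> r2 = 0) \<and> (samec a c \<or> p2 = 0)
      then (if samec b c then cst 2 r2 else 1) * (if samec a c then cst (-2) p2 else 1) else 0)"

lemma ST_Hf:
  "shiftc a (-2) p2 (shiftc b 2 r2 (Hf c t kk)) =
     (\<lambda>t'. (if p2 + r2 \<le> kk then kap0 a b c p2 r2 else 0) * Hf c t (kk-p2-r2) t')"
proof (cases "samec b c")
  case True
  have "shiftc a (-2) p2 (shiftc b 2 r2 (Hf c t kk)) =
        shiftc a (-2) p2 (\<lambda>t'. (if r2 \<le> kk then cst 2 r2 else 0) * Hf c t (kk-r2) t')"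
    using True by (simp add: shiftc_Hf if_distrib cong: if_cong)
  also have "\<dots> = (\<lambda>t'. (if r2 \<le> kk then cst 2 r2 else 0) * shiftc a (-2) p2 (Hf c t (kk-r2)) t')"
    by (rule shiftc_cmult[OF SM_Hf])
  also have "\<dots> = (\<lambda>t'. (if p2 + r2 \<le> kk then kap0 a b c p2 r2 else 0) * Hf c t (kk-p2-r2) t')"
    using True by (auto simp: shiftc_Hf kap0_def fun_eq_iff diff_diff_add add.commute)
  finally show ?thesis .
next
  case False
  show ?thesis
  proof (cases "r2 = 0")
    case True
    then show ?thesis using False by (auto simp: shiftc_Hf kap0_def fun_eq_iff)
  next
    case r2: False
    have "shiftc b 2 r2 (Hf c t kk) = (\<lambda>t'. 0)"
      using False r2 by (simp add: shiftc_Hf)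
    then have "shiftc a (-2) p2 (shiftc b 2 r2 (Hf c t kk)) = (\<lambda>t'. 0)"
      by (simp add: shiftc_const)
    then show ?thesis using False r2 by (simp add: kap0_def)
  qed
qed

lemma g0_val: "shiftc a (-2) p2 (shiftc b 2 r2 (Hf c t kk)) t = (if kk = p2 + r2 then kap0 a b c p2 r2 else 0)"
  by (auto simp: ST_Hf Hf_at)

lemma g1_val: "pd a 0 (shiftc a (-2) p2 (shiftc b 2 r2 (Hf c t kk))) t =
   (if samec a c \<and> kk = p2 + r2 + 1 then - kap0 a b c p2 r2 else 0)"
proof -
  have "pd a 0 (shiftc a (-2) p2 (shiftc b 2 r2 (Hf c t kk))) t =
        (if p2 + r2 \<le> kk then kap0 a b c p2 r2 else 0) * pd a 0 (Hf c t (kk-p2-r2)) t"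
    unfolding ST_Hf by (rule pd_cmult[OF LD_Hf])
  also have "\<dots> = (if samec a c \<and> kk = p2 + r2 + 1 then - kap0 a b c p2 r2 else 0)"
    by (auto simp: pd_Hf Hf_at samec_def)
  finally show ?thesis .
qed


definition Zc :: "fn \<Rightarrow> nat \<Rightarrow> nat \<Rightarrow> nat \<Rightarrow> nat \<Rightarrow> nat \<Rightarrow> nat \<Rightarrow> nat \<Rightarrow> tm \<Rightarrow> complex" where
  "Zc \<tau> a b c e kk p1 r1 t = (\<Sum>i\<le>kk. shiftc c (-2) i \<tau> t *
      ((pd a 0 ^^ e) (shiftc a (-2) p1 (shiftc b 2 r1 (shiftc c 2 (kk-i) \<tau>)))) t)"

lemma sum_if_eq: fixes x :: complex and N :: nat assumes "m \<le> N" shows "(\<Sum>kk\<le>N. (if kk = m then x else 0) * W kk) = x * W m"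
proof -
  have "(\<Sum>kk\<le>N. (if kk = m then x else 0) * W kk) = (\<Sum>kk\<le>N. if kk = m then x * W m else 0)"
    by (rule sum.cong) auto
  also have "\<dots> = x * W m" using assms by (simp add: sum.delta sum.delta')
  finally show ?thesis .
qed

lemma BilB: assumes SMt: "SM \<tau>"
  shows "Op1 a b p r (hir \<tau> c (1 + r + p) t) t =
    (\<Sum>r1\<le>r. \<Sum>p1\<le>p. kap0 a b c (p-p1) (r-r1) *
       (Zc \<tau> a b c 1 (p-p1+(r-r1)) p1 r1 t - (if samec a c then Zc \<tau> a b c 0 (p-p1+(r-r1)+1) p1 r1 t else 0)))"
proof -
  define N where "N = 1 + r + p"
  define A where "A = (\<lambda>i. shiftc c (-2) i \<tau> t)"
  define B where "B = (\<lambda>j. shiftc c 2 j \<tau>)"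
  define P where "P = (\<lambda>e j p1 r1. (pd a 0 ^^ e) (shiftc a (-2) p1 (shiftc b 2 r1 (B j))) t)"
  define g0 where "g0 = (\<lambda>kk p2 r2. (if kk = p2 + r2 then kap0 a b c p2 r2 else 0))"
  define g1 where "g1 = (\<lambda>kk p2 r2. (if samec a c \<and> kk = p2 + r2 + 1 then - kap0 a b c p2 r2 else 0))"
  have SMB: "\<And>j. SM (B j)" unfolding B_def using SMt by (rule SM_shiftc)
  have SMterm: "\<And>kk i. SM (\<lambda>t'. B (kk-i) t' * Hf c t kk t')" by (intro SM_mult SMB SM_Hf)
  have "Op1 a b p r (hir \<tau> c N t) t = Op1 a b p r (\<lambda>t'. \<Sum>kk\<le>N. \<Sum>i\<le>kk. A i * (B (kk - i) t' * Hf c t kk t')) t"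
    unfolding hir_eq A_def B_def by (simp add: mult.assoc)
  also have "\<dots> = (\<Sum>kk\<le>N. \<Sum>i\<le>kk. A i * Op1 a b p r (\<lambda>t'. B (kk - i) t' * Hf c t kk t') t)"
    by (simp add: Op1_sum Op1_cmult SMterm SM_sum SM_cmult)
  also have "\<dots> = (\<Sum>kk\<le>N. \<Sum>i\<le>kk. A i * (\<Sum>r1\<le>r. \<Sum>p1\<le>p. P 1 (kk-i) p1 r1 * g0 kk (p-p1) (r-r1) + P 0 (kk-i) p1 r1 * g1 kk (p-p1) (r-r1)))"
    unfolding Op1_mult[OF SMB SM_Hf] P_def g0_def g1_def g0_val g1_val by simp
  also have "\<dots> = (\<Sum>r1\<le>r. \<Sum>p1\<le>p. \<Sum>kk\<le>N. g0 kk (p-p1) (r-r1) * (\<Sum>i\<le>kk. A i * P 1 (kk-i) p1 r1) + g1 kk (p-p1) (r-r1) * (\<Sum>i\<le>kk. A i * P 0 (kk-i) p1 r1))"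
  proof -
    have "(\<Sum>kk\<le>N. \<Sum>i\<le>kk. A i * (\<Sum>r1\<le>r. \<Sum>p1\<le>p. P 1 (kk-i) p1 r1 * g0 kk (p-p1) (r-r1) + P 0 (kk-i) p1 r1 * g1 kk (p-p1) (r-r1)))
        = (\<Sum>kk\<le>N. \<Sum>i\<le>kk. \<Sum>r1\<le>r. \<Sum>p1\<le>p. A i * (P 1 (kk-i) p1 r1 * g0 kk (p-p1) (r-r1) + P 0 (kk-i) p1 r1 * g1 kk (p-p1) (r-r1)))"
      by (simp only: sum_distrib_left)
    also have "\<dots> = (\<Sum>kk\<le>N. \<Sum>r1\<le>r. \<Sum>p1\<le>p. \<Sum>i\<le>kk. A i * (P 1 (kk-i) p1 r1 * g0 kk (p-p1) (r-r1) + P 0 (kk-i) p1 r1 * g1 kk (p-p1) (r-r1)))"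
    proof (rule sum.cong[OF refl])
      fix kk
      show "(\<Sum>i\<le>kk. \<Sum>r1\<le>r. \<Sum>p1\<le>p. A i * (P 1 (kk-i) p1 r1 * g0 kk (p-p1) (r-r1) + P 0 (kk-i) p1 r1 * g1 kk (p-p1) (r-r1))) =
            (\<Sum>r1\<le>r. \<Sum>p1\<le>p. \<Sum>i\<le>kk. A i * (P 1 (kk-i) p1 r1 * g0 kk (p-p1) (r-r1) + P 0 (kk-i) p1 r1 * g1 kk (p-p1) (r-r1)))"
        apply (rule trans[OF sum.swap])
        apply (rule sum.cong[OF refl])
        apply (rule sum.swap)
        done
    qed
    also have "\<dots> = (\<Sum>r1\<le>r. \<Sum>p1\<le>p. \<Sum>kk\<le>N. \<Sum>i\<le>kk. A i * (P 1 (kk-i) p1 r1 * g0 kk (p-p1) (r-r1) + P 0 (kk-i) p1 r1 * g1 kk (p-p1) (r-r1)))"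
      apply (rule trans[OF sum.swap])
      apply (rule sum.cong[OF refl])
      apply (rule sum.swap)
      done
    also have "\<dots> = (\<Sum>r1\<le>r. \<Sum>p1\<le>p. \<Sum>kk\<le>N. g0 kk (p-p1) (r-r1) * (\<Sum>i\<le>kk. A i * P 1 (kk-i) p1 r1) + g1 kk (p-p1) (r-r1) * (\<Sum>i\<le>kk. A i * P 0 (kk-i) p1 r1))"
      by (intro sum.cong refl) (simp add: sum_distrib_left sum.distrib[symmetric] algebra_simps)
    finally show ?thesis .
  qed
  also have "\<dots> = (\<Sum>r1\<le>r. \<Sum>p1\<le>p. kap0 a b c (p-p1) (r-r1) *
       (Zc \<tau> a b c 1 (p-p1+(r-r1)) p1 r1 t - (if samec a c then Zc \<tau> a b c 0 (p-p1+(r-r1)+1) p1 r1 t else 0)))"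
  proof (intro sum.cong refl)
    fix r1 p1 assume r1: "r1 \<in> {..r}" and p1: "p1 \<in> {..p}"
    define kk0 where "kk0 = p-p1+(r-r1)"
    have k0: "kk0 \<le> N" and k1: "kk0 + 1 \<le> N" using r1 p1 unfolding kk0_def N_def by auto
    have Z: "\<And>e kk. (\<Sum>i\<le>kk. A i * P e (kk-i) p1 r1) = Zc \<tau> a b c e kk p1 r1 t"
      unfolding Zc_def A_def P_def B_def by simp
    have s0: "(\<Sum>kk\<le>N. g0 kk (p-p1) (r-r1) * (\<Sum>i\<le>kk. A i * P 1 (kk-i) p1 r1)) = kap0 a b c (p-p1) (r-r1) * Zc \<tau> a b c 1 kk0 p1 r1 t"
      unfolding g0_def Z using sum_if_eq[OF k0] kk0_def by simp
    have s1: "(\<Sum>kk\<le>N. g1 kk (p-p1) (r-r1) * (\<Sum>i\<le>kk. A i * P 0 (kk-i) p1 r1)) =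
        (if samec a c then - kap0 a b c (p-p1) (r-r1) * Zc \<tau> a b c 0 (kk0+1) p1 r1 t else 0)"
    proof (cases "samec a c")
      case True
      have "(\<Sum>kk\<le>N. g1 kk (p-p1) (r-r1) * (\<Sum>i\<le>kk. A i * P 0 (kk-i) p1 r1)) =
          (\<Sum>kk\<le>N. (if kk = kk0+1 then - kap0 a b c (p-p1) (r-r1) else 0) * Zc \<tau> a b c 0 kk p1 r1 t)"
        unfolding g1_def Z kk0_def using True by simp
      also have "\<dots> = - kap0 a b c (p-p1) (r-r1) * Zc \<tau> a b c 0 (kk0+1) p1 r1 t"
        by (rule sum_if_eq[OF k1])
      finally show ?thesis using True by simp
    next
      case False
      then show ?thesis unfolding g1_def by simp
    qed
    show "(\<Sum>kk\<le>N. g0 kk (p-p1) (r-r1) * (\<Sum>i\<le>kk. A i * P 1 (kk-i) p1 r1) + g1 kk (p-p1) (r-r1) * (\<Sum>i\<le>kk. A i * P 0 (kk-i) p1 r1)) =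
      kap0 a b c (p-p1) (r-r1) * (Zc \<tau> a b c 1 (p-p1+(r-r1)) p1 r1 t - (if samec a c then Zc \<tau> a b c 0 (p-p1+(r-r1)+1) p1 r1 t else 0))"
      unfolding sum.distrib s0 s1 kk0_def by (simp add: algebra_simps)
  qed
  finally show ?thesis unfolding N_def .
qed


lemma upd_samec: "samec a c \<Longrightarrow> upd a = upd c"
  by (auto simp: samec_def upd_def fun_eq_iff)
lemma tc_samec: "samec a c \<Longrightarrow> tc a = tc c"
  by (auto simp: samec_def tc_def fun_eq_iff)
lemma pd_samec: "samec a c \<Longrightarrow> pd a = pd c"
  by (auto simp: pd_def fun_eq_iff upd_samec tc_samec)
lemma shiftc_samec: assumes "samec a c" shows "shiftc a = shiftc c"
proof (intro ext)
  fix \<kappa> j f t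
  have "shiftc c \<kappa> j f = (\<lambda>j. shiftc a \<kappa> j f) j"
  proof (rule shiftc_unique)
    fix j t assume "0 < (j::nat)"
    show "of_nat j * shiftc a \<kappa> j f t = (\<Sum>l<(j+1) div 2. \<kappa> * pd c l (shiftc a \<kappa> (j-(2*l+1)) f) t)"
      using shiftc_rec pd_samec[OF assms] by metis
  qed simp
  then show "shiftc a \<kappa> j f t = shiftc c \<kappa> j f t" by simp
qed
lemma samec_refl: "samec a a" by (simp add: samec_def)
lemma samec_sym: "samec a c \<Longrightarrow> samec c a" by (auto simp: samec_def)

lemma tri_reindex2:
  fixes F :: "nat \<Rightarrow> nat \<Rightarrow> nat \<Rightarrow> 'a::comm_monoid_add"
  shows "(\<Sum>kk\<le>p. \<Sum>i\<le>kk. F i (kk-i) (p-kk)) = (\<Sum>i\<le>p. \<Sum>j\<le>p-i. F i j (p-i-j))"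
proof -
  have L: "(\<Sum>kk\<le>p. \<Sum>i\<le>kk. F i (kk-i) (p-kk)) = (\<Sum>(kk,i)\<in>(SIGMA kk:{..p}. {..kk}). F i (kk-i) (p-kk))"
    by (subst sum.Sigma) auto
  have R: "(\<Sum>i\<le>p. \<Sum>j\<le>p-i. F i j (p-i-j)) = (\<Sum>(i,j)\<in>(SIGMA i:{..p}. {..p-i}). F i j (p-i-j))"
    by (subst sum.Sigma) auto
  have "(\<Sum>(kk,i)\<in>(SIGMA kk:{..p}. {..kk}). F i (kk-i) (p-kk)) = (\<Sum>(i,j)\<in>(SIGMA i:{..p}. {..p-i}). F i j (p-i-j))"
    by (rule sum.reindex_bij_witness[where i="\<lambda>(i,j). (i+j, i)" and j="\<lambda>(kk,i). (i, kk-i)"]) auto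
  then show ?thesis using L R by simp
qed

lemma SM_pdpow: "SM f \<Longrightarrow> SM ((pd a 0 ^^ e) f)"
  by (induction e) (auto intro: SM_pd)

lemma pdpow_sum: assumes "finite I" "\<And>i. i \<in> I \<Longrightarrow> SM (f i)"
  shows "(pd a 0 ^^ e) (\<lambda>t. \<Sum>i\<in>I. f i t) = (\<lambda>t. \<Sum>i\<in>I. (pd a 0 ^^ e) (f i) t)"
proof (induction e)
  case 0 then show ?case by simp
next
  case (Suc e)
  have "(pd a 0 ^^ Suc e) (\<lambda>t. \<Sum>i\<in>I. f i t) = pd a 0 (\<lambda>t. \<Sum>i\<in>I. (pd a 0 ^^ e) (f i) t)"
    using Suc by simp
  also have "\<dots> = (\<lambda>t. \<Sum>i\<in>I. pd a 0 ((pd a 0 ^^ e) (f i)) t)"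
    using assms by (intro pd_sum) (auto intro: SM_pdpow)
  finally show ?case by simp
qed

lemma pdpow_cmult: assumes "SM f"
  shows "(pd a 0 ^^ e) (\<lambda>t. k * f t) = (\<lambda>t. k * (pd a 0 ^^ e) f t)"
proof (induction e)
  case 0 then show ?case by simp
next
  case (Suc e) then show ?case using assms by (simp add: pd_cmult' SM_pdpow)
qed

lemma pdpow_zero: "(pd a 0 ^^ e) (\<lambda>t. 0) = (\<lambda>t. 0)"
  by (induction e) (auto simp: pd_const)

context fixes \<tau> assumes TAU: "TAU \<tau>" begin

lemma SMtau: "SM \<tau>" using TAU by (simp add: TAU_def)
lemma Tsh: "shiftc a c j \<tau> \<in> Tsp \<tau>" by (rule Tsp_shiftc[OF TAU Tsp_tau[OF TAU]])
lemma Tsh2: "shiftc a c j (shiftc b d i \<tau>) \<in> Tsp \<tau>" by (rule Tsp_shiftc[OF TAU Tsh])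
lemma SMsh: "SM (shiftc a c j \<tau>)" by (rule SM_shiftc[OF SMtau])
lemma SMsh2: "SM (shiftc a c j (shiftc b d i \<tau>))" by (rule SM_shiftc[OF SMsh])
lemma SMsh3: "SM (shiftc a c j (shiftc b d i (shiftc a' d' i' \<tau>)))" by (rule SM_shiftc[OF SMsh2])

lemma Ev1: assumes ac: "samec a c"
  shows "(\<Sum>kk\<le>p. Zc \<tau> a b c e kk (p-kk) r1 t) = shiftc a (-2) p \<tau> t * (pd a 0 ^^ e) (shiftc b 2 r1 \<tau>) t"
proof -
  have sc: "shiftc c = shiftc a" using shiftc_samec[OF ac] by simp
  define A where "A = (\<lambda>i. shiftc a (-2) i \<tau> t)"
  define G where "G = (\<lambda>j p1. (pd a 0 ^^ e) (shiftc a (-2) p1 (shiftc a 2 j (shiftc b 2 r1 \<tau>))) t)"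
  have Zc_eq: "\<And>kk p1. Zc \<tau> a b c e kk p1 r1 t = (\<Sum>i\<le>kk. A i * G (kk-i) p1)"
    unfolding Zc_def A_def G_def sc by (simp add: shiftc_comm[OF TAU Tsp_tau[OF TAU], of b 2 r1 a 2])
  have inner: "\<And>q. (\<Sum>j\<le>q. G j (q-j)) = (if q = 0 then (pd a 0 ^^ e) (shiftc b 2 r1 \<tau>) t else 0)"
  proof -
    fix q
    have "(\<Sum>j\<le>q. G j (q-j)) = (pd a 0 ^^ e) (\<lambda>t. \<Sum>j\<le>q. shiftc a (-2) (q-j) (shiftc a 2 j (shiftc b 2 r1 \<tau>)) t) t"
      unfolding G_def by (subst pdpow_sum) (auto intro: SMsh3)
    also have "(\<lambda>t. \<Sum>j\<le>q. shiftc a (-2) (q-j) (shiftc a 2 j (shiftc b 2 r1 \<tau>)) t) =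
               (\<lambda>t. \<Sum>i\<le>q. shiftc a (-2) i (shiftc a (- (-2)) (q-i) (shiftc b 2 r1 \<tau>)) t)"
    proof
      fix t
      have "(\<Sum>j\<le>q. shiftc a (-2) (q-j) (shiftc a 2 j (shiftc b 2 r1 \<tau>)) t) =
            (\<Sum>j\<le>q. shiftc a (-2) (q-j) (shiftc a 2 (q-(q-j)) (shiftc b 2 r1 \<tau>)) t)"
        by (rule sum.cong) auto
      also have "\<dots> = (\<Sum>i\<le>q. shiftc a (-2) i (shiftc a 2 (q-i) (shiftc b 2 r1 \<tau>)) t)"
        by (rule sum_reflect[where f="\<lambda>i. shiftc a (-2) i (shiftc a 2 (q-i) (shiftc b 2 r1 \<tau>)) t"])
      finally show "(\<Sum>j\<le>q. shiftc a (-2) (q-j) (shiftc a 2 j (shiftc b 2 r1 \<tau>)) t) =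
            (\<Sum>i\<le>q. shiftc a (-2) i (shiftc a (- (-2)) (q-i) (shiftc b 2 r1 \<tau>)) t)" by simp
    qed
    also have "\<dots> = (if q = 0 then shiftc b 2 r1 \<tau> else (\<lambda>t. 0))"
      by (rule shiftc_inverse[OF TAU Tsh])
    finally show "(\<Sum>j\<le>q. G j (q-j)) = (if q = 0 then (pd a 0 ^^ e) (shiftc b 2 r1 \<tau>) t else 0)"
      by (simp add: pdpow_zero)
  qed
  have "(\<Sum>kk\<le>p. Zc \<tau> a b c e kk (p-kk) r1 t) = (\<Sum>kk\<le>p. \<Sum>i\<le>kk. A i * G (kk-i) (p-kk))"
    by (simp add: Zc_eq)
  also have "\<dots> = (\<Sum>i\<le>p. \<Sum>j\<le>p-i. A i * G j (p-i-j))"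
    by (rule tri_reindex2[where F="\<lambda>i j k. A i * G j k"])
  also have "\<dots> = (\<Sum>i\<le>p. A i * (if p - i = 0 then (pd a 0 ^^ e) (shiftc b 2 r1 \<tau>) t else 0))"
  proof (rule sum.cong[OF refl])
    fix i
    have "(\<Sum>j\<le>p-i. A i * G j (p-i-j)) = A i * (\<Sum>j\<le>p-i. G j ((p-i)-j))"
      by (simp add: sum_distrib_left)
    also have "\<dots> = A i * (if p - i = 0 then (pd a 0 ^^ e) (shiftc b 2 r1 \<tau>) t else 0)"
      by (simp only: inner)
    finally show "(\<Sum>j\<le>p-i. A i * G j (p-i-j)) = A i * (if p - i = 0 then (pd a 0 ^^ e) (shiftc b 2 r1 \<tau>) t else 0)" .
  qed
  also have "\<dots> = A p * (pd a 0 ^^ e) (shiftc b 2 r1 \<tau>) t"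
  proof -
    have "(\<Sum>i\<le>p. A i * (if p - i = 0 then (pd a 0 ^^ e) (shiftc b 2 r1 \<tau>) t else 0)) =
          (\<Sum>i\<le>p. if i = p then A p * (pd a 0 ^^ e) (shiftc b 2 r1 \<tau>) t else 0)"
      by (rule sum.cong) auto
    then show ?thesis by simp
  qed
  finally show ?thesis unfolding A_def .
qed

lemma neg_shift_tau: "(-1)^i * shiftc b (-2) i \<tau> t = shiftc b 2 i \<tau> t"
proof -
  have "shiftc b (-2) i \<tau> t = (-1)^i * shiftc b 2 i \<tau> t"
    using shiftc_neg[OF SMtau, of b 2 i] by simp
  then have "(-1)^i * shiftc b (-2) i \<tau> t = ((-1)^i * (-1)^i) * shiftc b 2 i \<tau> t" by simp
  also have "(-1::complex)^i * (-1)^i = 1" by (simp add: power_mult_distrib[symmetric])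
  finally show ?thesis by simp
qed

lemma Ev2: assumes bc: "samec b c"
  shows "(\<Sum>kk\<le>r. (-1)^kk * Zc \<tau> a b c e kk p1 (r-kk) t) = shiftc b 2 r \<tau> t * (pd a 0 ^^ e) (shiftc a (-2) p1 \<tau>) t"
proof -
  have sc: "shiftc c = shiftc b" using shiftc_samec[OF bc] by simp
  define A where "A = (\<lambda>i. shiftc b 2 i \<tau> t)"
  define G where "G = (\<lambda>j r1. (pd a 0 ^^ e) (shiftc a (-2) p1 (shiftc b 2 r1 (shiftc b (-2) j \<tau>))) t)"
  have sg: "\<And>j r1. (-1)^j * (pd a 0 ^^ e) (shiftc a (-2) p1 (shiftc b 2 r1 (shiftc b 2 j \<tau>))) t = G j r1"
  proof -
    fix j r1
    have "shiftc b (-2) j \<tau> = (\<lambda>t. (-1)^j * shiftc b 2 j \<tau> t)"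
      using shiftc_neg[OF SMtau, of b 2 j] by simp
    then have "G j r1 = (pd a 0 ^^ e) (\<lambda>t. (-1)^j * shiftc a (-2) p1 (shiftc b 2 r1 (shiftc b 2 j \<tau>)) t) t"
      unfolding G_def by (simp add: shiftc_cmult SMsh SMsh2)
    also have "\<dots> = (-1)^j * (pd a 0 ^^ e) (shiftc a (-2) p1 (shiftc b 2 r1 (shiftc b 2 j \<tau>))) t"
      by (simp add: pdpow_cmult SMsh3)
    finally show "(-1)^j * (pd a 0 ^^ e) (shiftc a (-2) p1 (shiftc b 2 r1 (shiftc b 2 j \<tau>))) t = G j r1" by simp
  qed
  have Zc_eq: "\<And>kk r1. (-1)^kk * Zc \<tau> a b c e kk p1 r1 t = (\<Sum>i\<le>kk. A i * G (kk-i) r1)"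
  proof -
    fix kk r1
    have "(-1)^kk * Zc \<tau> a b c e kk p1 r1 t = (\<Sum>i\<le>kk. ((-1)^i * shiftc b (-2) i \<tau> t) *
        ((-1)^(kk-i) * (pd a 0 ^^ e) (shiftc a (-2) p1 (shiftc b 2 r1 (shiftc b 2 (kk-i) \<tau>))) t))"
      unfolding Zc_def sc sum_distrib_left
    proof (rule sum.cong[OF refl])
      fix i assume "i \<in> {..kk}"
      then have "(-1::complex)^kk = (-1)^i * (-1)^(kk-i)" by (simp add: power_add[symmetric])
      then show "(-1)^kk * (shiftc b (-2) i \<tau> t * (pd a 0 ^^ e) (shiftc a (-2) p1 (shiftc b 2 r1 (shiftc b 2 (kk-i) \<tau>))) t) =
        ((-1)^i * shiftc b (-2) i \<tau> t) * ((-1)^(kk-i) * (pd a 0 ^^ e) (shiftc a (-2) p1 (shiftc b 2 r1 (shiftc b 2 (kk-i) \<tau>))) t)"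
        by (simp add: algebra_simps)
    qed
    also have "\<dots> = (\<Sum>i\<le>kk. A i * G (kk-i) r1)"
      unfolding A_def by (simp only: neg_shift_tau sg)
    finally show "(-1)^kk * Zc \<tau> a b c e kk p1 r1 t = (\<Sum>i\<le>kk. A i * G (kk-i) r1)" .
  qed
  have inner: "\<And>q. (\<Sum>j\<le>q. G j (q-j)) = (if q = 0 then (pd a 0 ^^ e) (shiftc a (-2) p1 \<tau>) t else 0)"
  proof -
    fix q
    have "(\<Sum>j\<le>q. G j (q-j)) = (pd a 0 ^^ e) (\<lambda>t. \<Sum>j\<le>q. shiftc a (-2) p1 (shiftc b 2 (q-j) (shiftc b (-2) j \<tau>)) t) t"
      unfolding G_def by (subst pdpow_sum) (auto intro: SMsh3)
    also have "(\<lambda>t. \<Sum>j\<le>q. shiftc a (-2) p1 (shiftc b 2 (q-j) (shiftc b (-2) j \<tau>)) t) =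
               shiftc a (-2) p1 (\<lambda>t. \<Sum>j\<le>q. shiftc b 2 (q-j) (shiftc b (-2) j \<tau>) t)"
      by (subst shiftc_sum) (auto intro: SMsh2)
    also have "(\<lambda>t. \<Sum>j\<le>q. shiftc b 2 (q-j) (shiftc b (-2) j \<tau>) t) =
               (\<lambda>t. \<Sum>i\<le>q. shiftc b 2 i (shiftc b (- 2) (q-i) \<tau>) t)"
    proof
      fix t
      have "(\<Sum>j\<le>q. shiftc b 2 (q-j) (shiftc b (-2) j \<tau>) t) =
            (\<Sum>j\<le>q. shiftc b 2 (q-j) (shiftc b (-2) (q-(q-j)) \<tau>) t)"
        by (rule sum.cong) auto
      also have "\<dots> = (\<Sum>i\<le>q. shiftc b 2 i (shiftc b (-2) (q-i) \<tau>) t)"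
        by (rule sum_reflect[where f="\<lambda>i. shiftc b 2 i (shiftc b (-2) (q-i) \<tau>) t"])
      finally show "(\<Sum>j\<le>q. shiftc b 2 (q-j) (shiftc b (-2) j \<tau>) t) =
            (\<Sum>i\<le>q. shiftc b 2 i (shiftc b (- 2) (q-i) \<tau>) t)" by simp
    qed
    also have "\<dots> = (if q = 0 then \<tau> else (\<lambda>t. 0))"
      by (rule shiftc_inverse[OF TAU Tsp_tau[OF TAU]])
    finally show "(\<Sum>j\<le>q. G j (q-j)) = (if q = 0 then (pd a 0 ^^ e) (shiftc a (-2) p1 \<tau>) t else 0)"
      by (simp add: pdpow_zero shiftc_const)
  qed
  have "(\<Sum>kk\<le>r. (-1)^kk * Zc \<tau> a b c e kk p1 (r-kk) t) = (\<Sum>kk\<le>r. \<Sum>i\<le>kk. A i * G (kk-i) (r-kk))"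
    by (simp add: Zc_eq)
  also have "\<dots> = (\<Sum>i\<le>r. \<Sum>j\<le>r-i. A i * G j (r-i-j))"
    by (rule tri_reindex2[where F="\<lambda>i j k. A i * G j k"])
  also have "\<dots> = (\<Sum>i\<le>r. A i * (if r - i = 0 then (pd a 0 ^^ e) (shiftc a (-2) p1 \<tau>) t else 0))"
  proof (rule sum.cong[OF refl])
    fix i
    have "(\<Sum>j\<le>r-i. A i * G j (r-i-j)) = A i * (\<Sum>j\<le>r-i. G j ((r-i)-j))"
      by (simp add: sum_distrib_left)
    also have "\<dots> = A i * (if r - i = 0 then (pd a 0 ^^ e) (shiftc a (-2) p1 \<tau>) t else 0)"
      by (simp only: inner)
    finally show "(\<Sum>j\<le>r-i. A i * G j (r-i-j)) = A i * (if r - i = 0 then (pd a 0 ^^ e) (shiftc a (-2) p1 \<tau>) t else 0)" .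
  qed
  also have "\<dots> = A r * (pd a 0 ^^ e) (shiftc a (-2) p1 \<tau>) t"
  proof -
    have "(\<Sum>i\<le>r. A i * (if r - i = 0 then (pd a 0 ^^ e) (shiftc a (-2) p1 \<tau>) t else 0)) =
          (\<Sum>i\<le>r. if i = r then A r * (pd a 0 ^^ e) (shiftc a (-2) p1 \<tau>) t else 0)"
      by (rule sum.cong) auto
    then show ?thesis by simp
  qed
  finally show ?thesis unfolding A_def .
qed

end


context fixes W :: "nat \<Rightarrow> nat \<Rightarrow> nat \<Rightarrow> complex" begin

definition "Qs p r = (\<Sum>p2\<le>p. \<Sum>r2\<le>r. (-1)^r2 * W (p2+r2) (p-p2) (r-r2))"
definition "Wu p r = (\<Sum>j\<le>p. W j (p-j) r)"
definition "Wv p r = (\<Sum>j\<le>r. (-1)^j * W j p (r-j))"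
definition "Bs p r = (\<Sum>p2\<le>p. \<Sum>r2\<le>r. cst (-2) p2 * cst 2 r2 * W (p2+r2) (p-p2) (r-r2))"

lemma QL: "Qs p (Suc r) + Qs (Suc p) r = Wu p (Suc r) + Wv (Suc p) r"
proof -
  have A: "Qs p (Suc r) = Wu p (Suc r) + (\<Sum>p2\<le>p. \<Sum>r2\<le>r. - ((-1)^r2 * W (Suc (p2+r2)) (p-p2) (r-r2)))"
    unfolding Qs_def Wu_def
    by (simp del: sum.atMost_Suc add: sum.atMost_Suc_shift sum.distrib)
  have B: "Qs (Suc p) r = Wv (Suc p) r + (\<Sum>p2\<le>p. \<Sum>r2\<le>r. (-1)^r2 * W (Suc (p2+r2)) (p-p2) (r-r2))"
    unfolding Qs_def Wv_def
    by (simp del: sum.atMost_Suc add: sum.atMost_Suc_shift)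
  show ?thesis unfolding A B by (simp add: sum_negf)
qed

lemma Q0r: "Qs p 0 = Wu p 0" unfolding Qs_def Wu_def by simp
lemma Qp0: "Qs 0 r = Wv 0 r" unfolding Qs_def Wv_def by simp

lemma B_decomp: "Bs p r = 4 * Qs p r - 2 * Wv p r - 2 * Wu p r + W 0 p r"
proof -
  have c: "\<And>p2 r2. cst (-2) p2 * cst 2 r2 = 4 * (-1)^r2 - 2 * (if r2 = 0 then 1 else 0) - 2 * (if p2 = 0 then (-1)^r2 else 0)
          + (if p2 = 0 \<and> r2 = 0 then 1 else 0)"
    by (auto simp: cst_m2 cst_2)
  define F1 where "F1 = (\<lambda>p2 r2. 4 * ((-1)^r2 * W (p2+r2) (p-p2) (r-r2)))"
  define F2 where "F2 = (\<lambda>p2 r2::nat. 2 * (if r2 = 0 then W p2 (p-p2) r else 0))"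
  define F3 where "F3 = (\<lambda>p2::nat. \<lambda>r2::nat. 2 * (if p2 = 0 then (-1)^r2 * W r2 p (r-r2) else 0))"
  define F4 where "F4 = (\<lambda>p2::nat. \<lambda>r2::nat. (if p2 = 0 \<and> r2 = 0 then W 0 p r else 0))"
  have "Bs p r = (\<Sum>p2\<le>p. \<Sum>r2\<le>r. F1 p2 r2 - F2 p2 r2 - F3 p2 r2 + F4 p2 r2)"
    unfolding Bs_def c F1_def F2_def F3_def F4_def by (intro sum.cong refl) (auto simp: algebra_simps)
  also have "\<dots> = (\<Sum>p2\<le>p. \<Sum>r2\<le>r. F1 p2 r2) - (\<Sum>p2\<le>p. \<Sum>r2\<le>r. F2 p2 r2)
        - (\<Sum>p2\<le>p. \<Sum>r2\<le>r. F3 p2 r2) + (\<Sum>p2\<le>p. \<Sum>r2\<le>r. F4 p2 r2)"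
    by (simp add: sum.distrib sum_subtractf)
  also have "(\<Sum>p2\<le>p. \<Sum>r2\<le>r. F1 p2 r2) = 4 * Qs p r"
    unfolding F1_def Qs_def by (simp add: sum_distrib_left)
  also have "(\<Sum>p2\<le>p. \<Sum>r2\<le>r. F2 p2 r2) = 2 * Wu p r"
  proof -
    have "\<And>p2. (\<Sum>r2\<le>r. F2 p2 r2) = 2 * W p2 (p-p2) r"
      unfolding F2_def by (simp add: sum_distrib_left[symmetric] sum.delta')
    then show ?thesis unfolding Wu_def by (simp add: sum_distrib_left)
  qed
  also have "(\<Sum>p2\<le>p. \<Sum>r2\<le>r. F3 p2 r2) = 2 * Wv p r"
  proof -
    have "\<And>p2. (\<Sum>r2\<le>r. F3 p2 r2) = (if p2 = 0 then 2 * Wv p r else 0)"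
      unfolding F3_def Wv_def by (simp add: sum_distrib_left)
    then show ?thesis by (simp add: sum.delta')
  qed
  also have "(\<Sum>p2\<le>p. \<Sum>r2\<le>r. F4 p2 r2) = W 0 p r"
  proof -
    have "\<And>p2. (\<Sum>r2\<le>r. F4 p2 r2) = (if p2 = 0 then W 0 p r else 0)"
      unfolding F4_def by (simp add: sum.delta')
    then show ?thesis by (simp add: sum.delta')
  qed
  finally show ?thesis by simp
qed

lemma twoP_a: "Bs p (Suc r) + Bs (Suc p) r =
   (2 * Wu p (Suc r) - 2 * Wv p (Suc r) + W 0 p (Suc r)) + (2 * Wv (Suc p) r - 2 * Wu (Suc p) r + W 0 (Suc p) r)"
proof -
  have e: "Qs p (Suc r) = Wu p (Suc r) + Wv (Suc p) r - Qs (Suc p) r" using QL[of p r] by (simp add: eq_diff_eq)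
  show ?thesis unfolding B_decomp e by (simp add: algebra_simps)
qed

lemma twoP_b: "Bs p 0 = 2 * Wu p 0 - 2 * Wv p 0 + W 0 p 0"
  unfolding B_decomp Q0r by (simp add: Wv_def)

lemma twoP_c: "Bs 0 r = 2 * Wv 0 r - 2 * Wu 0 r + W 0 0 r"
  unfolding B_decomp Qp0 by (simp add: Wu_def)

end


lemma sum_last_only: "(\<Sum>r1\<le>(r::nat). if r - r1 = 0 then f r1 else 0) = (f r :: complex)"
proof -
  have "(\<Sum>r1\<le>r. if r - r1 = 0 then f r1 else 0) = (\<Sum>r1\<le>r. if r1 = r then f r1 else 0)"
    by (rule sum.cong) auto
  then show ?thesis by simp
qed

lemma sum_reflect': "(\<Sum>i\<le>n. f (n - i) i) = (\<Sum>i\<le>(n::nat). f i (n - i))"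
proof -
  have "(\<Sum>i\<le>n. f (n - i) i) = (\<Sum>i\<le>n. f (n - i) (n - (n - i)))" by (rule sum.cong) auto
  also have "\<dots> = (\<Sum>i\<le>n. f i (n - i))" by (rule sum_reflect[where f="\<lambda>i. f i (n - i)"])
  finally show ?thesis .
qed

context fixes \<tau> assumes TAU: "TAU \<tau>" begin

lemma Zc_e0: "Zc \<tau> a b c e 0 p r t = \<tau> t * (pd a 0 ^^ e) (shiftc a (-2) p (shiftc b 2 r \<tau>)) t"
  by (simp add: Zc_def)

lemma Zc_01: assumes ac: "samec a c"
  shows "Zc \<tau> a b c 0 1 p r t = 2 * \<tau> t * pd a 0 (shiftc a (-2) p (shiftc b 2 r \<tau>)) t
          - 2 * pd a 0 \<tau> t * shiftc a (-2) p (shiftc b 2 r \<tau>) t"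
proof -
  have sc: "shiftc c = shiftc a" using shiftc_samec[OF ac] by simp
  have pdc: "pd c = pd a" using pd_samec[OF ac] by simp
  have T\<tau>: "\<tau> \<in> Tsp \<tau>" by (rule Tsp_tau[OF TAU])
  have e1: "shiftc a 2 (Suc 0) \<tau> = (\<lambda>t. 2 * pd a 0 \<tau> t)" using shiftc_1[of a 2 \<tau>] by simp
  have e2: "shiftc a (-2) (Suc 0) \<tau> t = - 2 * pd a 0 \<tau> t" using shiftc_1[of a "-2" \<tau>] by simp
  have "shiftc a (-2) p (shiftc b 2 r (\<lambda>t. 2 * pd a 0 \<tau> t)) = (\<lambda>t. 2 * shiftc a (-2) p (shiftc b 2 r (pd a 0 \<tau>)) t)"
    using SMtau[OF TAU] by (simp add: shiftc_cmult SM_pd SM_shiftc)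
  also have "shiftc a (-2) p (shiftc b 2 r (pd a 0 \<tau>)) = pd a 0 (shiftc a (-2) p (shiftc b 2 r \<tau>))"
    by (simp add: pd_shiftc_comm[OF TAU] Tsp_shiftc[OF TAU] T\<tau>)
  finally have e3: "shiftc a (-2) p (shiftc b 2 r (\<lambda>t. 2 * pd a 0 \<tau> t)) = (\<lambda>t. 2 * pd a 0 (shiftc a (-2) p (shiftc b 2 r \<tau>)) t)" .
  show ?thesis unfolding Zc_def sc by (simp add: e1 e2 e3 algebra_simps)
qed

lemma Bil_neq_a: assumes nab: "\<not> samec b a"
  shows "Op1 a b p r (hir \<tau> a (1 + r + p) t) t =
    2 * shiftc a (-2) p \<tau> t * pd a 0 (shiftc b 2 r \<tau>) t - 2 * (shiftc a (-2) (p+1) \<tau> t * shiftc b 2 r \<tau> t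
       - \<tau> t * shiftc a (-2) (p+1) (shiftc b 2 r \<tau>) t)
    - (\<tau> t * pd a 0 (shiftc a (-2) p (shiftc b 2 r \<tau>)) t - (2 * \<tau> t * pd a 0 (shiftc a (-2) p (shiftc b 2 r \<tau>)) t
          - 2 * pd a 0 \<tau> t * shiftc a (-2) p (shiftc b 2 r \<tau>) t))"
proof -
  define Z1 where "Z1 = (\<lambda>kk p1. Zc \<tau> a b a 1 kk p1 r t)"
  define Z0 where "Z0 = (\<lambda>kk p1. Zc \<tau> a b a 0 kk p1 r t)"
  have k: "\<And>p2 r2. kap0 a b a p2 r2 = (if r2 = 0 then cst (-2) p2 else 0)"
    using nab by (simp add: kap0_def samec_refl)
  have "Op1 a b p r (hir \<tau> a (1 + r + p) t) t = (\<Sum>p1\<le>p. cst (-2) (p-p1) * (Z1 (p-p1) p1 - Z0 (p-p1+1) p1))"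
  proof -
    have "Op1 a b p r (hir \<tau> a (1 + r + p) t) t = (\<Sum>r1\<le>r. \<Sum>p1\<le>p. if r1 = r then cst (-2) (p-p1) * (Z1 (p-p1) p1 - Z0 (p-p1+1) p1) else 0)"
      unfolding BilB[OF SMtau[OF TAU]] k Z1_def Z0_def
      by (intro sum.cong refl) (auto simp: samec_refl)
    also have "\<dots> = (\<Sum>r1\<le>r. if r1 = r then (\<Sum>p1\<le>p. cst (-2) (p-p1) * (Z1 (p-p1) p1 - Z0 (p-p1+1) p1)) else 0)"
      by (rule sum.cong) auto
    also have "\<dots> = (\<Sum>p1\<le>p. cst (-2) (p-p1) * (Z1 (p-p1) p1 - Z0 (p-p1+1) p1))"
      by simp
    finally show ?thesis .
  qed
  also have "\<dots> = (\<Sum>kk\<le>p. cst (-2) kk * (Z1 kk (p-kk) - Z0 (kk+1) (p-kk)))"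
    by (rule sum_reflect'[where f="\<lambda>x y. cst (-2) x * (Z1 x y - Z0 (x+1) y)"])
  also have "\<dots> = (\<Sum>kk\<le>p. 2 * (Z1 kk (p-kk) - Z0 (kk+1) (p-kk)) - (if kk = 0 then Z1 kk (p-kk) - Z0 (kk+1) (p-kk) else 0))"
    by (rule sum.cong) (auto simp: cst_m2)
  also have "\<dots> = 2 * (\<Sum>kk\<le>p. Z1 kk (p-kk)) - 2 * (\<Sum>kk\<le>p. Z0 (kk+1) (p-kk)) - (Z1 0 p - Z0 1 p)"
  proof -
    have d: "(\<Sum>kk\<le>p. (if kk = 0 then Z1 kk (p-kk) - Z0 (kk+1) (p-kk) else 0)) = Z1 0 p - Z0 1 p"
      by (simp add: sum.delta')
    have d2: "(\<Sum>kk\<le>p. 2 * (Z1 kk (p-kk) - Z0 (kk+1) (p-kk))) = 2 * (\<Sum>kk\<le>p. Z1 kk (p-kk)) - 2 * (\<Sum>kk\<le>p. Z0 (kk+1) (p-kk))"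
      by (simp add: sum_subtractf sum_distrib_left right_diff_distrib)
    show ?thesis unfolding sum_subtractf d d2 by simp
  qed
  also have "(\<Sum>kk\<le>p. Z1 kk (p-kk)) = shiftc a (-2) p \<tau> t * pd a 0 (shiftc b 2 r \<tau>) t"
  proof -
    have "(\<Sum>kk\<le>p. Zc \<tau> a b a 1 kk (p-kk) r t) = shiftc a (-2) p \<tau> t * (pd a 0 ^^ 1) (shiftc b 2 r \<tau>) t"
      by (rule Ev1[OF TAU samec_refl])
    then show ?thesis unfolding Z1_def by simp
  qed
  also have "(\<Sum>kk\<le>p. Z0 (kk+1) (p-kk)) = shiftc a (-2) (p+1) \<tau> t * shiftc b 2 r \<tau> t - \<tau> t * shiftc a (-2) (p+1) (shiftc b 2 r \<tau>) t"
  proof -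
    have "(\<Sum>kk\<le>Suc p. Z0 kk (Suc p - kk)) = shiftc a (-2) (p+1) \<tau> t * shiftc b 2 r \<tau> t"
    proof -
      have "(\<Sum>kk\<le>Suc p. Zc \<tau> a b a 0 kk (Suc p-kk) r t) = shiftc a (-2) (Suc p) \<tau> t * (pd a 0 ^^ 0) (shiftc b 2 r \<tau>) t"
        by (rule Ev1[OF TAU samec_refl])
      then show ?thesis unfolding Z0_def by simp
    qed
    moreover have "(\<Sum>kk\<le>Suc p. Z0 kk (Suc p - kk)) = Z0 0 (Suc p) + (\<Sum>kk\<le>p. Z0 (kk+1) (p-kk))"
      by (simp del: sum.atMost_Suc add: sum.atMost_Suc_shift)
    moreover have "Z0 0 (Suc p) = \<tau> t * shiftc a (-2) (p+1) (shiftc b 2 r \<tau>) t"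
      unfolding Z0_def Zc_e0 by simp
    ultimately show ?thesis by (simp add: algebra_simps)
  qed
  also have "Z1 0 p = \<tau> t * pd a 0 (shiftc a (-2) p (shiftc b 2 r \<tau>)) t"
    unfolding Z1_def Zc_e0 by simp
  also have "Z0 1 p = 2 * \<tau> t * pd a 0 (shiftc a (-2) p (shiftc b 2 r \<tau>)) t - 2 * pd a 0 \<tau> t * shiftc a (-2) p (shiftc b 2 r \<tau>) t"
    unfolding Z0_def by (rule Zc_01[OF samec_refl])
  finally show ?thesis by (simp only: mult.assoc)
qed

lemma Bil_neq_b: assumes nab: "\<not> samec a b"
  shows "Op1 a b p r (hir \<tau> b (1 + r + p) t) t =
    2 * shiftc b 2 r \<tau> t * pd a 0 (shiftc a (-2) p \<tau>) t - \<tau> t * pd a 0 (shiftc a (-2) p (shiftc b 2 r \<tau>)) t"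
proof -
  define Z1 where "Z1 = (\<lambda>kk r1. Zc \<tau> a b b 1 kk p r1 t)"
  have k: "\<And>p2 r2. kap0 a b b p2 r2 = (if p2 = 0 then cst 2 r2 else 0)"
    using nab by (simp add: kap0_def samec_refl)
  have "Op1 a b p r (hir \<tau> b (1 + r + p) t) t = (\<Sum>r1\<le>r. cst 2 (r-r1) * Z1 (r-r1) r1)"
  proof -
    have "Op1 a b p r (hir \<tau> b (1 + r + p) t) t = (\<Sum>r1\<le>r. \<Sum>p1\<le>p. if p1 = p then cst 2 (r-r1) * Z1 (r-r1) r1 else 0)"
      unfolding BilB[OF SMtau[OF TAU]] k Z1_def using nab
      by (intro sum.cong refl) auto
    also have "\<dots> = (\<Sum>r1\<le>r. cst 2 (r-r1) * Z1 (r-r1) r1)"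
      by simp
    finally show ?thesis .
  qed
  also have "\<dots> = (\<Sum>kk\<le>r. cst 2 kk * Z1 kk (r-kk))"
    by (rule sum_reflect'[where f="\<lambda>x y. cst 2 x * Z1 x y"])
  also have "\<dots> = (\<Sum>kk\<le>r. 2 * ((-1)^kk * Z1 kk (r-kk)) - (if kk = 0 then Z1 kk (r-kk) else 0))"
    by (rule sum.cong) (auto simp: cst_2)
  also have "\<dots> = 2 * (\<Sum>kk\<le>r. (-1)^kk * Z1 kk (r-kk)) - Z1 0 r"
  proof -
    have d: "(\<Sum>kk\<le>r. (if kk = 0 then Z1 kk (r-kk) else 0)) = Z1 0 r"
      by (simp add: sum.delta')
    show ?thesis unfolding sum_subtractf d by (simp add: sum_distrib_left[symmetric])
  qed
  also have "(\<Sum>kk\<le>r. (-1)^kk * Z1 kk (r-kk)) = shiftc b 2 r \<tau> t * pd a 0 (shiftc a (-2) p \<tau>) t"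
  proof -
    have "(\<Sum>kk\<le>r. (-1)^kk * Zc \<tau> a b b 1 kk p (r-kk) t) = shiftc b 2 r \<tau> t * (pd a 0 ^^ 1) (shiftc a (-2) p \<tau>) t"
      by (rule Ev2[OF TAU samec_refl])
    then show ?thesis unfolding Z1_def by simp
  qed
  also have "Z1 0 r = \<tau> t * pd a 0 (shiftc a (-2) p (shiftc b 2 r \<tau>)) t"
    unfolding Z1_def Zc_e0 by simp
  finally show ?thesis by (simp add: mult.assoc)
qed

end


lemma bkp_TAU: "bkp2_tau \<tau> \<Longrightarrow> TAU \<tau>"
  unfolding bkp2_tau_def using smooth_TAU by blast

lemma Bil_eq_12: assumes "bkp2_tau \<tau>" "a \<in> {1,2}" "c \<in> {1,2}"
  shows "Op1 a b p r (hir \<tau> a (1 + r + p) t) t = Op1 a b p r (hir \<tau> c (1 + r + p) t) t"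
  using bkp_Op1[OF assms(1), of a b p r t] assms(2,3) by auto

lemma star_neq: assumes bkp: "bkp2_tau \<tau>" and ab: "a \<in> {1,2}" "b \<in> {1,2}" "a \<noteq> b"
  shows "\<tau> t * shiftc a (-2) (p+1) (shiftc b 2 r \<tau>) t + \<tau> t * pd a 0 (shiftc a (-2) p (shiftc b 2 r \<tau>)) t
     - pd a 0 \<tau> t * shiftc a (-2) p (shiftc b 2 r \<tau>) t =
     shiftc b 2 r \<tau> t * pd a 0 (shiftc a (-2) p \<tau>) t - shiftc a (-2) p \<tau> t * pd a 0 (shiftc b 2 r \<tau>) t
     + shiftc a (-2) (p+1) \<tau> t * shiftc b 2 r \<tau> t"
proof -
  have TAU: "TAU \<tau>" by (rule bkp_TAU[OF bkp])
  have n1: "\<not> samec b a" and n2: "\<not> samec a b" using ab by (auto simp: samec_def)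
  have "Op1 a b p r (hir \<tau> a (1 + r + p) t) t = Op1 a b p r (hir \<tau> b (1 + r + p) t) t"
    using Bil_eq_12[OF bkp ab(1) ab(2)] .
  then have H: "2 * shiftc a (-2) p \<tau> t * pd a 0 (shiftc b 2 r \<tau>) t - 2 * (shiftc a (-2) (p+1) \<tau> t * shiftc b 2 r \<tau> t
       - \<tau> t * shiftc a (-2) (p+1) (shiftc b 2 r \<tau>) t)
    - (\<tau> t * pd a 0 (shiftc a (-2) p (shiftc b 2 r \<tau>)) t - (2 * \<tau> t * pd a 0 (shiftc a (-2) p (shiftc b 2 r \<tau>)) t
          - 2 * pd a 0 \<tau> t * shiftc a (-2) p (shiftc b 2 r \<tau>) t)) =
    2 * shiftc b 2 r \<tau> t * pd a 0 (shiftc a (-2) p \<tau>) t - \<tau> t * pd a 0 (shiftc a (-2) p (shiftc b 2 r \<tau>)) t"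
    unfolding Bil_neq_a[OF TAU n1] Bil_neq_b[OF TAU n2] .
  show ?thesis using H by algebra
qed


context fixes \<tau> and a :: nat and t :: tm assumes TAU: "TAU \<tau>" begin

definition "Wf j p1 r1 = Zc \<tau> a a a 1 j p1 r1 t - Zc \<tau> a a a 0 (j+1) p1 r1 t"
definition "Nt p r = shiftc a (-2) p (shiftc a 2 r \<tau>) t"
definition "dN p r = pd a 0 (shiftc a (-2) p (shiftc a 2 r \<tau>)) t"
definition "Sv p = shiftc a (-2) p \<tau> t"
definition "dS p = pd a 0 (shiftc a (-2) p \<tau>) t"
definition "Tv r = shiftc a 2 r \<tau> t"
definition "dT r = pd a 0 (shiftc a 2 r \<tau>) t"

lemma Bil_a_eq: "Op1 a a p r (hir \<tau> a (1 + r + p) t) t = Bs Wf p r"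
proof -
  have k: "\<And>p2 r2. kap0 a a a p2 r2 = cst (-2) p2 * cst 2 r2"
    by (simp add: kap0_def samec_refl)
  have "Op1 a a p r (hir \<tau> a (1 + r + p) t) t = (\<Sum>r1\<le>r. \<Sum>p1\<le>p. cst (-2) (p-p1) * cst 2 (r-r1) * Wf (p-p1+(r-r1)) p1 r1)"
    unfolding BilB[OF SMtau[OF TAU]] k Wf_def by (simp add: samec_refl)
  also have "\<dots> = (\<Sum>p1\<le>p. \<Sum>r1\<le>r. cst (-2) (p-p1) * cst 2 (r-r1) * Wf (p-p1+(r-r1)) p1 r1)"
    by (rule sum.swap)
  also have "\<dots> = (\<Sum>p2\<le>p. \<Sum>r1\<le>r. cst (-2) p2 * cst 2 (r-r1) * Wf (p2+(r-r1)) (p-p2) r1)"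
    by (rule sum_reflect'[where f="\<lambda>x y. \<Sum>r1\<le>r. cst (-2) x * cst 2 (r-r1) * Wf (x+(r-r1)) y r1"])
  also have "\<dots> = (\<Sum>p2\<le>p. \<Sum>r2\<le>r. cst (-2) p2 * cst 2 r2 * Wf (p2+r2) (p-p2) (r-r2))"
  proof (rule sum.cong[OF refl])
    fix p2
    show "(\<Sum>r1\<le>r. cst (-2) p2 * cst 2 (r-r1) * Wf (p2+(r-r1)) (p-p2) r1) = (\<Sum>r2\<le>r. cst (-2) p2 * cst 2 r2 * Wf (p2+r2) (p-p2) (r-r2))"
      by (rule sum_reflect'[where f="\<lambda>x y. cst (-2) p2 * cst 2 x * Wf (p2+x) (p-p2) y"])
  qed
  finally show ?thesis unfolding Bs_def .
qed

lemma Bil_other_eq: assumes "\<not> samec a c"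
  shows "Op1 a a p r (hir \<tau> c (1 + r + p) t) t = \<tau> t * dN p r"
proof -
  have k: "\<And>p2 r2. kap0 a a c p2 r2 = (if p2 = 0 \<and> r2 = 0 then 1 else 0)"
    using assms by (auto simp: kap0_def)
  have "Op1 a a p r (hir \<tau> c (1 + r + p) t) t = (\<Sum>r1\<le>r. \<Sum>p1\<le>p. if p1 = p \<and> r1 = r then Zc \<tau> a a c 1 0 p r t else 0)"
    unfolding BilB[OF SMtau[OF TAU]] k using assms by (intro sum.cong refl) auto
  also have "\<dots> = Zc \<tau> a a c 1 0 p r t"
  proof -
    have "\<And>r1. (\<Sum>p1\<le>p. if p1 = p \<and> r1 = r then Zc \<tau> a a c 1 0 p r t else 0) = (if r1 = r then Zc \<tau> a a c 1 0 p r t else 0)"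
      by (auto simp: sum.delta')
    then show ?thesis by simp
  qed
  finally show ?thesis by (simp add: Zc_e0[OF TAU] dN_def)
qed

lemma W0_val: "Wf 0 p r = \<tau> t * dN p r - (2 * \<tau> t * dN p r - 2 * pd a 0 \<tau> t * Nt p r)"
proof -
  have "Wf 0 p r = Zc \<tau> a a a 1 0 p r t - Zc \<tau> a a a 0 1 p r t" by (simp add: Wf_def)
  then show ?thesis unfolding Zc_e0[OF TAU] Zc_01[OF TAU samec_refl] dN_def Nt_def by simp
qed

lemma Wu_val: "Wu Wf p r = Sv p * dT r - (Sv (p+1) * Tv r - \<tau> t * Nt (p+1) r)"
proof -
  have e1: "(\<Sum>j\<le>p. Zc \<tau> a a a 1 j (p-j) r t) = Sv p * dT r"
  proof -
    have "(\<Sum>j\<le>p. Zc \<tau> a a a 1 j (p-j) r t) = shiftc a (-2) p \<tau> t * (pd a 0 ^^ 1) (shiftc a 2 r \<tau>) t"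
      by (rule Ev1[OF TAU samec_refl])
    then show ?thesis by (simp add: Sv_def dT_def)
  qed
  have e0: "(\<Sum>j\<le>Suc p. Zc \<tau> a a a 0 j (Suc p-j) r t) = Sv (p+1) * Tv r"
  proof -
    have "(\<Sum>j\<le>Suc p. Zc \<tau> a a a 0 j (Suc p-j) r t) = shiftc a (-2) (Suc p) \<tau> t * (pd a 0 ^^ 0) (shiftc a 2 r \<tau>) t"
      by (rule Ev1[OF TAU samec_refl])
    then show ?thesis by (simp add: Sv_def Tv_def)
  qed
  have split: "(\<Sum>j\<le>Suc p. Zc \<tau> a a a 0 j (Suc p-j) r t) = Zc \<tau> a a a 0 0 (Suc p) r t + (\<Sum>j\<le>p. Zc \<tau> a a a 0 (j+1) (p-j) r t)"
    by (simp del: sum.atMost_Suc add: sum.atMost_Suc_shift)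
  have z: "Zc \<tau> a a a 0 0 (Suc p) r t = \<tau> t * Nt (p+1) r" by (simp add: Zc_e0[OF TAU] Nt_def)
  show ?thesis unfolding Wu_def Wf_def sum_subtractf e1
    using e0 split z by (simp add: algebra_simps)
qed

lemma Wv_val: "Wv Wf p r = Tv r * dS p + (Tv (r+1) * Sv p - \<tau> t * Nt p (r+1))"
proof -
  have e1: "(\<Sum>j\<le>r. (-1)^j * Zc \<tau> a a a 1 j p (r-j) t) = Tv r * dS p"
  proof -
    have "(\<Sum>j\<le>r. (-1)^j * Zc \<tau> a a a 1 j p (r-j) t) = shiftc a 2 r \<tau> t * (pd a 0 ^^ 1) (shiftc a (-2) p \<tau>) t"
      by (rule Ev2[OF TAU samec_refl])
    then show ?thesis by (simp add: Tv_def dS_def)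
  qed
  have e0: "(\<Sum>j\<le>Suc r. (-1)^j * Zc \<tau> a a a 0 j p (Suc r-j) t) = Tv (r+1) * Sv p"
  proof -
    have "(\<Sum>j\<le>Suc r. (-1)^j * Zc \<tau> a a a 0 j p (Suc r-j) t) = shiftc a 2 (Suc r) \<tau> t * (pd a 0 ^^ 0) (shiftc a (-2) p \<tau>) t"
      by (rule Ev2[OF TAU samec_refl])
    then show ?thesis by (simp add: Sv_def Tv_def)
  qed
  have split: "(\<Sum>j\<le>Suc r. (-1)^j * Zc \<tau> a a a 0 j p (Suc r-j) t) = Zc \<tau> a a a 0 0 p (Suc r) t - (\<Sum>j\<le>r. (-1)^j * Zc \<tau> a a a 0 (j+1) p (r-j) t)"
    by (subst sum.atMost_Suc_shift) (simp add: sum_negf)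
  have z: "Zc \<tau> a a a 0 0 p (Suc r) t = \<tau> t * Nt p (r+1)" by (simp add: Zc_e0[OF TAU] Nt_def)
  have "Wv Wf p r = (\<Sum>j\<le>r. (-1)^j * Zc \<tau> a a a 1 j p (r-j) t) - (\<Sum>j\<le>r. (-1)^j * Zc \<tau> a a a 0 (j+1) p (r-j) t)"
    unfolding Wv_def Wf_def by (simp add: sum_subtractf right_diff_distrib)
  then show ?thesis unfolding e1 using e0 split z by (simp del: sum.atMost_Suc add: algebra_simps)
qed

end


context fixes \<tau> and a :: nat and t :: tm assumes bkp: "bkp2_tau \<tau>" and a12: "a \<in> {1,2}" begin

lemma TAUb: "TAU \<tau>" by (rule bkp_TAU[OF bkp])

abbreviation "NT \<equiv> Nt \<tau> a t"
abbreviation "DN \<equiv> dN \<tau> a t"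
abbreviation "SV \<equiv> Sv \<tau> a t"
abbreviation "DS \<equiv> dS \<tau> a t"
abbreviation "TV \<equiv> Tv \<tau> a t"
abbreviation "DT \<equiv> dT \<tau> a t"
abbreviation "WF \<equiv> Wf \<tau> a t"

lemma Bs_eq: "Bs WF p r = \<tau> t * DN p r"
proof -
  define c where "c = (if a = 1 then 2 else (1::nat))"
  have c12: "c \<in> {1,2}" and nac: "\<not> samec a c" using a12 by (auto simp: c_def samec_def)
  have "Op1 a a p r (hir \<tau> a (1 + r + p) t) t = Op1 a a p r (hir \<tau> c (1 + r + p) t) t"
    by (rule Bil_eq_12[OF bkp a12 c12])
  then show ?thesis unfolding Bil_a_eq[OF TAUb] Bil_other_eq[OF TAUb nac] .
qed

lemma basic1: "NT p 0 = SV p" by (simp add: Nt_def[OF TAUb] Sv_def[OF TAUb])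
lemma basic2: "NT 0 r = TV r" by (simp add: Nt_def[OF TAUb] Tv_def[OF TAUb])
lemma basic3: "SV 0 = \<tau> t" by (simp add: Sv_def[OF TAUb])
lemma basic4: "TV 0 = \<tau> t" by (simp add: Tv_def[OF TAUb])
lemma basic5: "DN p 0 = DS p" by (simp add: dN_def[OF TAUb] dS_def[OF TAUb])
lemma basic6: "DN 0 r = DT r" by (simp add: dN_def[OF TAUb] dT_def[OF TAUb])
lemma basic7: "DS 0 = pd a 0 \<tau> t" by (simp add: dS_def[OF TAUb])
lemma basic8: "DT 0 = pd a 0 \<tau> t" by (simp add: dT_def[OF TAUb])
lemmas basics = basic1 basic2 basic3 basic4 basic5 basic6 basic7 basic8

lemma I_a: "(pd a 0 \<tau> t * NT p (r+1) - \<tau> t * DN p (r+1)) + (pd a 0 \<tau> t * NT (p+1) r - \<tau> t * DN (p+1) r)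
   - (TV (r+1) * DS p - SV p * DT (r+1)) + (TV r * DS (p+1) - SV (p+1) * DT r)
   - (SV p * TV (r+2) - \<tau> t * NT p (r+2)) + (SV (p+2) * TV r - \<tau> t * NT (p+2) r) = 0"
proof -
  have H: "Bs WF p (Suc r) + Bs WF (Suc p) r =
   (2 * Wu WF p (Suc r) - 2 * Wv WF p (Suc r) + WF 0 p (Suc r)) + (2 * Wv WF (Suc p) r - 2 * Wu WF (Suc p) r + WF 0 (Suc p) r)"
    by (rule twoP_a)
  have H2: "\<tau> t * DN p (Suc r) + \<tau> t * DN (Suc p) r =
    (2 * (SV p * DT (Suc r) - (SV (p+1) * TV (Suc r) - \<tau> t * NT (p+1) (Suc r)))
     - 2 * (TV (Suc r) * DS p + (TV (Suc r+1) * SV p - \<tau> t * NT p (Suc r+1)))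
     + (\<tau> t * DN p (Suc r) - (2 * \<tau> t * DN p (Suc r) - 2 * pd a 0 \<tau> t * NT p (Suc r))))
   + (2 * (TV r * DS (Suc p) + (TV (r+1) * SV (Suc p) - \<tau> t * NT (Suc p) (r+1)))
     - 2 * (SV (Suc p) * DT r - (SV (Suc p+1) * TV r - \<tau> t * NT (Suc p+1) r))
     + (\<tau> t * DN (Suc p) r - (2 * \<tau> t * DN (Suc p) r - 2 * pd a 0 \<tau> t * NT (Suc p) r)))"
    using H unfolding Bs_eq Wu_val[OF TAUb] Wv_val[OF TAUb] W0_val[OF TAUb] .
  show ?thesis using H2 by (simp add: numeral_2_eq_2) algebra
qed

lemma I_b: "(pd a 0 \<tau> t * NT p 0 - \<tau> t * DN p 0) - (TV 0 * DS p - SV p * DT 0)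
   - (SV p * TV 1 - \<tau> t * NT p 1) - (SV (p+1) * TV 0 - \<tau> t * NT (p+1) 0) = 0"
proof -
  have H: "Bs WF p 0 = 2 * Wu WF p 0 - 2 * Wv WF p 0 + WF 0 p 0" by (rule twoP_b)
  have H2: "\<tau> t * DN p 0 = 2 * (SV p * DT 0 - (SV (p+1) * TV 0 - \<tau> t * NT (p+1) 0))
     - 2 * (TV 0 * DS p + (TV (0+1) * SV p - \<tau> t * NT p (0+1)))
     + (\<tau> t * DN p 0 - (2 * \<tau> t * DN p 0 - 2 * pd a 0 \<tau> t * NT p 0))"
    using H unfolding Bs_eq Wu_val[OF TAUb] Wv_val[OF TAUb] W0_val[OF TAUb] .
  show ?thesis using H2 by simp algebra
qed

lemma I_c: "(pd a 0 \<tau> t * NT 0 r - \<tau> t * DN 0 r) + (TV r * DS 0 - SV 0 * DT r)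
   + (SV 0 * TV (r+1) - \<tau> t * NT 0 (r+1)) + (SV 1 * TV r - \<tau> t * NT 1 r) = 0"
proof -
  have H: "Bs WF 0 r = 2 * Wv WF 0 r - 2 * Wu WF 0 r + WF 0 0 r" by (rule twoP_c)
  have H2: "\<tau> t * DN 0 r = 2 * (TV r * DS 0 + (TV (r+1) * SV 0 - \<tau> t * NT 0 (r+1)))
     - 2 * (SV 0 * DT r - (SV (0+1) * TV r - \<tau> t * NT (0+1) r))
     + (\<tau> t * DN 0 r - (2 * \<tau> t * DN 0 r - 2 * pd a 0 \<tau> t * NT 0 r))"
    using H unfolding Bs_eq Wu_val[OF TAUb] Wv_val[OF TAUb] W0_val[OF TAUb] .
  show ?thesis using H2 by simp algebra
qed

end


definition epsA :: "nat \<Rightarrow> complex" where "epsA k = (if k = 0 then 1 else 2)"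

definition NS :: "(nat \<Rightarrow> nat \<Rightarrow> complex) \<Rightarrow> nat \<Rightarrow> int \<Rightarrow> complex" where
  "NS G n m = (\<Sum>k\<le>n. if int k \<ge> m then epsA k * G (n-k) (nat (int k - m)) else 0)"

definition TL :: "(nat \<Rightarrow> nat \<Rightarrow> complex) \<Rightarrow> nat \<Rightarrow> int \<Rightarrow> complex" where
  "TL G n m = (if m \<le> 0 then G (Suc n) (nat (- m)) else 0) + (if m \<le> 1 then G n (nat (1 - m)) else 0)"

lemma NS_0: "NS G 0 m = (if m \<le> 0 then G 0 (nat (- m)) else 0)"
  by (simp add: NS_def epsA_def)

lemma NS_tel: "NS G (Suc n) m - NS G n (m-1) = TL G n m"
proof -
  have A: "NS G (Suc n) m = (if 0 \<ge> m then G (Suc n) (nat (- m)) else 0) +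
      (\<Sum>k\<le>n. if int k \<ge> m - 1 then epsA (Suc k) * G (n-k) (nat (int k - (m - 1))) else 0)"
    unfolding NS_def
    by (subst sum.atMost_Suc_shift) (auto simp: epsA_def algebra_simps intro!: sum.cong)
  have B: "(\<Sum>k\<le>n. if int k \<ge> m - 1 then epsA (Suc k) * G (n-k) (nat (int k - (m - 1))) else 0) - NS G n (m-1)
      = (\<Sum>k\<le>n. if k = 0 then (if 0 \<ge> m - 1 then G n (nat (1 - m)) else 0) else 0)"
    unfolding NS_def sum_subtractf[symmetric]
    by (rule sum.cong) (auto simp: epsA_def)
  have C: "(\<Sum>k\<le>n. if k = 0 then (if 0 \<ge> m - 1 then G n (nat (1 - m)) else 0) else 0) =
      (if m \<le> 1 then G n (nat (1 - m)) else 0)"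
    by (simp add: sum.delta)
  show ?thesis unfolding TL_def using A B C by (simp add: algebra_simps)
qed

context fixes \<tau> and a :: nat and t :: tm assumes bkp: "bkp2_tau \<tau>" and a12: "a \<in> {1,2}" begin

abbreviation "NT' \<equiv> Nt \<tau> a t"
abbreviation "DN' \<equiv> dN \<tau> a t"
abbreviation "SV' \<equiv> Sv \<tau> a t"
abbreviation "DS' \<equiv> dS \<tau> a t"
abbreviation "TV' \<equiv> Tv \<tau> a t"
abbreviation "DT' \<equiv> dT \<tau> a t"

definition "VV m = (if m \<le> 0 then TV' (nat (- m)) else 0)"
definition "dVV m = (if m \<le> 0 then DT' (nat (- m)) else 0)"
definition "RHSv n m = VV m * SV' (Suc n) + VV m * DS' n - SV' n * dVV m + VV (m-1) * SV' n"
definition "Ev n m = \<tau> t * (NS NT' (Suc n) m + NS DN' n m - NS NT' n (m-1)) - NS NT' n m * pd a 0 \<tau> t - RHSv n m"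

lemmas I_a' = I_a[OF bkp a12] and I_b' = I_b[OF bkp a12] and I_c' = I_c[OF bkp a12]
lemmas bas = basics[OF bkp a12, where t=t]

lemma Pi_zero: "\<tau> t * (TL NT' (Suc n) m + TL DN' n m - TL NT' n (m-1)) - TL NT' n m * pd a 0 \<tau> t
     - RHSv (Suc n) m + RHSv n (m-1) = 0"
proof (cases "m \<le> 0")
  case True
  then obtain r where m: "m = - int r" by (metis minus_minus nonneg_int_cases neg_0_le_iff_le)
  have n1: "nat (- m) = r" "nat (1 - m) = r + 1" "nat (- (m - 1)) = r + 1" "nat (1 - (m - 1)) = r + 2"
    using m by auto
  have t1: "TL NT' (Suc n) m = NT' (Suc (Suc n)) r + NT' (Suc n) (Suc r)"
    and t2: "TL DN' n m = DN' (Suc n) r + DN' n (Suc r)"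
    and t3: "TL NT' n (m-1) = NT' (Suc n) (Suc r) + NT' n (Suc (Suc r))"
    and t4: "TL NT' n m = NT' (Suc n) r + NT' n (Suc r)"
    using m by (simp_all add: TL_def nat_add_distrib)
  have r1: "RHSv (Suc n) m = TV' r * SV' (Suc (Suc n)) + TV' r * DS' (Suc n) - SV' (Suc n) * DT' r + TV' (Suc r) * SV' (Suc n)"
    and r2: "RHSv n (m-1) = TV' (Suc r) * SV' (Suc n) + TV' (Suc r) * DS' n - SV' n * DT' (Suc r) + TV' (Suc (Suc r)) * SV' n"
    using m by (simp_all add: RHSv_def VV_def dVV_def nat_add_distrib)
  have I: "(pd a 0 \<tau> t * NT' n (Suc r) - \<tau> t * DN' n (Suc r)) + (pd a 0 \<tau> t * NT' (Suc n) r - \<tau> t * DN' (Suc n) r)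
   - (TV' (Suc r) * DS' n - SV' n * DT' (Suc r)) + (TV' r * DS' (Suc n) - SV' (Suc n) * DT' r)
   - (SV' n * TV' (Suc (Suc r)) - \<tau> t * NT' n (Suc (Suc r))) + (SV' (Suc (Suc n)) * TV' r - \<tau> t * NT' (Suc (Suc n)) r) = 0"
    using I_a'[where t=t and p=n and r=r] by (simp add: numeral_2_eq_2)
  show ?thesis unfolding t1 t2 t3 t4 r1 r2 using I by algebra
next
  case False
  show ?thesis
  proof (cases "m = 1")
    case True
    have t1: "TL NT' (Suc n) m = NT' (Suc n) 0" and t2: "TL DN' n m = DN' n 0"
      and t3: "TL NT' n (m-1) = NT' (Suc n) 0 + NT' n 1" and t4: "TL NT' n m = NT' n 0"
      using True by (simp_all add: TL_def)
    have r1: "RHSv (Suc n) m = TV' 0 * SV' (Suc n)"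
      and r2: "RHSv n (m-1) = TV' 0 * SV' (Suc n) + TV' 0 * DS' n - SV' n * DT' 0 + TV' 1 * SV' n"
      using True by (simp_all add: RHSv_def VV_def dVV_def)
    have I: "(pd a 0 \<tau> t * NT' n 0 - \<tau> t * DN' n 0) - (TV' 0 * DS' n - SV' n * DT' 0)
      - (SV' n * TV' 1 - \<tau> t * NT' n 1) - (SV' (Suc n) * TV' 0 - \<tau> t * NT' (Suc n) 0) = 0"
      using I_b'[where t=t and p=n] by simp
    have b1: "NT' (Suc n) 0 = SV' (Suc n)" "TV' 0 = \<tau> t" by (rule bas)+
    show ?thesis unfolding t1 t2 t3 t4 r1 r2 using I b1 by simp algebra
  next
    case False2: False
    then have "m \<ge> 2" using False by auto
    then show ?thesis unfolding TL_def RHSv_def VV_def dVV_def using bas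
      by (cases "m = 2") (auto simp: algebra_simps)
  qed
qed

lemma E_step: "Ev (Suc n) m = Ev n (m-1)"
proof -
  have "Ev (Suc n) m - Ev n (m-1) = \<tau> t * ((NS NT' (Suc (Suc n)) m - NS NT' (Suc n) (m-1)) + (NS DN' (Suc n) m - NS DN' n (m-1))
      - (NS NT' (Suc n) (m-1) - NS NT' n (m-1-1))) - (NS NT' (Suc n) m - NS NT' n (m-1)) * pd a 0 \<tau> t
      - RHSv (Suc n) m + RHSv n (m-1)"
    unfolding Ev_def by (simp add: algebra_simps)
  also have "\<dots> = 0" unfolding NS_tel by (rule Pi_zero)
  finally show ?thesis by simp
qed

lemma E_base: "Ev 0 m = 0"
proof -
  have "Ev 0 m = \<tau> t * (TL NT' 0 m + NS DN' 0 m) - NS NT' 0 m * pd a 0 \<tau> t - RHSv 0 m"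
    unfolding Ev_def NS_tel[symmetric] by (simp add: algebra_simps)
  also have "\<dots> = 0"
  proof (cases "m \<le> 0")
    case True
    then obtain r where m: "m = - int r" by (metis minus_minus nonneg_int_cases neg_0_le_iff_le)
    have n1: "nat (- m) = r" "nat (1 - m) = r + 1" using m by auto
    have t1: "TL NT' 0 m = NT' 1 r + NT' 0 (Suc r)" and t2: "NS DN' 0 m = DN' 0 r" and t3: "NS NT' 0 m = NT' 0 r"
      using m by (simp_all add: TL_def NS_0 nat_add_distrib)
    have r1: "RHSv 0 m = TV' r * SV' 1 + TV' r * DS' 0 - SV' 0 * DT' r + TV' (Suc r) * SV' 0"
      using m by (simp add: RHSv_def VV_def dVV_def nat_add_distrib)
    have I: "(pd a 0 \<tau> t * NT' 0 r - \<tau> t * DN' 0 r) + (TV' r * DS' 0 - SV' 0 * DT' r)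
      + (SV' 0 * TV' (Suc r) - \<tau> t * NT' 0 (Suc r)) + (SV' 1 * TV' r - \<tau> t * NT' 1 r) = 0"
      using I_c'[where t=t and r=r] by simp
    have b: "NT' 0 r = TV' r" "NT' 0 (Suc r) = TV' (Suc r)" "DN' 0 r = DT' r" "SV' 0 = \<tau> t" "DS' 0 = pd a 0 \<tau> t"
      by (rule bas)+
    show ?thesis unfolding t1 t2 t3 r1 b using I[unfolded b] by algebra
  next
    case False
    show ?thesis
    proof (cases "m = 1")
      case True
      then show ?thesis unfolding TL_def RHSv_def VV_def dVV_def NS_0 using bas by simp
    next
      case False2: False
      then have "m \<ge> 2" using False by auto
      then show ?thesis unfolding TL_def RHSv_def VV_def dVV_def NS_0 by auto
    qed
  qed
  finally show ?thesis .
qed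

lemma E_zero: "Ev n m = 0"
proof (induction n arbitrary: m)
  case 0 then show ?case by (rule E_base)
next
  case (Suc n) then show ?case by (simp add: E_step)
qed

end


definition NNf :: "fn \<Rightarrow> nat \<Rightarrow> nat \<Rightarrow> nat \<Rightarrow> int \<Rightarrow> fn" where
  "NNf \<tau> a b n m = (\<lambda>t. \<Sum>k\<le>n. if int k \<ge> m then eps_coef a b k * shiftc a (-2) (n-k) (shiftc b 2 (nat (int k - m)) \<tau>) t else 0)"

definition VVf :: "fn \<Rightarrow> nat \<Rightarrow> int \<Rightarrow> fn" where
  "VVf \<tau> b m = (\<lambda>t. if m \<le> 0 then shiftc b 2 (nat (- m)) \<tau> t else 0)"

lemma pd_if_const: "pd a k (\<lambda>t. if P then f t else 0) t = (if P then pd a k f t else 0)"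
  by (cases P) (simp_all add: pd_const)

lemma SM_if0: "SM f \<Longrightarrow> SM (\<lambda>t. if P then f t else 0)"
  by (cases P) (simp_all add: SM_zero)

lemma SM_NNf: "SM \<tau> \<Longrightarrow> SM (NNf \<tau> a b n m)"
  unfolding NNf_def by (intro SM_sum) (auto intro!: SM_if0 SM_cmult SM_shiftc)

lemma SM_VVf: "SM \<tau> \<Longrightarrow> SM (VVf \<tau> b m)"
  unfolding VVf_def by (cases "m \<le> 0") (auto intro: SM_shiftc SM_zero)

lemma pd_NNf: assumes "SM \<tau>"
  shows "pd a 0 (NNf \<tau> a b n m) t = (\<Sum>k\<le>n. if int k \<ge> m then eps_coef a b k * pd a 0 (shiftc a (-2) (n-k) (shiftc b 2 (nat (int k - m)) \<tau>)) t else 0)"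
proof -
  have "pd a 0 (NNf \<tau> a b n m) t = (\<Sum>k\<le>n. pd a 0 (\<lambda>t. if int k \<ge> m then eps_coef a b k * shiftc a (-2) (n-k) (shiftc b 2 (nat (int k - m)) \<tau>) t else 0) t)"
    unfolding NNf_def using assms by (subst pd_sum) (auto intro!: SM_if0 SM_cmult SM_shiftc)
  also have "\<dots> = (\<Sum>k\<le>n. if int k \<ge> m then eps_coef a b k * pd a 0 (shiftc a (-2) (n-k) (shiftc b 2 (nat (int k - m)) \<tau>)) t else 0)"
    using assms by (intro sum.cong refl) (simp add: pd_if_const pd_cmult' SM_shiftc)
  finally show ?thesis .
qed

lemma star_all: assumes bkp: "bkp2_tau \<tau>" and ab: "a \<in> {1,2}" "b \<in> {1,2}"
  shows "\<tau> t * (NNf \<tau> a b (n+1) m t + pd a 0 (NNf \<tau> a b n m) t - (if a = b then NNf \<tau> a b n (m-1) t else 0))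
       - NNf \<tau> a b n m t * pd a 0 \<tau> t
     = VVf \<tau> b m t * shiftc a (-2) (n+1) \<tau> t + VVf \<tau> b m t * pd a 0 (shiftc a (-2) n \<tau>) t
       - shiftc a (-2) n \<tau> t * pd a 0 (VVf \<tau> b m) t + (if a = b then VVf \<tau> b (m-1) t * shiftc a (-2) n \<tau> t else 0)"
proof -
  have TAU: "TAU \<tau>" by (rule bkp_TAU[OF bkp])
  have SMt: "SM \<tau>" by (rule SMtau[OF TAU])
  have pdV: "pd a 0 (VVf \<tau> b m) t = (if m \<le> 0 then pd a 0 (shiftc b 2 (nat (- m)) \<tau>) t else 0)"
    unfolding VVf_def by (rule pd_if_const)
  show ?thesis
  proof (cases "a = b")
    case True
    then have ba: "b = a" by simp
    have NS1: "\<And>n m. NNf \<tau> a a n m t = NS (Nt \<tau> a t) n m"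
      unfolding NNf_def NS_def Nt_def[OF TAU]
      by (intro sum.cong refl) (auto simp: eps_coef_def epsA_def)
    have NS2: "\<And>n m. pd a 0 (NNf \<tau> a a n m) t = NS (dN \<tau> a t) n m"
      unfolding pd_NNf[OF SMt] NS_def dN_def[OF TAU]
      by (intro sum.cong refl) (auto simp: eps_coef_def epsA_def)
    have V1: "\<And>m. VVf \<tau> a m t = VV \<tau> a t m"
      unfolding VVf_def VV_def[OF bkp ab(1)] Tv_def[OF TAU] by simp
    have V2: "pd a 0 (VVf \<tau> a m) t = dVV \<tau> a t m"
      using pdV unfolding ba dVV_def[OF bkp ab(1)] dT_def[OF TAU] by simp
    have E: "Ev \<tau> a t n m = 0" by (rule E_zero[OF bkp ab(1)])
    show ?thesis using E unfolding ba
      unfolding Ev_def[OF bkp ab(1)] RHSv_def[OF bkp ab(1)] NS1 NS2 V1 V2 Sv_def[OF TAU] dS_def[OF TAU]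
      by (simp add: algebra_simps)
  next
    case False
    have eps: "\<And>k. eps_coef a b k = (if k = 0 then 1 else 0)" using False by (simp add: eps_coef_def)
    have N: "\<And>n m. NNf \<tau> a b n m t = (if m \<le> 0 then shiftc a (-2) n (shiftc b 2 (nat (- m)) \<tau>) t else 0)"
      unfolding NNf_def eps by (simp add: if_distrib[of "\<lambda>x. x * _"] sum.delta cong: if_cong)
    have dN: "\<And>n m. pd a 0 (NNf \<tau> a b n m) t = (if m \<le> 0 then pd a 0 (shiftc a (-2) n (shiftc b 2 (nat (- m)) \<tau>)) t else 0)"
      unfolding pd_NNf[OF SMt] eps by (simp add: if_distrib[of "\<lambda>x. x * _"] sum.delta cong: if_cong)
    show ?thesis
    proof (cases "m \<le> 0")
      case True
      show ?thesis using star_neq[OF bkp ab False, of t n "nat (- m)"] True False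
        unfolding N dN pdV VVf_def by (simp add: algebra_simps)
    next
      case False2: False
      show ?thesis using False2 False unfolding N dN pdV VVf_def by (simp add: pd_const)
    qed
  qed
qed


context fixes \<tau> :: fn and a b :: nat and t0 :: tm
  assumes bkp: "bkp2_tau \<tau>" and a12: "a \<in> {1,2}" and b12: "b \<in> {1,2}"
begin

lemma TAU0: "TAU \<tau>" by (rule bkp_TAU[OF bkp])
lemma SMt0: "SM \<tau>" by (rule SMtau[OF TAU0])

definition "lin s = upd a 0 s t0"
definition "UU = {s. \<tau> (lin s) \<noteq> 0}"
definition "HU f \<longleftrightarrow> (\<lambda>s. f (lin s)) holomorphic_on UU"

lemma pd_lin: "pd a 0 f (lin s) = deriv (\<lambda>s. f (lin s)) s"
  unfolding pd_def lin_def by (simp add: upd_upd_same tc_upd_same)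

lemma pd_lin_fun: "(\<lambda>s. pd a 0 f (lin s)) = deriv (\<lambda>s. f (lin s))"
  by (rule ext) (rule pd_lin)

lemma SM_fd: "SM f \<Longrightarrow> (\<lambda>s. f (lin s)) field_differentiable (at x)"
  unfolding lin_def by (rule LD_at[OF SM_LD])

lemma SM_holo: "SM f \<Longrightarrow> (\<lambda>s. f (lin s)) holomorphic_on S"
  unfolding holomorphic_on_def using SM_fd field_differentiable_at_within by blast

lemma open_UU: "open UU"
proof -
  have "continuous_on UNIV (\<lambda>s. \<tau> (lin s))" by (rule holomorphic_on_imp_continuous_on[OF SM_holo[OF SMt0]])
  then have "open {s. \<tau> (lin s) \<noteq> (\<lambda>s. 0) s}" by (intro open_Collect_neq) auto
  then show ?thesis by (simp add: UU_def)
qed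

lemma HU_SM: "SM f \<Longrightarrow> HU f" unfolding HU_def by (rule SM_holo)
lemma HU_add: "HU f \<Longrightarrow> HU g \<Longrightarrow> HU (\<lambda>t. f t + g t)" unfolding HU_def by (rule holomorphic_on_add)
lemma HU_diff: "HU f \<Longrightarrow> HU g \<Longrightarrow> HU (\<lambda>t. f t - g t)" unfolding HU_def by (rule holomorphic_on_diff)
lemma HU_mult: "HU f \<Longrightarrow> HU g \<Longrightarrow> HU (\<lambda>t. f t * g t)" unfolding HU_def by (rule holomorphic_on_mult)
lemma HU_const: "HU (\<lambda>t. c)" by (rule HU_SM[OF SM_const])
lemma HU_cmult: "HU f \<Longrightarrow> HU (\<lambda>t. c * f t)" by (rule HU_mult[OF HU_const])
lemma HU_sum: "finite I \<Longrightarrow> (\<And>i. i \<in> I \<Longrightarrow> HU (f i)) \<Longrightarrow> HU (\<lambda>t. \<Sum>i\<in>I. f i t)"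
  unfolding HU_def by (rule holomorphic_on_sum) auto
lemma HU_div: "SM f \<Longrightarrow> HU (\<lambda>t. f t / \<tau> t)"
  unfolding HU_def by (rule holomorphic_on_divide) (auto intro: SM_holo SMt0 simp: UU_def)
lemma HU_pd: "HU f \<Longrightarrow> HU (pd a 0 f)"
  unfolding HU_def pd_lin_fun by (rule holomorphic_deriv[OF _ open_UU])
lemma HU_if: "HU f \<Longrightarrow> HU (\<lambda>t. if P then f t else 0)"
  by (cases P) (simp_all add: HU_const)

lemma HU_fd: "HU f \<Longrightarrow> s \<in> UU \<Longrightarrow> (\<lambda>s. f (lin s)) field_differentiable (at s)"
  unfolding HU_def using holomorphic_on_imp_differentiable_at open_UU by blast

lemma pdU_add: "HU f \<Longrightarrow> HU g \<Longrightarrow> s \<in> UU \<Longrightarrow> pd a 0 (\<lambda>t. f t + g t) (lin s) = pd a 0 f (lin s) + pd a 0 g (lin s)"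
  unfolding pd_lin by (rule deriv_add) (auto intro: HU_fd)
lemma pdU_diff: "HU f \<Longrightarrow> HU g \<Longrightarrow> s \<in> UU \<Longrightarrow> pd a 0 (\<lambda>t. f t - g t) (lin s) = pd a 0 f (lin s) - pd a 0 g (lin s)"
  unfolding pd_lin by (rule deriv_diff) (auto intro: HU_fd)
lemma pdU_mult: "HU f \<Longrightarrow> HU g \<Longrightarrow> s \<in> UU \<Longrightarrow> pd a 0 (\<lambda>t. f t * g t) (lin s) = pd a 0 f (lin s) * g (lin s) + f (lin s) * pd a 0 g (lin s)"
  unfolding pd_lin by (subst deriv_mult) (auto intro: HU_fd)
lemma pdU_cmult: "HU f \<Longrightarrow> s \<in> UU \<Longrightarrow> pd a 0 (\<lambda>t. c * f t) (lin s) = c * pd a 0 f (lin s)"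
  unfolding pd_lin by (rule deriv_cmult) (auto intro: HU_fd)
lemma pdU_sum: assumes "finite I" "\<And>i. i \<in> I \<Longrightarrow> HU (f i)" "s \<in> UU"
  shows "pd a 0 (\<lambda>t. \<Sum>i\<in>I. f i t) (lin s) = (\<Sum>i\<in>I. pd a 0 (f i) (lin s))"
  using assms(1,2)
proof (induction I rule: finite_induct)
  case empty then show ?case by (simp add: pd_const)
next
  case (insert x F)
  have "pd a 0 (\<lambda>t. \<Sum>i\<in>insert x F. f i t) (lin s) = pd a 0 (\<lambda>t. f x t + (\<Sum>i\<in>F. f i t)) (lin s)"
    using insert by simp
  also have "\<dots> = pd a 0 (f x) (lin s) + pd a 0 (\<lambda>t. \<Sum>i\<in>F. f i t) (lin s)"
    using insert assms(3) by (intro pdU_add HU_sum) auto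
  finally show ?case using insert by simp
qed

lemma pdU_cong: assumes "\<And>s. s \<in> UU \<Longrightarrow> f (lin s) = g (lin s)" "s \<in> UU"
  shows "pd a 0 f (lin s) = pd a 0 g (lin s)"
  unfolding pd_lin
proof (rule deriv_cong_ev)
  have "eventually (\<lambda>x. x \<in> UU) (nhds s)" by (rule eventually_nhds_in_open[OF open_UU assms(2)])
  then show "eventually (\<lambda>x. f (lin x) = g (lin x)) (nhds s)" by (rule eventually_mono) (use assms(1) in auto)
qed simp

lemma pdU_div: assumes "SM f" "s \<in> UU"
  shows "pd a 0 (\<lambda>t. f t / \<tau> t) (lin s) = (pd a 0 f (lin s) * \<tau> (lin s) - f (lin s) * pd a 0 \<tau> (lin s)) / (\<tau> (lin s) * \<tau> (lin s))"
proof -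
  have d1: "((\<lambda>s. f (lin s)) has_field_derivative deriv (\<lambda>s. f (lin s)) s) (at s)"
    using SM_fd[OF assms(1)] DERIV_deriv_iff_field_differentiable by blast
  have d2: "((\<lambda>s. \<tau> (lin s)) has_field_derivative deriv (\<lambda>s. \<tau> (lin s)) s) (at s)"
    using SM_fd[OF SMt0] DERIV_deriv_iff_field_differentiable by blast
  have nz: "\<tau> (lin s) \<noteq> 0" using assms(2) by (simp add: UU_def)
  show ?thesis unfolding pd_lin
    by (rule DERIV_imp_deriv[OF DERIV_divide[OF d1 d2 nz]])
qed

lemma X_eq: "Xab_coef \<tau> a b n m = (\<lambda>t. NNf \<tau> a b n m t / \<tau> t)"
  unfolding Xab_coef_def NNf_def by (auto simp: fun_eq_iff sum_divide_distrib intro!: sum.cong)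

lemma q_eq: "psi_neg \<tau> b m = (\<lambda>t. VVf \<tau> b m t / \<tau> t)"
proof (rule ext)
  fix t
  show "psi_neg \<tau> b m t = VVf \<tau> b m t / \<tau> t"
  proof (cases "m \<le> 0")
    case True
    have "(-1) ^ nat (- m) * (shiftc b (-2) (nat (- m)) \<tau> t / \<tau> t) = ((-1) ^ nat (- m) * shiftc b (-2) (nat (- m)) \<tau> t) / \<tau> t"
      by simp
    also have "\<dots> = shiftc b 2 (nat (- m)) \<tau> t / \<tau> t" by (simp only: neg_shift_tau[OF TAU0])
    finally show ?thesis using True by (simp add: psi_neg_def wcoef_def VVf_def)
  next
    case False then show ?thesis by (simp add: psi_neg_def VVf_def)
  qed
qed

lemma w_eq: "wcoef \<tau> a n = (\<lambda>t. shiftc a (-2) n \<tau> t / \<tau> t)"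
  by (simp add: wcoef_def fun_eq_iff)

lemma HU_q: "HU (psi_neg \<tau> b m)" unfolding q_eq by (rule HU_div[OF SM_VVf[OF SMt0]])
lemma HU_w: "HU (wcoef \<tau> a n)" unfolding w_eq by (rule HU_div[OF SM_shiftc[OF SMt0]])
lemma HU_X: "HU (Xab_coef \<tau> a b n m)" unfolding X_eq by (rule HU_div[OF SM_NNf[OF SMt0]])

lemma HU_dxl: "(\<And>m. HU (r m)) \<Longrightarrow> HU (dxl a b r m)"
  unfolding dxl_def by (intro HU_diff HU_pd HU_if) auto

lemma HU_dxl_pow: "(\<And>m. HU (r m)) \<Longrightarrow> HU ((dxl a b ^^ k) r m)"
proof (induction k arbitrary: m)
  case 0 then show ?case by simp
next
  case (Suc k) then show ?case by (simp add: HU_dxl)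
qed

abbreviation "PP \<equiv> (\<lambda>i mm s. dxl a b (psi_neg \<tau> b) mm s * wcoef \<tau> a i s)"

lemma HU_P: "HU (PP i m)"
  by (intro HU_mult HU_dxl HU_q HU_w)

lemma HU_Dk: "HU ((dxl a b ^^ k) (PP i) m)"
  by (rule HU_dxl_pow) (rule HU_P)

lemma HU_H: "HU (inv_comp a b PP n m)"
  unfolding inv_comp_def by (intro HU_sum HU_cmult HU_Dk) auto

definition "cab = (if a = b then 1 else (0::complex))"

lemma ifc: "(if a = b then x else 0) = cab * x" by (simp add: cab_def)

lemma H_0: "inv_comp a b PP 0 m = (\<lambda>t. 0)"
  by (simp add: inv_comp_def)

lemma H_rec: assumes s: "s \<in> UU"
  shows "inv_comp a b PP (Suc n) m (lin s) = PP n m (lin s) - pd a 0 (inv_comp a b PP n m) (lin s)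
          + cab * inv_comp a b PP n (m-1) (lin s)"
proof -
  define D where "D = (\<lambda>k. (dxl a b ^^ k) (PP (n - 1 - k)))"
  have Hn: "\<And>m. inv_comp a b PP n m = (\<lambda>t. \<Sum>k<n. (-1)^k * D k m t)"
    by (simp add: inv_comp_def D_def)
  have dx: "\<And>r m t. dxl a b r m t = pd a 0 (r m) t - cab * r (m-1) t"
    by (simp add: dxl_def ifc)
  have "inv_comp a b PP (Suc n) m (lin s) = PP n m (lin s) + (\<Sum>k<n. (-1)^(Suc k) * (dxl a b ^^ Suc k) (PP (n - 1 - k)) m (lin s))"
    by (simp add: inv_comp_def sum.lessThan_Suc_shift del: sum.lessThan_Suc)
  also have "(\<Sum>k<n. (-1)^(Suc k) * (dxl a b ^^ Suc k) (PP (n - 1 - k)) m (lin s)) =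
     (\<Sum>k<n. - ((-1)^k * pd a 0 (D k m) (lin s)) + cab * ((-1)^k * D k (m-1) (lin s)))"
    by (intro sum.cong refl) (simp only: D_def funpow.simps comp_def dx, simp add: algebra_simps)
  also have "\<dots> = - (\<Sum>k<n. (-1)^k * pd a 0 (D k m) (lin s)) + cab * inv_comp a b PP n (m-1) (lin s)"
    by (simp add: sum.distrib sum_negf sum_distrib_left Hn sum_subtractf)
  also have "(\<Sum>k<n. (-1)^k * pd a 0 (D k m) (lin s)) = pd a 0 (inv_comp a b PP n m) (lin s)"
  proof -
    have "pd a 0 (inv_comp a b PP n m) (lin s) = (\<Sum>k<n. pd a 0 (\<lambda>t. (-1)^k * D k m t) (lin s))"
      unfolding Hn by (rule pdU_sum) (auto intro: HU_cmult HU_Dk simp: D_def s)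
    also have "\<dots> = (\<Sum>k<n. (-1)^k * pd a 0 (D k m) (lin s))"
      by (intro sum.cong refl pdU_cmult) (auto intro: HU_Dk simp: D_def s)
    finally show ?thesis by simp
  qed
  finally show ?thesis by simp
qed

lemma star_div:
  fixes T dT N1 dN0 N0 Nm V U1 dU0 U0 dV Vm c :: complex
  assumes nz: "T \<noteq> 0"
    and st: "T * (N1 + dN0 - c * Nm) - N0 * dT = V * U1 + V * dU0 - U0 * dV + c * (Vm * U0)"
  shows "N1 / T + (dN0 * T - N0 * dT) / (T * T) - c * (Nm / T) =
    (V / T) * (U1 / T) - ((dV * T - V * dT) / (T * T)) * (U0 / T) + (V / T) * ((dU0 * T - U0 * dT) / (T * T)) + c * ((Vm / T) * (U0 / T))"
proof -
  have "N1 / T + (dN0 * T - N0 * dT) / (T * T) - c * (Nm / T) = (T * (N1 + dN0 - c * Nm) - N0 * dT) / (T * T)"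
    using nz by (simp add: field_simps)
  also have "\<dots> = (V * U1 + V * dU0 - U0 * dV + c * (Vm * U0)) / (T * T)" using st by simp
  also have "\<dots> = (V / T) * (U1 / T) - ((dV * T - V * dT) / (T * T)) * (U0 / T) + (V / T) * ((dU0 * T - U0 * dT) / (T * T)) + c * ((Vm / T) * (U0 / T))"
    using nz by (simp add: field_simps)
  finally show ?thesis .
qed

lemma alg_step:
  fixes X1 dX0 c Xm q w1 dq w0 dw0 qm H1 P dH Hm :: complex
  assumes "X1 + dX0 - c * Xm = q * w1 - dq * w0 + q * dw0 + c * (qm * w0)"
    and "H1 = P - dH + c * Hm" and "dH = (dq * w0 + q * dw0 - dX0) / 2"
    and "P = (dq - c * qm) * w0" and "Hm = (qm * w0 - Xm) / 2"
  shows "X1 = q * w1 - 2 * H1"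
  using assms by (simp add: field_simps) algebra

lemma X_rec: assumes s: "s \<in> UU"
  shows "Xab_coef \<tau> a b (n+1) m (lin s) + pd a 0 (Xab_coef \<tau> a b n m) (lin s) - cab * Xab_coef \<tau> a b n (m-1) (lin s)
   = psi_neg \<tau> b m (lin s) * wcoef \<tau> a (n+1) (lin s) - pd a 0 (psi_neg \<tau> b m) (lin s) * wcoef \<tau> a n (lin s)
     + psi_neg \<tau> b m (lin s) * pd a 0 (wcoef \<tau> a n) (lin s) + cab * (psi_neg \<tau> b (m-1) (lin s) * wcoef \<tau> a n (lin s))"
proof -
  have nz: "\<tau> (lin s) \<noteq> 0" using s by (simp add: UU_def)
  have st: "\<tau> (lin s) * (NNf \<tau> a b (n+1) m (lin s) + pd a 0 (NNf \<tau> a b n m) (lin s) - cab * NNf \<tau> a b n (m-1) (lin s))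
       - NNf \<tau> a b n m (lin s) * pd a 0 \<tau> (lin s)
     = VVf \<tau> b m (lin s) * shiftc a (-2) (n+1) \<tau> (lin s) + VVf \<tau> b m (lin s) * pd a 0 (shiftc a (-2) n \<tau>) (lin s)
       - shiftc a (-2) n \<tau> (lin s) * pd a 0 (VVf \<tau> b m) (lin s) + cab * (VVf \<tau> b (m-1) (lin s) * shiftc a (-2) n \<tau> (lin s))"
    using star_all[OF bkp a12 b12, of "lin s" n m] unfolding ifc by simp
  show ?thesis
    unfolding X_eq q_eq w_eq
    unfolding pdU_div[OF SM_NNf[OF SMt0] s] pdU_div[OF SM_VVf[OF SMt0] s] pdU_div[OF SM_shiftc[OF SMt0] s]
    by (rule star_div[OF nz st])
qed

lemma main_ind: "\<forall>m. \<forall>s\<in>UU. Xab_coef \<tau> a b n m (lin s) =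
    psi_neg \<tau> b m (lin s) * wcoef \<tau> a n (lin s) - 2 * inv_comp a b PP n m (lin s)"
proof (induction n)
  case 0
  show ?case
  proof (intro allI ballI)
    fix m s assume s: "s \<in> UU"
    have nz: "\<tau> (lin s) \<noteq> 0" using s by (simp add: UU_def)
    have "Xab_coef \<tau> a b 0 m (lin s) = VVf \<tau> b m (lin s) / \<tau> (lin s)"
      unfolding X_eq NNf_def VVf_def by (simp add: eps_coef_def)
    then show "Xab_coef \<tau> a b 0 m (lin s) = psi_neg \<tau> b m (lin s) * wcoef \<tau> a 0 (lin s) - 2 * inv_comp a b PP 0 m (lin s)"
      unfolding H_0 using nz by (simp add: q_eq w_eq)
  qed
next
  case (Suc n)
  show ?case
  proof (intro allI ballI)
    fix m s assume s: "s \<in> UU"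
    have IH: "\<And>m s. s \<in> UU \<Longrightarrow> inv_comp a b PP n m (lin s) = (psi_neg \<tau> b m (lin s) * wcoef \<tau> a n (lin s) - Xab_coef \<tau> a b n m (lin s)) / 2"
    proof -
      fix m s assume "s \<in> UU"
      then have e: "Xab_coef \<tau> a b n m (lin s) = psi_neg \<tau> b m (lin s) * wcoef \<tau> a n (lin s) - 2 * inv_comp a b PP n m (lin s)"
        using Suc.IH by blast
      show "inv_comp a b PP n m (lin s) = (psi_neg \<tau> b m (lin s) * wcoef \<tau> a n (lin s) - Xab_coef \<tau> a b n m (lin s)) / 2"
        unfolding e by simp
    qed
    have pdH: "pd a 0 (inv_comp a b PP n m) (lin s) = pd a 0 (\<lambda>t. (psi_neg \<tau> b m t * wcoef \<tau> a n t - Xab_coef \<tau> a b n m t) / 2) (lin s)"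
      by (rule pdU_cong[where f="inv_comp a b PP n m" and g="\<lambda>t. (psi_neg \<tau> b m t * wcoef \<tau> a n t - Xab_coef \<tau> a b n m t) / 2"])
         (simp_all only: IH s)
    also have "\<dots> = (pd a 0 (psi_neg \<tau> b m) (lin s) * wcoef \<tau> a n (lin s) + psi_neg \<tau> b m (lin s) * pd a 0 (wcoef \<tau> a n) (lin s)
        - pd a 0 (Xab_coef \<tau> a b n m) (lin s)) / 2"
    proof -
      have "pd a 0 (\<lambda>t. (psi_neg \<tau> b m t * wcoef \<tau> a n t - Xab_coef \<tau> a b n m t) / 2) (lin s)
          = pd a 0 (\<lambda>t. (1/2) * (psi_neg \<tau> b m t * wcoef \<tau> a n t - Xab_coef \<tau> a b n m t)) (lin s)"
        by simp
      also have "\<dots> = (1/2) * pd a 0 (\<lambda>t. psi_neg \<tau> b m t * wcoef \<tau> a n t - Xab_coef \<tau> a b n m t) (lin s)"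
        by (rule pdU_cmult) (rule HU_diff[OF HU_mult[OF HU_q HU_w] HU_X], rule s)
      also have "pd a 0 (\<lambda>t. psi_neg \<tau> b m t * wcoef \<tau> a n t - Xab_coef \<tau> a b n m t) (lin s)
          = pd a 0 (\<lambda>t. psi_neg \<tau> b m t * wcoef \<tau> a n t) (lin s) - pd a 0 (Xab_coef \<tau> a b n m) (lin s)"
        by (rule pdU_diff) (rule HU_mult[OF HU_q HU_w], rule HU_X, rule s)
      also have "pd a 0 (\<lambda>t. psi_neg \<tau> b m t * wcoef \<tau> a n t) (lin s) =
          pd a 0 (psi_neg \<tau> b m) (lin s) * wcoef \<tau> a n (lin s) + psi_neg \<tau> b m (lin s) * pd a 0 (wcoef \<tau> a n) (lin s)"
        by (rule pdU_mult) (rule HU_q, rule HU_w, rule s)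
      finally show ?thesis by simp
    qed
    finally have pdH': "pd a 0 (inv_comp a b PP n m) (lin s) = (pd a 0 (psi_neg \<tau> b m) (lin s) * wcoef \<tau> a n (lin s) + psi_neg \<tau> b m (lin s) * pd a 0 (wcoef \<tau> a n) (lin s)
        - pd a 0 (Xab_coef \<tau> a b n m) (lin s)) / 2" .
    have Pn: "PP n m (lin s) = (pd a 0 (psi_neg \<tau> b m) (lin s) - (if a = b then psi_neg \<tau> b (m-1) (lin s) else 0)) * wcoef \<tau> a n (lin s)"
      by (simp only: dxl_def)
    have Hm1: "inv_comp a b PP n (m-1) (lin s) = (psi_neg \<tau> b (m-1) (lin s) * wcoef \<tau> a n (lin s) - Xab_coef \<tau> a b n (m-1) (lin s)) / 2"
      by (rule IH[OF s])
    have Hr: "inv_comp a b PP (Suc n) m (lin s) = PP n m (lin s) - pd a 0 (inv_comp a b PP n m) (lin s)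
          + cab * inv_comp a b PP n (m-1) (lin s)"
      by (rule H_rec[OF s])
    have Pn': "PP n m (lin s) = (pd a 0 (psi_neg \<tau> b m) (lin s) - cab * psi_neg \<tau> b (m-1) (lin s)) * wcoef \<tau> a n (lin s)"
      using Pn unfolding ifc .
    have Xr: "Xab_coef \<tau> a b (Suc n) m (lin s) + pd a 0 (Xab_coef \<tau> a b n m) (lin s) - cab * Xab_coef \<tau> a b n (m-1) (lin s)
     = psi_neg \<tau> b m (lin s) * wcoef \<tau> a (Suc n) (lin s) - pd a 0 (psi_neg \<tau> b m) (lin s) * wcoef \<tau> a n (lin s)
     + psi_neg \<tau> b m (lin s) * pd a 0 (wcoef \<tau> a n) (lin s) + cab * (psi_neg \<tau> b (m-1) (lin s) * wcoef \<tau> a n (lin s))"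
      using X_rec[OF s, of n m] by simp
    show "Xab_coef \<tau> a b (Suc n) m (lin s) = psi_neg \<tau> b m (lin s) * wcoef \<tau> a (Suc n) (lin s) - 2 * inv_comp a b PP (Suc n) m (lin s)"
      by (rule alg_step[OF Xr Hr pdH' Pn' Hm1])
  qed
qed

lemma main_at: assumes "\<tau> t0 \<noteq> 0"
  shows "Xab_coef \<tau> a b n m t0 = psi_neg \<tau> b m t0 * wcoef \<tau> a n t0 - 2 * inv_comp a b PP n m t0"
proof -
  have l: "lin (tc a t0 0) = t0" by (simp add: lin_def upd_tc)
  have s0: "tc a t0 0 \<in> UU" using assms l by (simp add: UU_def)
  have "Xab_coef \<tau> a b n m (lin (tc a t0 0)) = psi_neg \<tau> b m (lin (tc a t0 0)) * wcoef \<tau> a n (lin (tc a t0 0))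
      - 2 * inv_comp a b PP n m (lin (tc a t0 0))"
    using main_ind s0 by blast
  then show ?thesis unfolding l .
qed

end


theorem mainTheorem5:
  fixes \<tau> :: fn
  assumes "bkp2_tau \<tau>"
  shows "\<forall>a \<in> {1,2}. \<forall>b \<in> {1,2}. \<forall>n m t. \<tau> t \<noteq> 0 \<longrightarrow>
           Xab_coef \<tau> a b n m t = (-1) ^ a * Omega_coef \<tau> a b (psi_neg \<tau> b) n m t"
proof (intro ballI allI impI)
  fix a b :: nat and n :: nat and m :: int and t :: tm
  assume a: "a \<in> {1,2}" and b: "b \<in> {1,2}" and nz: "\<tau> t \<noteq> 0"
  have e: "Xab_coef \<tau> a b n m t = psi_neg \<tau> b m t * wcoef \<tau> a n t
      - 2 * inv_comp a b (\<lambda>i mm s. dxl a b (psi_neg \<tau> b) mm s * wcoef \<tau> a i s) n m t"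
    by (rule main_at[OF assms a b nz])
  have p: "(-1::complex) ^ a * (-1) ^ a = 1" by (simp add: power_mult_distrib[symmetric])
  show "Xab_coef \<tau> a b n m t = (-1) ^ a * Omega_coef \<tau> a b (psi_neg \<tau> b) n m t"
    unfolding Omega_coef_def e mult.assoc[symmetric] p by simp
qed

end
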